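(* Let $\mathcal{L}_{9}\subset\mathbb{P}^2_{\mathbb{C}}$ be the line arrangement defined by $$y(y-z)(y+z)(y-x)(y+x)(y-x-2z)(y-x+2z)(y+x-2z)(y+x+2z)=0,$$ and let $\mathcal{L}_{9}'\subset\mathbb{P}^2_{\mathbb{C}}$ be the line arrangement defined by $$xyz(x+y)(x+z)(y-z)(x+y+ez)(x-ey+z)(x-ey+ez)=0,$$ where $e\in\mathbb{C}$ satisfies $e^{2}+1=0$. Then $\mathcal{L}_{9}$ and $\mathcal{L}_{9}'$ form a weak Ziegler pair.
   Context: For a reduced curve $C: f=0$ in $\mathbb{P}^2_{\mathbb{C}}$, ${\rm mdr}(f)$ is the minimal degree $r$ of a nonzero triple $(a,b,c)$ of homogeneous polynomials of degree $r$ in $\mathbb{C}[x,y,z]$ with $a\,\partial_x f+b\,\partial_y f+c\,\partial_z f=0$. For a line arrangement, $n_i$ is the number of points where exactly $i$ lines meet, and the weak-combinatorics is $(d;n_2,\dots,n_m)$ with $d$ the number of lines and $m$ the maximal multiplicity. Two reduced plane curves $C_1,C_2$ with all irreducible components smooth form a weak Ziegler pair if they have the same weak-combinatorics but ${\rm mdr}(C_1)\neq{\rm mdr}(C_2)$. *)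

theory Defs
  imports "HOL-Analysis.Analysis"
begin

type_synonym pt = "complex \<times> complex \<times> complex"

(* A homogeneous polynomial of degree r in C[x,y,z], given by its coefficient
   function on exponent triples (i,j,k); all monomials have i+j+k = r. *)
definition hpoly :: "nat \<Rightarrow> (nat \<times> nat \<times> nat \<Rightarrow> complex) \<Rightarrow> bool" where
  "hpoly r a \<longleftrightarrow> (\<forall>i j k. a (i, j, k) \<noteq> 0 \<longrightarrow> i + j + k = r)"

definition peval :: "nat \<Rightarrow> (nat \<times> nat \<times> nat \<Rightarrow> complex) \<Rightarrow> pt \<Rightarrow> complex" where
  "peval r a p = (case p of (x, y, z) \<Rightarrow>
      (\<Sum>i\<le>r. \<Sum>j\<le>r. \<Sum>k\<le>r. a (i, j, k) * x ^ i * y ^ j * z ^ k))"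

definition pdx :: "(pt \<Rightarrow> complex) \<Rightarrow> pt \<Rightarrow> complex" where
  "pdx f p = (case p of (x, y, z) \<Rightarrow> deriv (\<lambda>t. f (t, y, z)) x)"
definition pdy :: "(pt \<Rightarrow> complex) \<Rightarrow> pt \<Rightarrow> complex" where
  "pdy f p = (case p of (x, y, z) \<Rightarrow> deriv (\<lambda>t. f (x, t, z)) y)"
definition pdz :: "(pt \<Rightarrow> complex) \<Rightarrow> pt \<Rightarrow> complex" where
  "pdz f p = (case p of (x, y, z) \<Rightarrow> deriv (\<lambda>t. f (x, y, t)) z)"

(* (a,b,c) is a nonzero syzygy of degree r of the Jacobian of f.
   Polynomial identity over C is equivalent to identity of polynomial functions. *)
definition syzygy :: "(pt \<Rightarrow> complex) \<Rightarrow> nat \<Rightarrow> (nat \<times> nat \<times> nat \<Rightarrow> complex) \<Rightarrow>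
    (nat \<times> nat \<times> nat \<Rightarrow> complex) \<Rightarrow> (nat \<times> nat \<times> nat \<Rightarrow> complex) \<Rightarrow> bool" where
  "syzygy f r a b c \<longleftrightarrow> hpoly r a \<and> hpoly r b \<and> hpoly r c \<and>
     (a \<noteq> (\<lambda>_. 0) \<or> b \<noteq> (\<lambda>_. 0) \<or> c \<noteq> (\<lambda>_. 0)) \<and>
     (\<forall>p. peval r a p * pdx f p + peval r b p * pdy f p + peval r c p * pdz f p = 0)"

definition mdr :: "(pt \<Rightarrow> complex) \<Rightarrow> nat" where
  "mdr f = (LEAST r. \<exists>a b c. syzygy f r a b c)"

definition lin :: "pt \<Rightarrow> pt \<Rightarrow> complex" where
  "lin l p = (case l of (a, b, c) \<Rightarrow> case p of (x, y, z) \<Rightarrow> a * x + b * y + c * z)"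

definition arr_poly :: "pt list \<Rightarrow> pt \<Rightarrow> complex" where
  "arr_poly L p = (\<Prod>l\<leftarrow>L. lin l p)"

definition proportional :: "pt \<Rightarrow> pt \<Rightarrow> bool" where
  "proportional l m \<longleftrightarrow> (\<exists>c::complex. c \<noteq> 0 \<and>
     (case l of (a, b, d) \<Rightarrow> m = (c * a, c * b, c * d)))"

definition line_arrangement :: "pt list \<Rightarrow> bool" where
  "line_arrangement L \<longleftrightarrow> (\<forall>l\<in>set L. l \<noteq> (0, 0, 0)) \<and>
     (\<forall>i<length L. \<forall>j<length L. i \<noteq> j \<longrightarrow> \<not> proportional (L ! i) (L ! j))"

(* the point of P^2 represented by a nonzero p, as the line C p in C^3 *)
definition proj_pt :: "pt \<Rightarrow> pt set" where
  "proj_pt p = (case p of (x, y, z) \<Rightarrow> {(c * x, c * y, c * z) | c. True})"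

definition mult_at :: "pt list \<Rightarrow> pt \<Rightarrow> nat" where
  "mult_at L p = length (filter (\<lambda>l. lin l p = 0) L)"

definition n_pts :: "pt list \<Rightarrow> nat \<Rightarrow> nat" where
  "n_pts L i = card {proj_pt p | p. p \<noteq> (0, 0, 0) \<and> mult_at L p = i}"

definition same_weak_comb :: "pt list \<Rightarrow> pt list \<Rightarrow> bool" where
  "same_weak_comb L M \<longleftrightarrow> length L = length M \<and> (\<forall>i\<ge>2. n_pts L i = n_pts M i)"

definition weak_ziegler_pair :: "pt list \<Rightarrow> pt list \<Rightarrow> bool" where
  "weak_ziegler_pair L M \<longleftrightarrow> line_arrangement L \<and> line_arrangement M \<and>
     same_weak_comb L M \<and> mdr (arr_poly L) \<noteq> mdr (arr_poly M)"

end

theory Submission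
  imports Defs
begin


definition mon :: "nat \<times> nat \<times> nat \<Rightarrow> pt \<Rightarrow> complex" where
  "mon t p = (case t of (i,j,k) \<Rightarrow> case p of (x,y,z) \<Rightarrow> x^i * y^j * z^k)"

definition tbox :: "nat \<Rightarrow> (nat \<times> nat \<times> nat) set" where
  "tbox r = {..r} \<times> {..r} \<times> {..r}"

lemma finite_tbox[simp]: "finite (tbox r)" by (simp add: tbox_def)

lemma peval_tbox: "peval r a p = (\<Sum>t\<in>tbox r. a t * mon t p)"
proof -
  obtain x y z where p: "p = (x,y,z)" by (cases p) auto
  have "peval r a p = (\<Sum>i\<le>r. \<Sum>(j,k)\<in>{..r}\<times>{..r}. a (i, j, k) * x ^ i * y ^ j * z ^ k)"
    unfolding peval_def p by (simp add: sum.cartesian_product)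
  also have "\<dots> = (\<Sum>(i,j,k)\<in>{..r}\<times>({..r}\<times>{..r}). a (i, j, k) * x ^ i * y ^ j * z ^ k)"
    by (simp add: sum.cartesian_product split_def)
  also have "\<dots> = (\<Sum>t\<in>tbox r. a t * mon t p)"
    unfolding tbox_def mon_def p by (intro sum.cong) (auto simp: mult.assoc)
  finally show ?thesis .
qed

definition supp_in :: "nat \<Rightarrow> (nat \<times> nat \<times> nat \<Rightarrow> complex) \<Rightarrow> bool" where
  "supp_in r a \<longleftrightarrow> (\<forall>t. a t \<noteq> 0 \<longrightarrow> t \<in> tbox r)"

lemma hpoly_supp: "hpoly r a \<Longrightarrow> supp_in r a"
  unfolding hpoly_def supp_in_def tbox_def by fastforce

lemma tbox_mono: "r \<le> R \<Longrightarrow> tbox r \<subseteq> tbox R"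
  unfolding tbox_def by auto

lemma peval_ext: assumes "supp_in r a" "r \<le> R" shows "peval R a p = peval r a p"
  unfolding peval_tbox
  apply (rule sum.mono_neutral_right)
  using assms tbox_mono[OF assms(2)] by (auto simp: supp_in_def)

lemma polyfun1: fixes c :: "nat \<Rightarrow> complex"
  assumes "\<And>x. (\<Sum>i\<le>n. c i * x^i) = 0" shows "\<forall>i\<le>n. c i = 0"
  using polyfun_eq_0[of c n] assms by auto

lemma identity3:
  assumes "\<And>p. peval R c p = 0"
  shows "\<And>i j k. i \<le> R \<Longrightarrow> j \<le> R \<Longrightarrow> k \<le> R \<Longrightarrow> c (i,j,k) = 0"
proof -
  fix i j k assume ijk: "i \<le> R" "j \<le> R" "k \<le> R"
  have A: "\<And>y z. \<forall>i\<le>R. (\<Sum>j\<le>R. \<Sum>k\<le>R. c (i,j,k) * y^j * z^k) = 0"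
  proof -
    fix y z
    show "\<forall>i\<le>R. (\<Sum>j\<le>R. \<Sum>k\<le>R. c (i,j,k) * y^j * z^k) = 0"
    proof (rule polyfun1)
      fix x :: complex
      have "(\<Sum>i\<le>R. (\<Sum>j\<le>R. \<Sum>k\<le>R. c (i,j,k) * y^j * z^k) * x^i) = peval R c (x,y,z)"
        unfolding peval_def by (simp add: sum_distrib_left sum_distrib_right mult_ac)
      then show "(\<Sum>i\<le>R. (\<Sum>j\<le>R. \<Sum>k\<le>R. c (i,j,k) * y^j * z^k) * x^i) = 0" using assms by simp
    qed
  qed
  have B: "\<And>z. \<forall>j\<le>R. (\<Sum>k\<le>R. c (i,j,k) * z^k) = 0"
  proof -
    fix z
    show "\<forall>j\<le>R. (\<Sum>k\<le>R. c (i,j,k) * z^k) = 0"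
    proof (rule polyfun1)
      fix y :: complex
      have "(\<Sum>j\<le>R. (\<Sum>k\<le>R. c (i,j,k) * z^k) * y^j) = (\<Sum>j\<le>R. \<Sum>k\<le>R. c (i,j,k) * y^j * z^k)"
        by (simp add: sum_distrib_left sum_distrib_right mult_ac)
      then show "(\<Sum>j\<le>R. (\<Sum>k\<le>R. c (i,j,k) * z^k) * y^j) = 0" using A[of y z] ijk by simp
    qed
  qed
  have "\<forall>k\<le>R. c (i,j,k) = 0"
    by (rule polyfun1) (use B ijk in auto)
  then show "c (i,j,k) = 0" using ijk by simp
qed


definition tadd :: "nat \<times> nat \<times> nat \<Rightarrow> nat \<times> nat \<times> nat \<Rightarrow> nat \<times> nat \<times> nat" where
  "tadd m t = (case m of (m1,m2,m3) \<Rightarrow> case t of (i,j,k) \<Rightarrow> (m1+i, m2+j, m3+k))"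

definition shift :: "nat \<times> nat \<times> nat \<Rightarrow> (nat \<times> nat \<times> nat \<Rightarrow> complex) \<Rightarrow> nat \<times> nat \<times> nat \<Rightarrow> complex" where
  "shift m g t = (case m of (m1,m2,m3) \<Rightarrow> case t of (i,j,k) \<Rightarrow>
     if m1 \<le> i \<and> m2 \<le> j \<and> m3 \<le> k then g (i-m1, j-m2, k-m3) else 0)"

lemma mon_tadd: "mon (tadd m t) p = mon m p * mon t p"
  by (cases m; cases t; cases p) (simp add: tadd_def mon_def power_add mult_ac)

lemma shift_tadd: "shift m g (tadd m t) = g t"
  by (cases m; cases t) (simp add: tadd_def shift_def)

lemma inj_tadd: "inj (tadd m)"
  unfolding inj_def tadd_def by (cases m) auto

lemma peval_shift:
  assumes "supp_in s g" "fst m + s \<le> R" "fst (snd m) + s \<le> R" "snd (snd m) + s \<le> R"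
  shows "peval R (shift m g) p = mon m p * peval s g p"
proof -
  have "mon m p * peval s g p = (\<Sum>t\<in>tbox s. g t * mon (tadd m t) p)"
    unfolding peval_tbox by (simp add: sum_distrib_left mon_tadd mult_ac)
  also have "\<dots> = (\<Sum>t\<in>tbox s. shift m g (tadd m t) * mon (tadd m t) p)"
    by (simp add: shift_tadd)
  also have "\<dots> = (\<Sum>u\<in>tadd m ` tbox s. shift m g u * mon u p)"
    by (subst sum.reindex) (auto intro: inj_on_subset[OF inj_tadd])
  also have "\<dots> = (\<Sum>u\<in>tbox R. shift m g u * mon u p)"
  proof (rule sum.mono_neutral_left)
    show "finite (tbox R)" by simp
    show "tadd m ` tbox s \<subseteq> tbox R"
      using assms(2-4) by (cases m) (auto simp: tbox_def tadd_def)
    show "\<forall>i\<in>tbox R - tadd m ` tbox s. shift m g i * mon i p = 0"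
    proof
      fix u assume u: "u \<in> tbox R - tadd m ` tbox s"
      obtain m1 m2 m3 where m: "m = (m1,m2,m3)" by (cases m) auto
      obtain i j k where uu: "u = (i,j,k)" by (cases u) auto
      show "shift m g u * mon u p = 0"
      proof (cases "m1 \<le> i \<and> m2 \<le> j \<and> m3 \<le> k")
        case True
        then have "u = tadd m (i-m1, j-m2, k-m3)" by (simp add: uu m tadd_def)
        with u have "(i-m1, j-m2, k-m3) \<notin> tbox s" by auto
        then have "g (i-m1, j-m2, k-m3) = 0" using assms(1) unfolding supp_in_def by blast
        then show ?thesis using True by (simp add: shift_def m uu)
      next
        case False
        then show ?thesis unfolding shift_def m uu by auto
      qed
    qed
  qed
  finally show ?thesis by (simp add: peval_tbox)
qed

lemma peval_lin2: "peval R (\<lambda>t. a * f t + b * g t) p = a * peval R f p + b * peval R g p"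
  unfolding peval_tbox by (simp add: sum.distrib sum_distrib_left algebra_simps)

lemma peval_lin3: "peval R (\<lambda>t. a * f t + b * g t + c * h t) p = a * peval R f p + b * peval R g p + c * peval R h p"
  unfolding peval_tbox by (simp add: sum.distrib sum_distrib_left algebra_simps)

lemma peval_sum: "finite S \<Longrightarrow> peval R (\<lambda>t. \<Sum>j\<in>S. F j t) p = (\<Sum>j\<in>S. peval R (F j) p)"
  unfolding peval_tbox by (simp add: sum_distrib_right sum.swap[of _ S])

lemma peval_smult: "peval R (\<lambda>t. a * f t) p = a * peval R f p"
  unfolding peval_tbox by (simp add: sum_distrib_left mult_ac)

lemma supp_shift: assumes "supp_in s g" "fst m + s \<le> R" "fst (snd m) + s \<le> R" "snd (snd m) + s \<le> R"
  shows "supp_in R (shift m g)"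
  unfolding supp_in_def
proof (intro allI impI)
  fix t assume t: "shift m g t \<noteq> 0"
  obtain m1 m2 m3 where m: "m = (m1,m2,m3)" by (cases m) auto
  obtain i j k where tt: "t = (i,j,k)" by (cases t) auto
  have c: "m1 \<le> i \<and> m2 \<le> j \<and> m3 \<le> k" and g: "g (i-m1, j-m2, k-m3) \<noteq> 0"
    using t by (auto simp: shift_def m tt split: if_splits)
  have "(i-m1, j-m2, k-m3) \<in> tbox s" using assms(1) g unfolding supp_in_def by blast
  then show "t \<in> tbox R" using c assms(2-4) by (auto simp: tbox_def m tt)
qed

lemma hpoly_shift: "hpoly s g \<Longrightarrow> hpoly (fst m + fst (snd m) + snd (snd m) + s) (shift m g)"
  unfolding hpoly_def shift_def
  by (cases m) (fastforce split: prod.splits if_splits)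

definition mul_lin :: "pt \<Rightarrow> (nat \<times> nat \<times> nat \<Rightarrow> complex) \<Rightarrow> nat \<times> nat \<times> nat \<Rightarrow> complex" where
  "mul_lin l c = (case l of (l1,l2,l3) \<Rightarrow> (\<lambda>t. l1 * shift (1,0,0) c t + l2 * shift (0,1,0) c t + l3 * shift (0,0,1) c t))"

lemma peval_mul_lin: assumes "hpoly r c" shows "peval (Suc r) (mul_lin l c) p = lin l p * peval r c p"
proof -
  obtain l1 l2 l3 where l: "l = (l1,l2,l3)" by (cases l) auto
  obtain x y z where p: "p = (x,y,z)" by (cases p) auto
  have s: "supp_in r c" using hpoly_supp[OF assms] .
  show ?thesis
    unfolding mul_lin_def l apply (simp only: prod.case peval_lin3)
    apply (subst peval_shift[OF s], simp, simp, simp)+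
    by (simp add: lin_def mon_def p algebra_simps)
qed

lemma hpoly_lin3: assumes "hpoly r f" "hpoly r g" "hpoly r h"
  shows "hpoly r (\<lambda>t. a * f t + b * g t + c * h t)"
  unfolding hpoly_def
proof (intro allI impI)
  fix i j k assume "a * f (i,j,k) + b * g (i,j,k) + c * h (i,j,k) \<noteq> 0"
  then have "f (i,j,k) \<noteq> 0 \<or> g (i,j,k) \<noteq> 0 \<or> h (i,j,k) \<noteq> 0" by auto
  then show "i + j + k = r" using assms unfolding hpoly_def by blast
qed

lemma hpoly_mul_lin: assumes "hpoly r c" shows "hpoly (Suc r) (mul_lin l c)"
proof -
  obtain l1 l2 l3 where l: "l = (l1,l2,l3)" by (cases l) auto
  have 1: "hpoly (Suc r) (shift (1,0,0) c)" using hpoly_shift[OF assms, of "(1,0,0)"] by simp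
  have 2: "hpoly (Suc r) (shift (0,1,0) c)" using hpoly_shift[OF assms, of "(0,1,0)"] by simp
  have 3: "hpoly (Suc r) (shift (0,0,1) c)" using hpoly_shift[OF assms, of "(0,0,1)"] by simp
  show ?thesis unfolding mul_lin_def l prod.case by (rule hpoly_lin3[OF 1 2 3])
qed

definition delta0 :: "nat \<times> nat \<times> nat \<Rightarrow> complex" where
  "delta0 t = (if t = (0,0,0) then 1 else 0)"

fun polyL :: "pt list \<Rightarrow> nat \<times> nat \<times> nat \<Rightarrow> complex" where
  "polyL [] = delta0"
| "polyL (l # L) = mul_lin l (polyL L)"

lemma hpoly_polyL: "hpoly (length L) (polyL L)"
proof (induction L)
  case Nil
  then show ?case by (auto simp: hpoly_def delta0_def)
next
  case (Cons l L)
  then show ?case using hpoly_mul_lin by simp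
qed

lemma peval_polyL: "peval (length L) (polyL L) p = arr_poly L p"
proof (induction L)
  case Nil
  then show ?case by (cases p) (simp add: peval_def delta0_def arr_poly_def)
next
  case (Cons l L)
  then show ?case
    by (simp add: peval_mul_lin[OF hpoly_polyL] arr_poly_def)
qed


lemma deriv_poly1:
  fixes w :: "nat \<Rightarrow> complex"
  assumes "w (Suc R) = 0"
  shows "deriv (\<lambda>t. \<Sum>i\<le>R. w i * t^i) x = (\<Sum>i\<le>R. of_nat (Suc i) * w (Suc i) * x^i)"
proof -
  have "((\<lambda>t. \<Sum>i\<le>R. w i * t^i) has_field_derivative (\<Sum>i\<le>R. w i * (of_nat i * (1 * x^(i - Suc 0))))) (at x)"
    by (rule DERIV_sum, rule DERIV_cmult, rule DERIV_power, rule DERIV_ident)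
  then have "deriv (\<lambda>t. \<Sum>i\<le>R. w i * t^i) x = (\<Sum>i\<le>R. w i * (of_nat i * x^(i-1)))"
    by (simp add: DERIV_imp_deriv)
  also have "\<dots> = (\<Sum>i\<le>Suc R. w i * (of_nat i * x^(i-1)))"
    using assms by simp
  also have "\<dots> = (\<Sum>i\<le>R. of_nat (Suc i) * w (Suc i) * x^i)"
    by (subst sum.atMost_Suc_shift) (simp add: mult_ac)
  finally show ?thesis .
qed

lemma supp_zero: assumes "supp_in R c"
  shows "c (Suc R, j, k) = 0" "c (i, Suc R, k) = 0" "c (i, j, Suc R) = 0"
proof -
  have "\<And>t. c t \<noteq> 0 \<Longrightarrow> t \<in> tbox R" using assms unfolding supp_in_def by blast
  then show "c (Suc R, j, k) = 0" "c (i, Suc R, k) = 0" "c (i, j, Suc R) = 0"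
    unfolding tbox_def by fastforce+
qed

definition dxc :: "(nat \<times> nat \<times> nat \<Rightarrow> complex) \<Rightarrow> nat \<times> nat \<times> nat \<Rightarrow> complex" where
  "dxc c t = (case t of (i,j,k) \<Rightarrow> of_nat (Suc i) * c (Suc i, j, k))"
definition dyc :: "(nat \<times> nat \<times> nat \<Rightarrow> complex) \<Rightarrow> nat \<times> nat \<times> nat \<Rightarrow> complex" where
  "dyc c t = (case t of (i,j,k) \<Rightarrow> of_nat (Suc j) * c (i, Suc j, k))"
definition dzc :: "(nat \<times> nat \<times> nat \<Rightarrow> complex) \<Rightarrow> nat \<times> nat \<times> nat \<Rightarrow> complex" where
  "dzc c t = (case t of (i,j,k) \<Rightarrow> of_nat (Suc k) * c (i, j, Suc k))"

lemma pdx_peval: assumes "supp_in R c"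
  shows "pdx (peval R c) p = peval R (dxc c) p"
proof -
  obtain x y z where p: "p = (x,y,z)" by (cases p) auto
  define w where "w i = (\<Sum>j\<le>R. \<Sum>k\<le>R. c (i,j,k) * y^j * z^k)" for i
  have eq: "(\<lambda>t. peval R c (t,y,z)) = (\<lambda>t. \<Sum>i\<le>R. w i * t^i)"
    unfolding peval_def w_def by (simp add: sum_distrib_left sum_distrib_right mult_ac)
  have w0: "w (Suc R) = 0"
    using assms unfolding w_def by (simp add: supp_zero)
  show ?thesis
    unfolding pdx_def p prod.case eq deriv_poly1[of w R, OF w0]
    unfolding peval_def w_def dxc_def by (simp add: sum_distrib_left sum_distrib_right mult_ac)
qed

lemma pdy_peval: assumes "supp_in R c"
  shows "pdy (peval R c) p = peval R (dyc c) p"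
proof -
  obtain x y z where p: "p = (x,y,z)" by (cases p) auto
  define w where "w j = (\<Sum>i\<le>R. \<Sum>k\<le>R. c (i,j,k) * x^i * z^k)" for j
  have eq1: "peval R c (x,t,z) = (\<Sum>j\<le>R. \<Sum>i\<le>R. \<Sum>k\<le>R. c (i,j,k) * x^i * t^j * z^k)" for t
    unfolding peval_def by (simp only: prod.case, rule sum.swap)
  have eq: "(\<lambda>t. peval R c (x,t,z)) = (\<lambda>t. \<Sum>j\<le>R. w j * t^j)"
  proof
    fix t show "peval R c (x,t,z) = (\<Sum>j\<le>R. w j * t^j)"
      unfolding eq1 w_def sum_distrib_right by (intro sum.cong refl; simp add: mult_ac)
  qed
  have w0: "w (Suc R) = 0"
    using assms unfolding w_def by (simp add: supp_zero)
  have eq2: "peval R (dyc c) (x,y,z) = (\<Sum>j\<le>R. \<Sum>i\<le>R. \<Sum>k\<le>R. dyc c (i,j,k) * x^i * y^j * z^k)"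
    unfolding peval_def by (simp only: prod.case, rule sum.swap)
  show ?thesis
    unfolding pdy_def p prod.case eq deriv_poly1[of w R, OF w0] eq2
    unfolding w_def dyc_def by (intro sum.cong refl) (simp add: sum_distrib_left mult_ac)
qed

lemma pdz_peval: assumes "supp_in R c"
  shows "pdz (peval R c) p = peval R (dzc c) p"
proof -
  obtain x y z where p: "p = (x,y,z)" by (cases p) auto
  define w where "w k = (\<Sum>i\<le>R. \<Sum>j\<le>R. c (i,j,k) * x^i * y^j)" for k
  have sw: "\<And>F :: nat \<Rightarrow> nat \<Rightarrow> nat \<Rightarrow> complex. (\<Sum>i\<le>R. \<Sum>j\<le>R. \<Sum>k\<le>R. F i j k) = (\<Sum>k\<le>R. \<Sum>i\<le>R. \<Sum>j\<le>R. F i j k)"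
  proof -
    fix F :: "nat \<Rightarrow> nat \<Rightarrow> nat \<Rightarrow> complex"
    have "(\<Sum>i\<le>R. \<Sum>j\<le>R. \<Sum>k\<le>R. F i j k) = (\<Sum>i\<le>R. \<Sum>k\<le>R. \<Sum>j\<le>R. F i j k)"
      by (rule sum.cong[OF refl], rule sum.swap)
    also have "\<dots> = (\<Sum>k\<le>R. \<Sum>i\<le>R. \<Sum>j\<le>R. F i j k)" by (rule sum.swap)
    finally show "?thesis F" .
  qed
  have eq1: "peval R c (x,y,t) = (\<Sum>k\<le>R. \<Sum>i\<le>R. \<Sum>j\<le>R. c (i,j,k) * x^i * y^j * t^k)" for t
    unfolding peval_def by (simp only: prod.case, rule sw)
  have eq: "(\<lambda>t. peval R c (x,y,t)) = (\<lambda>t. \<Sum>k\<le>R. w k * t^k)"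
  proof
    fix t show "peval R c (x,y,t) = (\<Sum>k\<le>R. w k * t^k)"
      unfolding eq1 w_def sum_distrib_right by (intro sum.cong refl; simp add: mult_ac)
  qed
  have w0: "w (Suc R) = 0"
    using assms unfolding w_def by (simp add: supp_zero)
  have eq2: "peval R (dzc c) (x,y,z) = (\<Sum>k\<le>R. \<Sum>i\<le>R. \<Sum>j\<le>R. dzc c (i,j,k) * x^i * y^j * z^k)"
    unfolding peval_def by (simp only: prod.case, rule sw)
  show ?thesis
    unfolding pdz_def p prod.case eq deriv_poly1[of w R, OF w0] eq2
    unfolding w_def dzc_def by (intro sum.cong refl) (simp add: sum_distrib_left mult_ac)
qed

lemma arr_poly_eq: "arr_poly L = peval (length L) (polyL L)"
  using peval_polyL by (auto intro!: ext)

lemma hpoly_dxc: assumes "hpoly (Suc r) c" shows "hpoly r (dxc c)"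
  unfolding hpoly_def
proof (intro allI impI)
  fix i j k assume "dxc c (i,j,k) \<noteq> 0"
  then have "c (Suc i, j, k) \<noteq> 0" by (auto simp: dxc_def)
  then have "Suc i + j + k = Suc r" using assms unfolding hpoly_def by blast
  then show "i + j + k = r" by simp
qed
lemma hpoly_dyc: assumes "hpoly (Suc r) c" shows "hpoly r (dyc c)"
  unfolding hpoly_def
proof (intro allI impI)
  fix i j k assume "dyc c (i,j,k) \<noteq> 0"
  then have "c (i, Suc j, k) \<noteq> 0" by (auto simp: dyc_def)
  then have "i + Suc j + k = Suc r" using assms unfolding hpoly_def by blast
  then show "i + j + k = r" by simp
qed
lemma hpoly_dzc: assumes "hpoly (Suc r) c" shows "hpoly r (dzc c)"
  unfolding hpoly_def
proof (intro allI impI)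
  fix i j k assume "dzc c (i,j,k) \<noteq> 0"
  then have "c (i, j, Suc k) \<noteq> 0" by (auto simp: dzc_def)
  then have "i + j + Suc k = Suc r" using assms unfolding hpoly_def by blast
  then show "i + j + k = r" by simp
qed

lemma pdx_arr: assumes "length L = Suc r" shows "pdx (arr_poly L) p = peval r (dxc (polyL L)) p"
proof -
  have h: "hpoly (Suc r) (polyL L)" using hpoly_polyL[of L] assms by simp
  have "pdx (arr_poly L) p = peval (Suc r) (dxc (polyL L)) p"
    unfolding arr_poly_eq assms by (rule pdx_peval[OF hpoly_supp[OF h]])
  also have "\<dots> = peval r (dxc (polyL L)) p"
    by (rule peval_ext[OF hpoly_supp[OF hpoly_dxc[OF h]]]) simp
  finally show ?thesis .
qed
lemma pdy_arr: assumes "length L = Suc r" shows "pdy (arr_poly L) p = peval r (dyc (polyL L)) p"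
proof -
  have h: "hpoly (Suc r) (polyL L)" using hpoly_polyL[of L] assms by simp
  have "pdy (arr_poly L) p = peval (Suc r) (dyc (polyL L)) p"
    unfolding arr_poly_eq assms by (rule pdy_peval[OF hpoly_supp[OF h]])
  also have "\<dots> = peval r (dyc (polyL L)) p"
    by (rule peval_ext[OF hpoly_supp[OF hpoly_dyc[OF h]]]) simp
  finally show ?thesis .
qed
lemma pdz_arr: assumes "length L = Suc r" shows "pdz (arr_poly L) p = peval r (dzc (polyL L)) p"
proof -
  have h: "hpoly (Suc r) (polyL L)" using hpoly_polyL[of L] assms by simp
  have "pdz (arr_poly L) p = peval (Suc r) (dzc (polyL L)) p"
    unfolding arr_poly_eq assms by (rule pdz_peval[OF hpoly_supp[OF h]])
  also have "\<dots> = peval r (dzc (polyL L)) p"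
    by (rule peval_ext[OF hpoly_supp[OF hpoly_dzc[OF h]]]) simp
  finally show ?thesis .
qed


type_synonym gi = "int \<times> int"

definition gadd :: "gi \<Rightarrow> gi \<Rightarrow> gi" where "gadd x y = (fst x + fst y, snd x + snd y)"
definition gmul :: "gi \<Rightarrow> gi \<Rightarrow> gi" where
  "gmul x y = (fst x * fst y - snd x * snd y, fst x * snd y + snd x * fst y)"
definition toC :: "complex \<Rightarrow> gi \<Rightarrow> complex" where
  "toC e x = of_int (fst x) + of_int (snd x) * e"

lemma gadd_simp[simp]: "gadd (a,b) (c,d) = (a+c, b+d)" by (simp add: gadd_def)
lemma gmul_simp[simp]: "gmul (a,b) (c,d) = (a*c - b*d, a*d + b*c)" by (simp add: gmul_def)

lemma toC_add: "toC e (gadd x y) = toC e x + toC e y"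
  by (simp add: toC_def gadd_def algebra_simps)
lemma toC_mul: assumes "e * e = -1" shows "toC e (gmul x y) = toC e x * toC e y"
proof -
  have "toC e x * toC e y = of_int (fst x) * of_int (fst y) + (of_int (fst x) * of_int (snd y) + of_int (snd x) * of_int (fst y)) * e
        + of_int (snd x) * of_int (snd y) * (e * e)"
    by (simp add: toC_def algebra_simps)
  also have "\<dots> = toC e (gmul x y)" using assms by (simp add: toC_def gmul_def algebra_simps)
  finally show ?thesis by simp
qed
lemma toC_zero[simp]: "toC e (0,0) = 0" by (simp add: toC_def)

lemma toC_eq0: assumes "e * e = -1" shows "toC e x = 0 \<longleftrightarrow> x = (0,0)"
proof
  assume h: "toC e x = 0"
  obtain a b where x: "x = (a,b)" by (cases x) auto
  have "(of_int a + of_int b * e) * (of_int a - of_int b * e) = 0" using h by (simp add: toC_def x)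
  then have "of_int a * of_int a - of_int b * of_int b * (e * e) = (0::complex)" by (simp add: algebra_simps)
  then have "of_int (a * a + b * b) = (0::complex)" using assms by simp
  then have "a * a + b * b = 0" by (simp only: of_int_eq_0_iff)
  then have "a = 0 \<and> b = 0" by (simp add: sum_squares_eq_zero_iff)
  then show "x = (0,0)" by (simp add: x)
qed (simp)

definition toC3 :: "complex \<Rightarrow> gi \<times> gi \<times> gi \<Rightarrow> pt" where
  "toC3 e l = (case l of (a,b,c) \<Rightarrow> (toC e a, toC e b, toC e c))"

definition gmul_lin :: "gi \<times> gi \<times> gi \<Rightarrow> (nat \<times> nat \<times> nat \<Rightarrow> gi) \<Rightarrow> nat \<times> nat \<times> nat \<Rightarrow> gi" where
  "gmul_lin l c t = (case l of (l1,l2,l3) \<Rightarrow> case t of (i,j,k) \<Rightarrow>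
     gadd (gadd (if i = 0 \<or> l1 = (0,0) then (0,0) else gmul l1 (c (i-1,j,k)))
                (if j = 0 \<or> l2 = (0,0) then (0,0) else gmul l2 (c (i,j-1,k))))
          (if k = 0 \<or> l3 = (0,0) then (0,0) else gmul l3 (c (i,j,k-1))))"

fun gpolyL :: "(gi \<times> gi \<times> gi) list \<Rightarrow> nat \<times> nat \<times> nat \<Rightarrow> gi" where
  "gpolyL [] = (\<lambda>t. if t = (0,0,0) then (1,0) else (0,0))"
| "gpolyL (l # L) = gmul_lin l (gpolyL L)"

lemma toC_gpolyL: assumes "e * e = -1"
  shows "toC e (gpolyL L t) = polyL (map (toC3 e) L) t"
proof (induction L arbitrary: t)
  case Nil
  then show ?case by (simp add: delta0_def toC_def)
next
  case (Cons l L)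
  obtain l1 l2 l3 where l: "l = (l1,l2,l3)" by (cases l) auto
  obtain i j k where t: "t = (i,j,k)" by (cases t) auto
  show ?case
    by (auto simp: l t gmul_lin_def mul_lin_def shift_def toC3_def toC_add toC_mul[OF assms] Cons
        simp del: gmul_simp gadd_simp)
qed


definition tri :: "nat \<Rightarrow> (nat \<times> nat \<times> nat) list" where
  "tri n = concat (map (\<lambda>i. map (\<lambda>j. (i, j, n - i - j)) [0..<Suc n - i]) [0..<Suc n])"

lemma set_tri: "set (tri n) = {(i,j,k). i + j + k = n}"
  unfolding tri_def by (auto simp: image_iff) 

lemma peval_list: assumes "hpoly r a" "distinct (tri r)"
  shows "peval r a p = (\<Sum>j<length (tri r). a (tri r ! j) * mon (tri r ! j) p)"
proof -
  have sub: "set (tri r) \<subseteq> tbox r" unfolding set_tri tbox_def by auto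
  have "peval r a p = (\<Sum>t\<in>set (tri r). a t * mon t p)"
    unfolding peval_tbox
  proof (rule sum.mono_neutral_right)
    show "finite (tbox r)" by simp
    show "set (tri r) \<subseteq> tbox r" by (rule sub)
    show "\<forall>t\<in>tbox r - set (tri r). a t * mon t p = 0"
    proof
      fix t assume "t \<in> tbox r - set (tri r)"
      then have "t \<notin> set (tri r)" by simp
      then have "a t = 0" using assms(1) unfolding hpoly_def set_tri by (cases t) auto
      then show "a t * mon t p = 0" by simp
    qed
  qed
  also have "\<dots> = sum_list (map (\<lambda>t. a t * mon t p) (tri r))"
    by (rule sum.distinct_set_conv_list[OF assms(2)])
  also have "\<dots> = (\<Sum>j<length (tri r). a (tri r ! j) * mon (tri r ! j) p)"
    by (simp add: sum_list_sum_nth atLeast0LessThan)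
  finally show ?thesis .
qed

lemma tri_bound: "m \<in> set (tri r) \<Longrightarrow> fst m \<le> r \<and> fst (snd m) \<le> r \<and> snd (snd m) \<le> r"
  unfolding set_tri by auto

definition Scoef :: "nat \<Rightarrow> _ \<Rightarrow> _ \<Rightarrow> _ \<Rightarrow> _ \<Rightarrow> _ \<Rightarrow> _ \<Rightarrow> nat \<times> nat \<times> nat \<Rightarrow> complex" where
  "Scoef r a b c FX FY FZ t = (\<Sum>j<length (tri r).
      a (tri r ! j) * shift (tri r ! j) FX t + b (tri r ! j) * shift (tri r ! j) FY t + c (tri r ! j) * shift (tri r ! j) FZ t)"

lemma expand_syz:
  assumes "hpoly r a" "hpoly r b" "hpoly r c" "supp_in s FX" "supp_in s FY" "supp_in s FZ" "distinct (tri r)"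
  shows "peval r a p * peval s FX p + peval r b p * peval s FY p + peval r c p * peval s FZ p
       = peval (r+s) (Scoef r a b c FX FY FZ) p"
proof -
  have sh: "peval (r+s) (shift (tri r ! j) F) p = mon (tri r ! j) p * peval s F p"
    if "j < length (tri r)" "supp_in s F" for j F
  proof -
    have "tri r ! j \<in> set (tri r)" using that by simp
    then have b: "fst (tri r ! j) \<le> r" "fst (snd (tri r ! j)) \<le> r" "snd (snd (tri r ! j)) \<le> r"
      using tri_bound by blast+
    show ?thesis by (rule peval_shift) (use that b in auto)
  qed
  have "peval (r+s) (Scoef r a b c FX FY FZ) p = (\<Sum>j<length (tri r).
      a (tri r ! j) * peval (r+s) (shift (tri r ! j) FX) p + b (tri r ! j) * peval (r+s) (shift (tri r ! j) FY) p
      + c (tri r ! j) * peval (r+s) (shift (tri r ! j) FZ) p)"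
    unfolding Scoef_def by (simp add: peval_sum peval_lin3)
  also have "\<dots> = (\<Sum>j<length (tri r).
      a (tri r ! j) * (mon (tri r ! j) p * peval s FX p) + b (tri r ! j) * (mon (tri r ! j) p * peval s FY p)
      + c (tri r ! j) * (mon (tri r ! j) p * peval s FZ p))"
    by (intro sum.cong refl) (simp add: sh assms)
  also have "\<dots> = peval r a p * peval s FX p + peval r b p * peval s FY p + peval r c p * peval s FZ p"
    unfolding peval_list[OF assms(1,7)] peval_list[OF assms(2,7)] peval_list[OF assms(3,7)]
    by (simp add: sum.distrib sum_distrib_left sum_distrib_right mult_ac)
  finally show ?thesis by simp
qed

lemma syz_coef_zero:
  assumes "hpoly r a" "hpoly r b" "hpoly r c" "supp_in s FX" "supp_in s FY" "supp_in s FZ" "distinct (tri r)"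
    and "\<And>p. peval r a p * peval s FX p + peval r b p * peval s FY p + peval r c p * peval s FZ p = 0"
    and "t \<in> tbox (r+s)"
  shows "Scoef r a b c FX FY FZ t = 0"
proof -
  obtain i j k where t: "t = (i,j,k)" by (cases t) auto
  have "\<And>p. peval (r+s) (Scoef r a b c FX FY FZ) p = 0"
    using assms(8) expand_syz[OF assms(1-7)] by metis
  from identity3[OF this] show ?thesis using assms(9) by (auto simp: t tbox_def)
qed

definition gshift :: "nat \<times> nat \<times> nat \<Rightarrow> (nat \<times> nat \<times> nat \<Rightarrow> gi) \<Rightarrow> nat \<times> nat \<times> nat \<Rightarrow> gi" where
  "gshift m g t = (case m of (m1,m2,m3) \<Rightarrow> case t of (i,j,k) \<Rightarrow>
     if m1 \<le> i \<and> m2 \<le> j \<and> m3 \<le> k then g (i-m1, j-m2, k-m3) else (0,0))"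

lemma toC_gshift: "toC e (gshift m g t) = shift m (\<lambda>u. toC e (g u)) t"
  by (cases m; cases t) (simp add: gshift_def shift_def)

fun valr :: "complex \<Rightarrow> gi list \<Rightarrow> (nat \<Rightarrow> complex) \<Rightarrow> nat \<Rightarrow> complex" where
  "valr e [] U k = 0"
| "valr e (x # r) U k = toC e x * U k + valr e r U (Suc k)"

lemma valr_sum: "valr e r U k = (\<Sum>j<length r. toC e (r ! j) * U (k + j))"
proof (induction r arbitrary: k)
  case Nil then show ?case by simp
next
  case (Cons x r)
  show ?case by (simp add: Cons sum.lessThan_Suc_shift del: sum.lessThan_Suc)
qed

lemma valr_append: "valr e (r1 @ r2) U k = valr e r1 U k + valr e r2 U (k + length r1)"
  by (induction r1 arbitrary: k) (simp_all add: algebra_simps)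

definition rowg :: "nat \<Rightarrow> (nat \<times> nat \<times> nat \<Rightarrow> gi) \<Rightarrow> (nat \<times> nat \<times> nat \<Rightarrow> gi) \<Rightarrow> (nat \<times> nat \<times> nat \<Rightarrow> gi)
   \<Rightarrow> nat \<times> nat \<times> nat \<Rightarrow> gi list" where
  "rowg r GX GY GZ t = map (\<lambda>m. gshift m GX t) (tri r) @ map (\<lambda>m. gshift m GY t) (tri r) @ map (\<lambda>m. gshift m GZ t) (tri r)"

definition UV :: "nat \<Rightarrow> _ \<Rightarrow> _ \<Rightarrow> _ \<Rightarrow> nat \<Rightarrow> complex" where
  "UV r a b c j = (let n = length (tri r) in
     if j < n then a (tri r ! j) else if j < 2 * n then b (tri r ! (j - n)) else c (tri r ! (j - 2 * n)))"

lemma valr_rowg: "valr e (rowg r GX GY GZ t) (UV r a b c) 0 =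
   Scoef r a b c (\<lambda>u. toC e (GX u)) (\<lambda>u. toC e (GY u)) (\<lambda>u. toC e (GZ u)) t"
proof -
  let ?n = "length (tri r)"
  have 1: "valr e (map (\<lambda>m. gshift m GX t) (tri r)) (UV r a b c) 0 = (\<Sum>j<?n. a (tri r ! j) * shift (tri r ! j) (\<lambda>u. toC e (GX u)) t)"
    unfolding valr_sum by (intro sum.cong refl) (auto simp: UV_def toC_gshift Let_def mult.commute)
  have 2: "valr e (map (\<lambda>m. gshift m GY t) (tri r)) (UV r a b c) ?n = (\<Sum>j<?n. b (tri r ! j) * shift (tri r ! j) (\<lambda>u. toC e (GY u)) t)"
    unfolding valr_sum by (intro sum.cong refl) (auto simp: UV_def toC_gshift Let_def mult.commute)
  have 3: "valr e (map (\<lambda>m. gshift m GZ t) (tri r)) (UV r a b c) (2 * ?n) = (\<Sum>j<?n. c (tri r ! j) * shift (tri r ! j) (\<lambda>u. toC e (GZ u)) t)"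
    unfolding valr_sum by (intro sum.cong refl) (auto simp: UV_def toC_gshift Let_def mult.commute)
  show ?thesis
    unfolding rowg_def valr_append Scoef_def using 1 2 3 by (simp add: sum.distrib mult_2)
qed


definition vadd :: "gi list \<Rightarrow> gi list \<Rightarrow> gi list" where
  "vadd r s = map (\<lambda>(x,y). gadd x y) (zip r s)"
definition vsmul :: "gi \<Rightarrow> gi list \<Rightarrow> gi list" where
  "vsmul g r = map (gmul g) r"

fun lc :: "(gi \<times> gi list) list \<Rightarrow> gi list" where
  "lc [] = []"
| "lc [(g,r)] = vsmul g r"
| "lc ((g,r) # xs) = vadd (vsmul g r) (lc xs)"

lemma valr_vadd: "length r = length s \<Longrightarrow> valr e (vadd r s) U k = valr e r U k + valr e s U k"
proof (induction r arbitrary: s k)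
  case Nil then show ?case by (simp add: vadd_def)
next
  case (Cons x r)
  then obtain y s' where s: "s = y # s'" by (cases s) auto
  with Cons show ?case by (simp add: vadd_def toC_add algebra_simps)
qed

lemma valr_vsmul: "e * e = -1 \<Longrightarrow> valr e (vsmul g r) U k = toC e g * valr e r U k"
  by (induction r arbitrary: k) (simp_all add: vsmul_def toC_mul algebra_simps)

lemma length_vsmul[simp]: "length (vsmul g r) = length r" by (simp add: vsmul_def)
lemma length_vadd[simp]: "length (vadd r s) = min (length r) (length s)" by (simp add: vadd_def)

lemma lc_zero: assumes "e * e = -1" "xs \<noteq> []" "\<forall>(g,r)\<in>set xs. length r = n \<and> valr e r U 0 = 0"
  shows "valr e (lc xs) U 0 = 0 \<and> length (lc xs) = n"
  using assms(2,3)
proof (induction xs rule: lc.induct)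
  case 1 then show ?case by simp
next
  case (2 g r) then show ?case by (simp add: valr_vsmul[OF assms(1)])
next
  case (3 g r y ys)
  then have IH: "valr e (lc (y # ys)) U 0 = 0 \<and> length (lc (y # ys)) = n" by auto
  from 3 have r: "length r = n" "valr e r U 0 = 0" by auto
  show ?case using IH r by (simp add: valr_vadd valr_vsmul[OF assms(1)])
qed

lemma cert_step: assumes "e * e = -1" "\<forall>(g,r)\<in>set xs. length r = n \<and> valr e r U 0 = 0" "xs \<noteq> []"
  "lc xs = vsmul c P" "c \<noteq> (0,0)"
  shows "valr e P U 0 = 0"
proof -
  have "valr e (vsmul c P) U 0 = 0" using lc_zero[OF assms(1,3,2)] assms(4) by simp
  then have "toC e c * valr e P U 0 = 0" by (simp add: valr_vsmul[OF assms(1)])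
  moreover have "toC e c \<noteq> 0" using toC_eq0[OF assms(1)] assms(5) by simp
  ultimately show ?thesis by simp
qed


definition L2g :: "(gi \<times> gi \<times> gi) list" where
 "L2g = [((1, 0), (0, 0), (0, 0)), ((0, 0), (1, 0), (0, 0)), ((0, 0), (0, 0), (1, 0)), ((1, 0), (1, 0), (0, 0)), ((1, 0), (0, 0), (1, 0)), ((0, 0), (1, 0), (-1, 0)), ((1, 0), (1, 0), (0, 1)), ((1, 0), (0, -1), (1, 0)), ((1, 0), (0, -1), (0, 1))]"

definition GFl :: "((nat \<times> nat \<times> nat) \<times> gi) list" where
 "GFl = [((1,2,6), (1, 0)), ((1,3,5), (-2, -2)), ((1,4,4), (0, 4)), ((1,5,3), (2, -2)), ((1,6,2), (-1, 0)), ((2,1,6), (1, 0)), ((2,2,5), (0, -4)), ((2,3,4), (-7, 4)), ((2,4,3), (7, 4)), ((2,5,2), (0, -4)), ((2,6,1), (-1, 0)), ((3,1,5), (2, -2)), ((3,2,4), (-7, -4)), ((3,3,3), (0, 12)), ((3,4,2), (7, -4)), ((3,5,1), (-2, -2)), ((4,1,4), (0, -4)), ((4,2,3), (-7, 4)), ((4,3,2), (7, 4)), ((4,4,1), (0, -4)), ((5,1,3), (-2, -2)), ((5,2,2), (0, 4)), ((5,3,1), (2, -2)), ((6,1,2), (-1, 0)), ((6,2,1), (1, 0))]"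

definition GF :: "nat \<times> nat \<times> nat \<Rightarrow> gi" where
 "GF t = (if fst t + fst (snd t) + snd (snd t) = 9 then (case map_of GFl t of Some v \<Rightarrow> v | None \<Rightarrow> (0,0)) else (0,0))"

definition gdx :: "(nat \<times> nat \<times> nat \<Rightarrow> gi) \<Rightarrow> nat \<times> nat \<times> nat \<Rightarrow> gi" where
 "gdx G t = (case t of (i,j,k) \<Rightarrow> (int (Suc i) * fst (G (Suc i, j, k)), int (Suc i) * snd (G (Suc i, j, k))))"
definition gdy :: "(nat \<times> nat \<times> nat \<Rightarrow> gi) \<Rightarrow> nat \<times> nat \<times> nat \<Rightarrow> gi" where
 "gdy G t = (case t of (i,j,k) \<Rightarrow> (int (Suc j) * fst (G (i, Suc j, k)), int (Suc j) * snd (G (i, Suc j, k))))"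
definition gdz :: "(nat \<times> nat \<times> nat \<Rightarrow> gi) \<Rightarrow> nat \<times> nat \<times> nat \<Rightarrow> gi" where
 "gdz G t = (case t of (i,j,k) \<Rightarrow> (int (Suc k) * fst (G (i, j, Suc k)), int (Suc k) * snd (G (i, j, Suc k))))"

definition GX :: "nat \<times> nat \<times> nat \<Rightarrow> gi" where "GX = gdx GF"
definition GY :: "nat \<times> nat \<times> nat \<Rightarrow> gi" where "GY = gdy GF"
definition GZ :: "nat \<times> nat \<times> nat \<Rightarrow> gi" where "GZ = gdz GF"

lemma tri9: "tri 9 = [(0,0,9), (0,1,8), (0,2,7), (0,3,6), (0,4,5), (0,5,4), (0,6,3), (0,7,2), (0,8,1), (0,9,0), (1,0,8), (1,1,7), (1,2,6), (1,3,5), (1,4,4), (1,5,3), (1,6,2), (1,7,1), (1,8,0), (2,0,7), (2,1,6), (2,2,5), (2,3,4), (2,4,3), (2,5,2), (2,6,1), (2,7,0), (3,0,6), (3,1,5), (3,2,4), (3,3,3), (3,4,2), (3,5,1), (3,6,0), (4,0,5), (4,1,4), (4,2,3), (4,3,2), (4,4,1), (4,5,0), (5,0,4), (5,1,3), (5,2,2), (5,3,1), (5,4,0), (6,0,3), (6,1,2), (6,2,1), (6,3,0), (7,0,2), (7,1,1), (7,2,0), (8,0,1), (8,1,0), (9,0,0)]"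
  by (simp add: tri_def upt_rec)

lemma GF_tab: "list_all (\<lambda>t. gpolyL L2g t = GF t) (tri 9)"
  unfolding tri9 by (simp add: L2g_def gmul_lin_def GF_def GFl_def)


lemma GF_eq: "gpolyL L2g = GF"
proof
  fix t :: "nat \<times> nat \<times> nat"
  obtain i j k where t: "t = (i,j,k)" by (cases t) auto
  show "gpolyL L2g t = GF t"
  proof (cases "i + j + k = 9")
    case True
    then have "t \<in> set (tri 9)" by (simp add: t set_tri)
    then show ?thesis using GF_tab by (simp add: list_all_iff)
  next
    case False
    have ii: "\<i> * \<i> = -1" by simp
    have l9: "length (map (toC3 \<i>) L2g) = 9" by (simp add: L2g_def)
    have h: "hpoly 9 (polyL (map (toC3 \<i>) L2g))" using hpoly_polyL[of "map (toC3 \<i>) L2g"] unfolding l9 .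
    have "polyL (map (toC3 \<i>) L2g) t = 0" using h False unfolding hpoly_def t by auto
    then have "toC \<i> (gpolyL L2g t) = 0" using toC_gpolyL[OF ii] by simp
    then have "gpolyL L2g t = (0,0)" using toC_eq0[OF ii] by simp
    moreover have "GF t = (0,0)" using False by (simp add: GF_def t)
    ultimately show ?thesis by simp
  qed
qed

lemma L2_eq: assumes "e * e = -1" shows "polyL (map (toC3 e) L2g) = (\<lambda>t. toC e (GF t))"
proof
  fix t
  have "polyL (map (toC3 e) L2g) t = toC e (gpolyL L2g t)" using toC_gpolyL[OF assms] by simp
  then show "polyL (map (toC3 e) L2g) t = toC e (GF t)" using GF_eq by simp
qed

lemma dxc_GX: "dxc (\<lambda>t. toC e (GF t)) = (\<lambda>t. toC e (GX t))"
proof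
  fix t :: "nat \<times> nat \<times> nat"
  obtain i j k where t: "t = (i,j,k)" by (cases t) auto
  show "dxc (\<lambda>t. toC e (GF t)) t = toC e (GX t)"
    by (simp add: t dxc_def GX_def gdx_def toC_def algebra_simps)
qed
lemma dyc_GY: "dyc (\<lambda>t. toC e (GF t)) = (\<lambda>t. toC e (GY t))"
proof
  fix t :: "nat \<times> nat \<times> nat"
  obtain i j k where t: "t = (i,j,k)" by (cases t) auto
  show "dyc (\<lambda>t. toC e (GF t)) t = toC e (GY t)"
    by (simp add: t dyc_def GY_def gdy_def toC_def algebra_simps)
qed
lemma dzc_GZ: "dzc (\<lambda>t. toC e (GF t)) = (\<lambda>t. toC e (GZ t))"
proof
  fix t :: "nat \<times> nat \<times> nat"
  obtain i j k where t: "t = (i,j,k)" by (cases t) auto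
  show "dzc (\<lambda>t. toC e (GF t)) t = toC e (GZ t)"
    by (simp add: t dzc_def GZ_def gdz_def toC_def algebra_simps)
qed

lemma valr_Cons_num: "valr e (x # r) U k = toC e x * U k + valr e r U (k + 1)"
  by simp

lemma len_rowg: "length (rowg 4 GX GY GZ t) = 45"
  by (simp add: rowg_def tri_def upt_rec)



definition gsub :: "gi \<Rightarrow> gi \<Rightarrow> gi" where "gsub x y = (fst x - fst y, snd x - snd y)"
lemma gsub_simp[simp]: "gsub (a,b) (c,d) = (a-c, b-d)" by (simp add: gsub_def)
lemma toC_sub: "toC e (gsub x y) = toC e x - toC e y"
  by (simp add: toC_def gsub_def algebra_simps)

definition zero3 :: "gi \<times> gi \<times> gi" where "zero3 = ((0,0),(0,0),(0,0))"

definition gcross :: "gi \<times> gi \<times> gi \<Rightarrow> gi \<times> gi \<times> gi \<Rightarrow> gi \<times> gi \<times> gi" where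
  "gcross a b = (case a of (a1,a2,a3) \<Rightarrow> case b of (b1,b2,b3) \<Rightarrow>
     (gsub (gmul a2 b3) (gmul a3 b2), gsub (gmul a3 b1) (gmul a1 b3), gsub (gmul a1 b2) (gmul a2 b1)))"
definition glin :: "gi \<times> gi \<times> gi \<Rightarrow> gi \<times> gi \<times> gi \<Rightarrow> gi" where
  "glin a b = (case a of (a1,a2,a3) \<Rightarrow> case b of (b1,b2,b3) \<Rightarrow> gadd (gadd (gmul a1 b1) (gmul a2 b2)) (gmul a3 b3))"
definition ccross :: "pt \<Rightarrow> pt \<Rightarrow> pt" where
  "ccross a b = (case a of (a1,a2,a3) \<Rightarrow> case b of (b1,b2,b3) \<Rightarrow>
     (a2 * b3 - a3 * b2, a3 * b1 - a1 * b3, a1 * b2 - a2 * b1))"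
definition csmul :: "complex \<Rightarrow> pt \<Rightarrow> pt" where
  "csmul c a = (case a of (a1,a2,a3) \<Rightarrow> (c * a1, c * a2, c * a3))"

lemma toC3_cross: assumes "e * e = -1" shows "toC3 e (gcross a b) = ccross (toC3 e a) (toC3 e b)"
  by (cases a; cases b) (simp add: gcross_def ccross_def toC3_def toC_sub toC_mul[OF assms] del: gmul_simp gsub_simp)
lemma toC3_lin: assumes "e * e = -1" shows "lin (toC3 e a) (toC3 e b) = toC e (glin a b)"
  by (cases a; cases b) (simp add: glin_def lin_def toC3_def toC_add toC_mul[OF assms] del: gmul_simp gadd_simp)
lemma toC3_zero: assumes "e * e = -1" shows "toC3 e a = (0,0,0) \<longleftrightarrow> a = zero3"
  by (cases a) (auto simp: toC3_def zero3_def toC_eq0[OF assms])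

lemma cross_two_lines: assumes "lin l p = 0" "lin m p = 0" shows "ccross p (ccross l m) = (0,0,0)"
proof -
  obtain l1 l2 l3 where l: "l = (l1,l2,l3)" by (cases l) auto
  obtain m1 m2 m3 where m: "m = (m1,m2,m3)" by (cases m) auto
  obtain p1 p2 p3 where p: "p = (p1,p2,p3)" by (cases p) auto
  have A: "l1 * p1 + l2 * p2 + l3 * p3 = 0" "m1 * p1 + m2 * p2 + m3 * p3 = 0"
    using assms by (simp_all add: l m p lin_def)
  have 1: "p2 * (l1 * m2 - l2 * m1) - p3 * (l3 * m1 - l1 * m3) = l1 * (m1 * p1 + m2 * p2 + m3 * p3) - m1 * (l1 * p1 + l2 * p2 + l3 * p3)"
    by (simp add: algebra_simps)
  have 2: "p3 * (l2 * m3 - l3 * m2) - p1 * (l1 * m2 - l2 * m1) = l2 * (m1 * p1 + m2 * p2 + m3 * p3) - m2 * (l1 * p1 + l2 * p2 + l3 * p3)"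
    by (simp add: algebra_simps)
  have 3: "p1 * (l3 * m1 - l1 * m3) - p2 * (l2 * m3 - l3 * m2) = l3 * (m1 * p1 + m2 * p2 + m3 * p3) - m3 * (l1 * p1 + l2 * p2 + l3 * p3)"
    by (simp add: algebra_simps)
  show ?thesis using 1 2 3 A by (simp add: l m p ccross_def)
qed

lemma divhelp: fixes a b v w :: complex assumes "v \<noteq> 0" "a * w = b * v" shows "a / v * w = b"
proof -
  have "a / v * w = (a * w) / v" by simp
  also have "\<dots> = (b * v) / v" using assms(2) by simp
  also have "\<dots> = b" using assms(1) by simp
  finally show ?thesis .
qed

lemma par_mult: assumes "ccross p v = (0,0,0)" "v \<noteq> (0,0,0)" shows "\<exists>a. p = csmul a v"
proof -
  obtain p1 p2 p3 where p: "p = (p1,p2,p3)" by (cases p) auto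
  obtain v1 v2 v3 where v: "v = (v1,v2,v3)" by (cases v) auto
  have e: "p2 * v3 = p3 * v2" "p3 * v1 = p1 * v3" "p1 * v2 = p2 * v1" using assms(1)
    by (auto simp: p v ccross_def simp del: mult.commute)
  show ?thesis
  proof (cases "v1 \<noteq> 0")
    case True
    have "p1 / v1 * v1 = p1" "p1 / v1 * v2 = p2" "p1 / v1 * v3 = p3"
      using True divhelp[OF True e(3)] divhelp[OF True e(2)[symmetric]] by auto
    then have "p = csmul (p1/v1) v" by (simp add: p v csmul_def)
    then show ?thesis by blast
  next
    case f1: False
    show ?thesis
    proof (cases "v2 \<noteq> 0")
      case True
      have "p2 / v2 * v1 = p1" "p2 / v2 * v2 = p2" "p2 / v2 * v3 = p3"
        using True divhelp[OF True e(3)[symmetric]] divhelp[OF True e(1)] by auto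
      then have "p = csmul (p2/v2) v" by (simp add: p v csmul_def)
      then show ?thesis by blast
    next
      case False
      then have t: "v3 \<noteq> 0" using f1 assms(2) v by auto
      have "p3 / v3 * v1 = p1" "p3 / v3 * v2 = p2" "p3 / v3 * v3 = p3"
        using t divhelp[OF t e(2)] divhelp[OF t e(1)[symmetric]] by auto
      then have "p = csmul (p3/v3) v" by (simp add: p v csmul_def)
      then show ?thesis by blast
    qed
  qed
qed

lemma par_trans: assumes "ccross p v = (0,0,0)" "v \<noteq> (0,0,0)" "ccross v w = (0,0,0)" "w \<noteq> (0,0,0)"
  shows "\<exists>c. p = csmul c w"
proof -
  obtain a where a: "p = csmul a v" using par_mult[OF assms(1,2)] by blast
  have "ccross w v = (0,0,0)" using assms(3) by (cases v; cases w) (auto simp: ccross_def algebra_simps mult_ac)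
  then obtain b where b: "w = csmul b v" using par_mult[OF _ assms(2)] by blast
  have "b \<noteq> 0" using b assms(4) by (cases v) (auto simp: csmul_def)
  have "p = csmul (a/b) w" using a b \<open>b \<noteq> 0\<close> by (cases v) (simp add: csmul_def)
  then show ?thesis by blast
qed

lemma filter2: "2 \<le> length (filter P xs) \<Longrightarrow> \<exists>i j. i < j \<and> j < length xs \<and> P (xs ! i) \<and> P (xs ! j)"
proof (induction xs)
  case Nil then show ?case by simp
next
  case (Cons x xs)
  show ?case
  proof (cases "P x")
    case True
    then have "filter P xs \<noteq> []" using Cons.prems by auto
    then obtain y where "y \<in> set xs" "P y" by (metis filter_False)
    then obtain j where "j < length xs" "xs ! j = y" by (metis in_set_conv_nth)
    then show ?thesis using True \<open>P y\<close> by (intro exI[of _ 0] exI[of _ "Suc j"]) auto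
  next
    case False
    then obtain i j where "i < j \<and> j < length xs \<and> P (xs ! i) \<and> P (xs ! j)" using Cons by auto
    then show ?thesis by (intro exI[of _ "Suc i"] exI[of _ "Suc j"]) auto
  qed
qed

definition gmult :: "(gi \<times> gi \<times> gi) list \<Rightarrow> gi \<times> gi \<times> gi \<Rightarrow> nat" where
  "gmult L q = length (filter (\<lambda>l. glin l q = (0,0)) L)"

lemma mult_at_toC3: assumes "e * e = -1" shows "mult_at (map (toC3 e) L) (toC3 e q) = gmult L q"
  unfolding mult_at_def gmult_def
  by (simp add: filter_map comp_def toC3_lin[OF assms] toC_eq0[OF assms])

lemma lin_csmul: "lin l (csmul c q) = c * lin l q"
  by (cases l; cases q) (simp add: lin_def csmul_def algebra_simps)

lemma mult_at_csmul: "c \<noteq> 0 \<Longrightarrow> mult_at L (csmul c q) = mult_at L q"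
  unfolding mult_at_def by (simp add: lin_csmul)

definition comb_check :: "(gi \<times> gi \<times> gi) list \<Rightarrow> (gi \<times> gi \<times> gi) list \<Rightarrow> bool" where
  "comb_check L Q \<longleftrightarrow>
     list_all (\<lambda>i. list_all (\<lambda>j. i < j \<longrightarrow> gcross (L!i) (L!j) \<noteq> zero3 \<and>
        list_ex (\<lambda>q. gcross (gcross (L!i) (L!j)) q = zero3) Q) [0..<length L]) [0..<length L]
   \<and> list_all (\<lambda>q. q \<noteq> zero3 \<and> 2 \<le> gmult L q) Q
   \<and> list_all (\<lambda>q1. list_all (\<lambda>q2. q1 \<noteq> q2 \<longrightarrow> gcross q1 q2 \<noteq> zero3) Q) Q
   \<and> distinct Q"

lemma proj_pt_self: "p \<in> proj_pt p"
  unfolding proj_pt_def by (cases p) (auto intro: exI[of _ 1])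

lemma proj_pt_csmul: assumes "c \<noteq> 0" shows "proj_pt (csmul c q) = proj_pt q"
proof -
  obtain a b d where q: "q = (a,b,d)" by (cases q) auto
  have 1: "\<exists>k'. (k * (c * a), k * (c * b), k * (c * d)) = (k' * a, k' * b, k' * d)" for k
    by (rule exI[of _ "k * c"]) simp
  have 2: "\<exists>k'. (k * a, k * b, k * d) = (k' * (c * a), k' * (c * b), k' * (c * d))" for k
    by (rule exI[of _ "k / c"]) (simp add: assms)
  show ?thesis unfolding proj_pt_def csmul_def q prod.case
    using 1 2 by blast
qed

lemma proj_pt_eq: assumes "proj_pt p = proj_pt q" shows "\<exists>c. p = csmul c q"
proof -
  have "p \<in> proj_pt q" using assms proj_pt_self by blast
  then show ?thesis unfolding proj_pt_def csmul_def by (cases q) auto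
qed

lemma n_pts_eq:
  assumes he: "e * e = -1" and chk: "comb_check L Q" and i2: "2 \<le> i"
  shows "n_pts (map (toC3 e) L) i = length (filter (\<lambda>q. gmult L q = i) Q)"
proof -
  let ?L = "map (toC3 e) L"
  have c1: "\<And>i j. i < j \<Longrightarrow> j < length L \<Longrightarrow> gcross (L!i) (L!j) \<noteq> zero3 \<and> (\<exists>q\<in>set Q. gcross (gcross (L!i) (L!j)) q = zero3)"
    using chk unfolding comb_check_def list_all_iff list_ex_iff by auto
  have c2: "\<And>q. q \<in> set Q \<Longrightarrow> q \<noteq> zero3 \<and> 2 \<le> gmult L q"
    using chk unfolding comb_check_def list_all_iff by auto
  have c3: "\<And>q1 q2. q1 \<in> set Q \<Longrightarrow> q2 \<in> set Q \<Longrightarrow> q1 \<noteq> q2 \<Longrightarrow> gcross q1 q2 \<noteq> zero3"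
    using chk unfolding comb_check_def list_all_iff by auto
  have c4: "distinct Q" using chk unfolding comb_check_def by auto
  have rep: "\<exists>q\<in>set Q. \<exists>c. c \<noteq> 0 \<and> p = csmul c (toC3 e q)" if p0: "p \<noteq> (0,0,0)" and m2: "2 \<le> mult_at ?L p" for p
  proof -
    obtain a b where ab: "a < b" "b < length ?L" "lin (?L!a) p = 0" "lin (?L!b) p = 0"
      using filter2[of "\<lambda>l. lin l p = 0" ?L] m2 unfolding mult_at_def by auto
    have bL: "b < length L" using ab by simp
    obtain q where q: "q \<in> set Q" "gcross (gcross (L!a) (L!b)) q = zero3" and nzc: "gcross (L!a) (L!b) \<noteq> zero3"
      using c1[OF ab(1) bL] by blast
    let ?v = "toC3 e (gcross (L!a) (L!b))"
    have "ccross p (ccross (?L!a) (?L!b)) = (0,0,0)" by (rule cross_two_lines[OF ab(3,4)])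
    then have 1: "ccross p ?v = (0,0,0)" using ab bL by (simp add: toC3_cross[OF he])
    have 2: "?v \<noteq> (0,0,0)" using nzc toC3_zero[OF he] by simp
    have "toC3 e (gcross (gcross (L!a) (L!b)) q) = (0,0,0)" using q(2) toC3_zero[OF he] by simp
    then have 3: "ccross ?v (toC3 e q) = (0,0,0)" by (simp add: toC3_cross[OF he])
    have 4: "toC3 e q \<noteq> (0,0,0)" using c2[OF q(1)] toC3_zero[OF he] by simp
    obtain c where c: "p = csmul c (toC3 e q)" using par_trans[OF 1 2 3 4] by blast
    have "c \<noteq> 0" using c p0 by (cases "toC3 e q") (auto simp: csmul_def)
    then show ?thesis using q(1) c by blast
  qed
  have seteq: "{proj_pt p | p. p \<noteq> (0, 0, 0) \<and> mult_at ?L p = i} = (\<lambda>q. proj_pt (toC3 e q)) ` {q \<in> set Q. gmult L q = i}"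
  proof (intro equalityI subsetI)
    fix X assume "X \<in> {proj_pt p | p. p \<noteq> (0, 0, 0) \<and> mult_at ?L p = i}"
    then obtain p where p: "X = proj_pt p" "p \<noteq> (0,0,0)" "mult_at ?L p = i" by blast
    have "2 \<le> mult_at ?L p" using p(3) i2 by simp
    then obtain q c where qc: "q \<in> set Q" "c \<noteq> 0" "p = csmul c (toC3 e q)" using rep[OF p(2)] by blast
    have "gmult L q = i" using p(3) qc(3) mult_at_csmul[OF qc(2)] mult_at_toC3[OF he] by simp
    moreover have "X = proj_pt (toC3 e q)" using p(1) qc proj_pt_csmul by simp
    ultimately show "X \<in> (\<lambda>q. proj_pt (toC3 e q)) ` {q \<in> set Q. gmult L q = i}" using qc(1) by blast
  next
    fix X assume "X \<in> (\<lambda>q. proj_pt (toC3 e q)) ` {q \<in> set Q. gmult L q = i}"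
    then obtain q where q: "q \<in> set Q" "gmult L q = i" "X = proj_pt (toC3 e q)" by blast
    have "toC3 e q \<noteq> (0,0,0)" using c2[OF q(1)] toC3_zero[OF he] by simp
    moreover have "mult_at ?L (toC3 e q) = i" using q(2) mult_at_toC3[OF he] by simp
    ultimately show "X \<in> {proj_pt p | p. p \<noteq> (0, 0, 0) \<and> mult_at ?L p = i}" using q(3) by blast
  qed
  have inj: "inj_on (\<lambda>q. proj_pt (toC3 e q)) {q \<in> set Q. gmult L q = i}"
  proof (rule inj_onI)
    fix q1 q2 assume q1: "q1 \<in> {q \<in> set Q. gmult L q = i}" and q2: "q2 \<in> {q \<in> set Q. gmult L q = i}"
      and eq: "proj_pt (toC3 e q1) = proj_pt (toC3 e q2)"
    show "q1 = q2"
    proof (rule ccontr)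
      assume ne: "q1 \<noteq> q2"
      obtain c where c: "toC3 e q1 = csmul c (toC3 e q2)" using proj_pt_eq[OF eq] by blast
      have "ccross (toC3 e q1) (toC3 e q2) = (0,0,0)" using c
        by (cases "toC3 e q2") (simp add: csmul_def ccross_def algebra_simps)
      then have "toC3 e (gcross q1 q2) = (0,0,0)" by (simp add: toC3_cross[OF he])
      then have "gcross q1 q2 = zero3" using toC3_zero[OF he] by simp
      then show False using c3 q1 q2 ne by blast
    qed
  qed
  have "n_pts ?L i = card ((\<lambda>q. proj_pt (toC3 e q)) ` {q \<in> set Q. gmult L q = i})"
    unfolding n_pts_def seteq ..
  also have "\<dots> = card {q \<in> set Q. gmult L q = i}" by (rule card_image[OF inj])
  also have "\<dots> = length (filter (\<lambda>q. gmult L q = i) Q)"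
    using c4 by (simp add: distinct_length_filter Collect_conj_eq Int_commute)
  finally show ?thesis .
qed

definition la_check :: "(gi \<times> gi \<times> gi) list \<Rightarrow> bool" where
  "la_check L \<longleftrightarrow> list_all (\<lambda>l. l \<noteq> zero3) L \<and>
     list_all (\<lambda>i. list_all (\<lambda>j. i \<noteq> j \<longrightarrow> gcross (L!i) (L!j) \<noteq> zero3) [0..<length L]) [0..<length L]"

lemma proportional_csmul: "proportional l m \<Longrightarrow> \<exists>c. m = csmul c l"
  by (cases l) (auto simp: proportional_def csmul_def)

lemma la_ok: assumes he: "e * e = -1" and chk: "la_check L" shows "line_arrangement (map (toC3 e) L)"
  unfolding line_arrangement_def
proof (intro conjI ballI allI impI)
  fix l assume "l \<in> set (map (toC3 e) L)"
  then obtain g where "g \<in> set L" "l = toC3 e g" by auto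
  then show "l \<noteq> (0,0,0)" using chk toC3_zero[OF he] unfolding la_check_def list_all_iff by auto
next
  fix i j assume ij: "i < length (map (toC3 e) L)" "j < length (map (toC3 e) L)" "i \<noteq> j"
  show "\<not> proportional (map (toC3 e) L ! i) (map (toC3 e) L ! j)"
  proof
    assume "proportional (map (toC3 e) L ! i) (map (toC3 e) L ! j)"
    then have "proportional (toC3 e (L!i)) (toC3 e (L!j))" using ij by simp
    then obtain c where c: "toC3 e (L!j) = csmul c (toC3 e (L!i))"
      using proportional_csmul by blast
    have "ccross (toC3 e (L!i)) (toC3 e (L!j)) = (0,0,0)" using c
      by (cases "toC3 e (L!i)") (simp add: csmul_def ccross_def algebra_simps)
    then have "toC3 e (gcross (L!i) (L!j)) = (0,0,0)" by (simp add: toC3_cross[OF he])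
    then have "gcross (L!i) (L!j) = zero3" using toC3_zero[OF he] by simp
    then show False using chk ij unfolding la_check_def list_all_iff by auto
  qed
qed


definition pv0 :: "gi list" where "pv0 = [(1, 0), (0, 0), (0, 0), (0, 0), (0, 0), (0, 0), (0, 0), (0, 0), (0, 0), (0, 0), (0, 0), (0, 0), (0, 0), (0, 0), (0, 0), (0, 0), (0, 0), (0, 0), (0, 0), (0, 0), (0, 0), (0, 0), (0, 0), (0, 0), (0, 0), (0, 0), (0, 0), (0, 0), (0, 0), (0, 0), (0, 0), (0, 0), (0, 0), (0, 0), (0, 0), (0, 0), (0, 0), (0, 0), (0, 0), (0, 0), (0, 0), (0, 0), (0, 0), (0, 0), (0, 0)]"
definition pv1 :: "gi list" where "pv1 = [(0, 0), (0, 0), (0, 0), (0, 0), (-1, 0), (0, 0), (0, 0), (0, 0), (0, 0), (0, 0), (0, 0), (0, 0), (0, 0), (0, 0), (0, 0), (0, 0), (0, 0), (0, 0), (0, 0), (0, 0), (0, 0), (0, 0), (0, 0), (0, 0), (0, 0), (0, 0), (0, 0), (0, 0), (0, 0), (0, 0), (0, 0), (0, 0), (0, 0), (0, 0), (0, 0), (0, 0), (0, 0), (0, 0), (0, 0), (0, 0), (0, 0), (0, 0), (0, 0), (0, 0), (0, 0)]"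
definition pv2 :: "gi list" where "pv2 = [(0, 0), (0, 0), (0, 0), (0, 0), (0, 0), (0, 0), (0, 0), (0, 0), (0, 0), (0, 0), (0, 0), (0, 0), (0, 0), (0, 0), (0, 0), (1, 0), (0, 0), (0, 0), (0, 0), (0, 0), (0, 0), (0, 0), (0, 0), (0, 0), (0, 0), (0, 0), (0, 0), (0, 0), (0, 0), (0, 0), (0, 0), (0, 0), (0, 0), (0, 0), (0, 0), (0, 0), (0, 0), (0, 0), (0, 0), (0, 0), (0, 0), (0, 0), (0, 0), (0, 0), (0, 0)]"
definition pv3 :: "gi list" where "pv3 = [(0, 0), (0, 0), (0, 0), (0, 0), (0, 0), (0, 0), (0, 0), (0, 0), (0, 0), (0, 0), (0, 0), (0, 0), (0, 0), (0, 0), (0, 0), (0, 0), (0, 0), (0, 0), (0, 0), (0, 0), (0, 0), (0, 0), (0, 0), (0, 0), (0, 0), (0, 0), (0, 0), (0, 0), (0, 0), (0, 0), (0, 0), (0, 0), (0, 0), (0, 0), (-1, 0), (0, 0), (0, 0), (0, 0), (0, 0), (0, 0), (0, 0), (0, 0), (0, 0), (0, 0), (0, 0)]"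
definition pv4 :: "gi list" where "pv4 = [(0, 0), (0, 0), (0, 0), (0, 0), (0, 0), (0, 0), (0, 0), (0, 0), (0, 0), (0, 0), (0, 0), (0, 0), (0, 0), (0, 0), (0, 0), (0, 0), (0, 0), (0, 0), (0, 0), (0, 0), (0, 0), (0, 0), (0, 0), (0, 0), (0, 0), (0, 0), (0, 0), (0, 0), (0, 0), (-1, 0), (0, 0), (0, 0), (0, 0), (0, 0), (0, 0), (0, 0), (0, 0), (0, 0), (0, 0), (0, 0), (0, 0), (0, 0), (0, 0), (0, 0), (0, 0)]"
definition pv5 :: "gi list" where "pv5 = [(0, 0), (0, 0), (0, 0), (0, 0), (0, 0), (0, 0), (0, 0), (0, 0), (0, 0), (0, 0), (0, 0), (0, 0), (0, 0), (0, 0), (0, 0), (0, 0), (0, 0), (0, 0), (0, 0), (0, 0), (0, 0), (0, 0), (0, 0), (0, 0), (0, 0), (0, 0), (0, 0), (0, 0), (0, 0), (0, 0), (0, 0), (0, 0), (0, 0), (0, 0), (0, 0), (0, 0), (0, 0), (0, 0), (0, 0), (0, 0), (0, 0), (0, 0), (0, 0), (0, 0), (1, 0)]"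
definition pv6 :: "gi list" where "pv6 = [(0, 0), (1, 0), (0, 0), (0, 0), (0, 0), (0, 0), (0, 0), (0, 0), (0, 0), (0, 0), (0, 0), (0, 0), (0, 0), (0, 0), (0, 0), (0, 0), (0, 0), (0, 0), (0, 0), (0, 0), (0, 0), (0, 0), (0, 0), (0, 0), (0, 0), (0, 0), (0, 0), (0, 0), (0, 0), (0, 0), (0, 0), (0, 0), (0, 0), (0, 0), (0, 0), (0, 0), (0, 0), (0, 0), (0, 0), (0, 0), (0, 0), (0, 0), (0, 0), (0, 0), (0, 0)]"
definition pv7 :: "gi list" where "pv7 = [(0, 0), (0, 0), (0, 0), (-1, 0), (0, 0), (0, 0), (0, 0), (0, 0), (0, 0), (0, 0), (0, 0), (0, 0), (0, 0), (0, 0), (0, 0), (0, 0), (0, 0), (0, 0), (0, 0), (0, 0), (0, 0), (0, 0), (0, 0), (0, 0), (0, 0), (0, 0), (0, 0), (0, 0), (0, 0), (0, 0), (0, 0), (0, 0), (0, 0), (0, 0), (0, 0), (0, 0), (0, 0), (0, 0), (0, 0), (0, 0), (0, 0), (0, 0), (0, 0), (0, 0), (0, 0)]"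
definition pv8 :: "gi list" where "pv8 = [(0, 0), (0, 0), (0, 0), (0, 0), (0, 0), (0, 0), (0, 0), (0, 0), (0, 0), (0, 0), (0, 0), (0, 0), (0, 0), (0, 0), (0, 0), (0, 0), (0, 0), (0, 0), (0, 0), (0, 0), (1, 0), (0, 0), (0, 0), (0, 0), (0, 0), (0, 0), (0, 0), (0, 0), (0, 0), (0, 0), (0, 0), (0, 0), (0, 0), (0, 0), (0, 0), (0, 0), (0, 0), (0, 0), (0, 0), (0, 0), (0, 0), (0, 0), (0, 0), (0, 0), (0, 0)]"
definition pv9 :: "gi list" where "pv9 = [(0, 0), (0, 0), (0, 0), (0, 0), (0, 0), (0, 0), (0, 0), (0, 0), (0, 0), (0, 0), (0, 0), (0, 0), (0, 0), (0, 0), (0, 0), (0, 0), (0, 0), (0, 0), (0, 0), (0, 0), (0, 0), (0, 0), (0, 0), (0, 0), (0, 0), (0, 0), (0, 0), (0, 0), (0, 0), (0, 0), (0, 0), (0, 0), (0, 0), (0, 0), (0, 0), (0, 0), (0, 0), (0, 0), (-1, 0), (0, 0), (0, 0), (0, 0), (0, 0), (0, 0), (0, 0)]"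
definition pv10 :: "gi list" where "pv10 = [(0, 0), (0, 0), (0, 0), (0, 0), (0, 0), (0, 0), (0, 0), (0, 0), (0, 0), (0, 0), (0, 0), (0, 0), (0, 0), (0, 0), (0, 0), (0, 0), (0, 0), (0, 0), (0, 0), (0, 0), (0, 0), (0, 0), (0, 0), (0, 0), (0, 0), (0, 0), (0, 0), (-1, 0), (0, 0), (0, 0), (0, 0), (0, 0), (0, 0), (0, 0), (0, 0), (0, 0), (0, 0), (0, 0), (0, 0), (0, 0), (0, 0), (0, 0), (0, 0), (0, 0), (0, 0)]"
definition pv11 :: "gi list" where "pv11 = [(0, 0), (0, 0), (0, 0), (0, 0), (0, 0), (0, 0), (0, 0), (0, 0), (0, 0), (0, 0), (0, 0), (0, 0), (0, 0), (0, 0), (0, 0), (0, 0), (0, 0), (0, 0), (0, 0), (0, 0), (0, 0), (0, 0), (0, 0), (0, 0), (0, 0), (0, 0), (0, 0), (0, 0), (0, 0), (0, 0), (0, 0), (0, 0), (0, 0), (0, 0), (0, 0), (0, 0), (0, 0), (0, 0), (0, 0), (0, 0), (0, 0), (0, 0), (0, 0), (1, 0), (0, 0)]"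
definition pv12 :: "gi list" where "pv12 = [(0, 0), (0, 0), (1, 0), (0, 0), (0, 0), (0, 0), (0, 0), (0, 0), (0, 0), (0, 0), (0, 0), (0, 0), (0, 0), (0, 0), (0, 0), (0, 0), (0, 0), (0, 0), (0, 0), (0, 0), (0, 0), (0, 0), (0, 0), (0, 0), (0, 0), (0, 0), (0, 0), (0, 0), (0, 0), (0, 0), (0, 0), (0, 0), (0, 0), (0, 0), (0, 0), (0, 0), (0, 0), (0, 0), (0, 0), (0, 0), (0, 0), (0, 0), (0, 0), (0, 0), (0, 0)]"
definition pv13 :: "gi list" where "pv13 = [(0, 0), (0, 0), (0, 0), (0, 0), (0, 0), (0, 0), (0, 0), (0, 0), (0, 0), (0, 0), (0, 0), (0, 0), (0, 0), (0, 0), (0, 0), (0, 0), (0, 0), (0, 0), (0, 0), (0, 0), (0, 0), (0, 0), (0, 0), (0, 0), (1, 0), (0, 0), (0, 0), (0, 0), (0, 0), (0, 0), (0, 0), (0, 0), (0, 0), (0, 0), (0, 0), (0, 0), (0, 0), (0, 0), (0, 0), (0, 0), (0, 0), (0, 0), (0, 0), (0, 0), (0, 0)]"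
definition pv14 :: "gi list" where "pv14 = [(0, 0), (0, 0), (0, 0), (0, 0), (0, 0), (0, 0), (0, 0), (0, 0), (0, 0), (0, 0), (0, 0), (0, 0), (0, 0), (0, 0), (0, 0), (0, 0), (0, 0), (0, 0), (0, 0), (0, 0), (0, 0), (0, 0), (0, 0), (0, 0), (0, 0), (0, 0), (0, 0), (0, 0), (0, 0), (0, 0), (0, 0), (0, 0), (0, 0), (0, 0), (0, 0), (0, 0), (0, 0), (0, 0), (0, 0), (0, 0), (0, 0), (-1, 0), (0, 0), (0, 0), (0, 0)]"
definition pv15 :: "gi list" where "pv15 = [(0, 0), (0, 0), (0, 0), (0, 0), (0, 0), (1, 0), (0, 0), (0, 0), (0, 0), (0, 0), (0, 0), (0, 0), (0, 0), (0, 0), (0, 0), (0, 0), (2, 0), (0, 0), (0, 0), (0, 0), (0, 0), (0, 0), (0, 0), (0, 0), (0, 0), (0, 0), (0, 0), (0, 0), (0, 0), (0, 0), (6, 0), (0, 0), (0, 0), (0, 0), (0, 0), (0, 0), (0, 0), (0, 0), (0, 0), (0, 0), (0, 0), (0, 0), (0, 0), (0, 0), (0, 0)]"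
definition pv16 :: "gi list" where "pv16 = [(0, 0), (0, 0), (0, 0), (0, 0), (0, 0), (0, 0), (0, 0), (0, 0), (0, 0), (0, 0), (0, 0), (0, 0), (0, 0), (0, 0), (0, 0), (0, 0), (-1, 0), (0, 0), (0, 0), (0, 0), (0, 0), (0, 0), (0, 0), (0, 0), (0, 0), (0, 0), (0, 0), (0, 0), (0, 0), (0, 0), (-2, 0), (0, 0), (0, 0), (0, 0), (0, 0), (0, 0), (0, 0), (0, 0), (0, 0), (0, 0), (0, 0), (0, 0), (0, 0), (0, 0), (0, 0)]"
definition pv17 :: "gi list" where "pv17 = [(0, 0), (0, 0), (0, 0), (0, 0), (0, 0), (0, 0), (0, 0), (0, 0), (-1, 0), (0, 0), (0, 0), (0, 0), (0, 0), (0, 0), (0, 0), (0, 0), (0, 0), (0, 0), (0, 0), (-6, 0), (0, 0), (0, 0), (0, 0), (0, 0), (0, 0), (0, 0), (0, 0), (0, 0), (0, 0), (0, 0), (0, 0), (0, 0), (0, 0), (-2, 0), (0, 0), (0, 0), (0, 0), (0, 0), (0, 0), (0, 0), (0, 0), (0, 0), (0, 0), (0, 0), (0, 0)]"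
definition pv18 :: "gi list" where "pv18 = [(0, 0), (0, 0), (0, 0), (0, 0), (0, 0), (0, 0), (0, 0), (0, 0), (0, 0), (0, 0), (0, 0), (0, 0), (0, 0), (0, 0), (0, 0), (0, 0), (0, 0), (0, 0), (0, 0), (2, 0), (0, 0), (0, 0), (0, 0), (0, 0), (0, 0), (0, 0), (0, 0), (0, 0), (0, 0), (0, 0), (0, 0), (0, 0), (0, 0), (1, 0), (0, 0), (0, 0), (0, 0), (0, 0), (0, 0), (0, 0), (0, 0), (0, 0), (0, 0), (0, 0), (0, 0)]"
definition pv19 :: "gi list" where "pv19 = [(0, 0), (0, 0), (0, 0), (0, 0), (0, 0), (0, 0), (0, 0), (0, 0), (0, 0), (0, 0), (0, 0), (0, 0), (0, 0), (0, 0), (-6, 0), (0, 0), (0, 0), (0, 0), (0, 0), (0, 0), (0, 0), (0, 0), (0, 0), (0, 0), (0, 0), (0, 0), (0, 0), (0, 0), (-1, 0), (0, 0), (0, 0), (0, 0), (0, 0), (0, 0), (0, 0), (0, 0), (0, 0), (0, 0), (0, 0), (0, 0), (0, 0), (0, 0), (-2, 0), (0, 0), (0, 0)]"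
definition pv20 :: "gi list" where "pv20 = [(0, 0), (0, 0), (0, 0), (0, 0), (0, 0), (0, 0), (0, 0), (0, 0), (0, 0), (0, 0), (0, 0), (0, 0), (0, 0), (0, 0), (-2, 0), (0, 0), (0, 0), (0, 0), (0, 0), (0, 0), (0, 0), (0, 0), (0, 0), (0, 0), (0, 0), (0, 0), (0, 0), (0, 0), (0, 0), (0, 0), (0, 0), (0, 0), (0, 0), (0, 0), (0, 0), (0, 0), (0, 0), (0, 0), (0, 0), (0, 0), (0, 0), (0, 0), (-1, 0), (0, 0), (0, 0)]"
definition pv21 :: "gi list" where "pv21 = [(0, 0), (0, 0), (0, 0), (0, 0), (0, 0), (0, 0), (1, 0), (0, 0), (0, 0), (0, 0), (0, 0), (0, 0), (0, 0), (0, 0), (0, 0), (0, 0), (0, 0), (2, 0), (0, 0), (0, 0), (0, 0), (0, 0), (0, 0), (0, 0), (0, 0), (0, 0), (0, 0), (0, 0), (0, 0), (0, 0), (6, 6), (6, 0), (0, 0), (0, 0), (0, 0), (0, 0), (0, 0), (0, 0), (0, 0), (0, 0), (0, 0), (0, 0), (0, 0), (0, 0), (0, 0)]"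
definition pv22 :: "gi list" where "pv22 = [(0, 0), (0, 0), (0, 0), (0, 0), (0, 0), (0, 0), (0, 0), (-1, 0), (0, 0), (0, 0), (0, 0), (0, 0), (0, 0), (0, 0), (0, 0), (0, 0), (0, 0), (0, 0), (-6, 0), (-6, 6), (0, 0), (0, 0), (0, 0), (0, 0), (0, 0), (0, 0), (0, 0), (0, 0), (0, 0), (0, 0), (0, 0), (0, 0), (-2, 0), (0, 0), (0, 0), (0, 0), (0, 0), (0, 0), (0, 0), (0, 0), (0, 0), (0, 0), (0, 0), (0, 0), (0, 0)]"
definition pv23 :: "gi list" where "pv23 = [(0, 0), (0, 0), (0, 0), (0, 0), (0, 0), (0, 0), (0, 0), (0, 0), (0, 0), (0, 0), (0, 0), (0, 0), (-6, 0), (0, 0), (6, 6), (0, 0), (0, 0), (0, 0), (0, 0), (0, 0), (0, 0), (0, 0), (0, 0), (0, 0), (0, 0), (-1, 0), (0, 0), (0, 0), (0, 0), (0, 0), (0, 0), (0, 0), (0, 0), (0, 0), (0, 0), (0, 0), (0, 0), (0, 0), (0, 0), (-2, 0), (0, 0), (0, 0), (0, 0), (0, 0), (0, 0)]"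
definition pv24 :: "gi list" where "pv24 = [(0, 0), (0, 0), (0, 0), (0, 0), (0, 0), (0, 0), (0, 0), (0, 0), (0, 0), (-6, 0), (0, 0), (0, 0), (2, 2), (0, 0), (0, 0), (0, 0), (0, 0), (0, 0), (0, 0), (0, 0), (0, 0), (-1, 0), (0, 0), (0, 0), (0, 0), (0, 0), (0, 0), (0, 0), (0, 0), (0, 0), (0, 0), (0, 0), (0, 0), (0, 0), (0, 0), (-2, 0), (0, 0), (0, 0), (0, 0), (-2, -2), (0, 0), (0, 0), (0, 0), (0, 0), (0, 0)]"
definition pv25 :: "gi list" where "pv25 = [(0, 0), (0, 0), (0, 0), (0, 0), (0, 0), (0, 0), (0, 0), (1, 0), (0, 0), (0, 0), (0, 0), (0, 0), (0, 0), (0, 0), (0, 0), (0, 0), (0, 0), (-2, -2), (2, 0), (0, 0), (0, 0), (0, 0), (0, 0), (0, 0), (0, 0), (0, 0), (0, 0), (0, 0), (0, 0), (0, 0), (0, 0), (2, 2), (6, 0), (0, 0), (0, 0), (0, 0), (0, 0), (0, 0), (0, 0), (0, 0), (0, 0), (0, 0), (0, 0), (0, 0), (0, 0)]"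
definition pv26 :: "gi list" where "pv26 = [(0, 0), (0, 0), (0, 0), (0, 0), (0, 0), (0, 0), (-1, 0), (0, 0), (0, 0), (0, 0), (0, 0), (0, 0), (0, 0), (0, 0), (0, 0), (0, 0), (0, 0), (-6, 0), (-2, 2), (0, 0), (0, 0), (0, 0), (0, 0), (0, 0), (0, 0), (0, 0), (0, 0), (0, 0), (0, 0), (0, 0), (0, 0), (-2, 0), (2, -2), (0, 0), (0, 0), (0, 0), (0, 0), (0, 0), (0, 0), (0, 0), (0, 0), (0, 0), (0, 0), (0, 0), (0, 0)]"
definition pv27 :: "gi list" where "pv27 = [(0, 0), (0, 0), (0, 0), (0, 0), (0, 0), (0, 0), (0, 0), (0, 0), (0, 0), (0, 0), (0, 0), (0, 0), (0, -6), (-6, 0), (0, 0), (0, 0), (0, 0), (0, 0), (0, 0), (0, 0), (0, 0), (0, 0), (0, 0), (0, 0), (0, 0), (1, -1), (-1, 0), (0, 0), (0, 0), (0, 0), (0, 0), (0, 0), (0, 0), (0, 0), (0, 0), (0, 0), (0, 0), (0, 0), (0, 0), (-1, -2), (-2, 0), (0, 0), (0, 0), (0, 0), (0, 0)]"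
definition pv28 :: "gi list" where "pv28 = [(0, 0), (0, 0), (0, 0), (0, 0), (0, 0), (0, 0), (0, 0), (0, 0), (0, 0), (0, 0), (0, 0), (0, 0), (0, -6), (-6, 0), (0, 0), (0, 0), (0, 0), (0, 0), (0, 0), (0, 0), (0, 0), (0, 0), (0, 0), (0, 0), (0, 0), (2, -1), (0, 0), (0, 0), (0, 0), (0, 0), (0, 0), (0, 0), (0, 0), (0, 0), (0, 0), (0, 0), (0, 0), (0, 0), (0, 0), (-2, -2), (-3, 0), (0, 0), (0, 0), (0, 0), (0, 0)]"
definition pv29 :: "gi list" where "pv29 = [(0, 0), (0, 0), (0, 0), (0, 0), (0, 0), (0, 0), (0, 0), (0, 0), (0, 0), (0, 0), (0, 0), (18, 0), (-12, -12), (-18, 18), (0, 0), (0, 0), (0, 0), (0, 0), (0, 0), (0, 0), (0, 0), (0, 0), (0, 0), (6, 0), (0, 0), (-4, 0), (0, 0), (0, 0), (0, 0), (0, 0), (0, 0), (0, 0), (0, 0), (0, 0), (0, 0), (0, 0), (0, 0), (3, 0), (0, 0), (-2, -6), (0, 0), (0, 0), (0, 0), (0, 0), (0, 0)]"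
definition pv30 :: "gi list" where "pv30 = [(0, 0), (0, 0), (0, 0), (0, 0), (0, 0), (0, 0), (0, 0), (0, 0), (0, 0), (-11, 0), (0, 0), (0, 0), (4, 4), (0, 0), (0, 0), (0, 0), (0, 0), (-7, 4), (0, 4), (0, 0), (0, 0), (0, 0), (0, 0), (0, 0), (0, 0), (0, 0), (0, 0), (0, 0), (0, 0), (0, 0), (0, 0), (-2, -4), (0, -4), (0, 0), (0, 0), (2, 0), (0, 0), (0, 0), (0, 0), (-4, -4), (0, 0), (0, 0), (0, 0), (0, 0), (0, 0)]"
definition pv31 :: "gi list" where "pv31 = [(0, 0), (0, 0), (0, 0), (0, 0), (0, 0), (0, 0), (0, 0), (0, 0), (0, 0), (9, 0), (0, 0), (0, 0), (-3, -3), (0, 0), (0, 0), (0, 0), (0, 0), (7, -2), (1, -3), (0, 0), (0, 0), (0, 0), (0, 0), (0, 0), (0, 0), (0, 0), (0, 0), (0, 0), (0, 0), (0, 0), (0, 0), (2, 2), (-1, 3), (0, 0), (0, 0), (0, 0), (0, 0), (0, 0), (0, 0), (3, 3), (0, 0), (0, 0), (0, 0), (0, 0), (0, 0)]"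
definition pv32 :: "gi list" where "pv32 = [(0, 0), (0, 0), (0, 0), (0, 0), (0, 0), (0, 0), (0, 0), (0, 0), (0, 0), (0, 0), (0, 0), (0, 0), (4, 0), (0, 0), (0, 0), (0, 0), (0, 0), (2, 2), (2, 0), (0, 0), (0, 0), (0, 0), (0, 0), (0, 0), (0, 0), (1, 0), (0, 0), (0, 0), (0, 0), (0, 0), (0, 0), (-2, -2), (-2, 0), (0, 0), (0, 0), (0, 0), (0, 0), (0, 0), (0, 0), (4, 0), (0, 0), (0, 0), (0, 0), (0, 0), (0, 0)]"
definition pv33 :: "gi list" where "pv33 = [(0, 0), (0, 0), (0, 0), (0, 0), (0, 0), (0, 0), (0, 0), (0, 0), (0, 0), (0, 0), (0, 0), (-1, 0), (0, 0), (0, 0), (0, 0), (0, 0), (0, 0), (0, -4), (2, -4), (0, 0), (0, 0), (0, 0), (0, 0), (-6, 0), (0, 0), (0, 0), (0, 0), (0, 0), (0, 0), (0, 0), (0, 0), (0, 4), (7, 4), (0, 0), (0, 0), (0, 0), (0, 0), (-2, 0), (0, 0), (0, 0), (0, 0), (0, 0), (0, 0), (0, 0), (0, 0)]"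
definition pv34 :: "gi list" where "pv34 = [(0, 0), (0, 0), (0, 0), (0, 0), (0, 0), (0, 0), (0, 0), (0, 0), (0, 0), (0, 0), (0, 0), (0, 0), (0, 0), (0, 0), (0, 0), (0, 0), (0, 0), (2, 6), (-4, 4), (0, 0), (0, 0), (0, 0), (0, 0), (6, 0), (0, 0), (0, 0), (0, 0), (0, 0), (0, 0), (0, 0), (0, 0), (-2, -6), (-14, -4), (0, 0), (0, 0), (0, 0), (0, 0), (3, 0), (0, 0), (0, 0), (0, 0), (0, 0), (0, 0), (0, 0), (0, 0)]"
definition pv35 :: "gi list" where "pv35 = [(0, 0), (0, 0), (0, 0), (0, 0), (0, 0), (0, 0), (0, 0), (0, 0), (0, 0), (0, 0), (0, 0), (0, 0), (0, 6), (0, 0), (0, 0), (0, 0), (0, 0), (14, 26), (-8, -30), (0, 0), (0, 0), (0, 0), (0, 0), (0, 0), (0, 0), (0, 0), (0, 0), (0, 0), (0, 0), (0, 0), (0, 0), (-14, -26), (-64, -42), (0, 0), (0, 0), (0, 0), (0, 0), (9, 9), (0, 0), (0, -6), (0, 0), (0, 0), (0, 0), (0, 0), (0, 0)]"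
definition pv36 :: "gi list" where "pv36 = [(0, 0), (0, 0), (0, 0), (0, 0), (0, 0), (0, 0), (0, 0), (0, 0), (0, 0), (0, 0), (1, 0), (0, 0), (0, -2), (0, 0), (0, 0), (0, 0), (0, 0), (-24, 0), (-11, 8), (0, 0), (0, 0), (0, 0), (2, 0), (0, 0), (0, 0), (0, 0), (0, 0), (0, 0), (0, 0), (0, 0), (0, 0), (-12, 0), (2, -8), (0, 0), (0, 0), (0, 0), (6, 0), (0, 0), (0, 0), (0, 2), (0, 0), (0, 0), (0, 0), (0, 0), (0, 0)]"
definition pv37 :: "gi list" where "pv37 = [(0, 0), (0, 0), (0, 0), (0, 0), (0, 0), (0, 0), (0, 0), (0, 0), (0, 0), (0, 0), (0, 0), (0, 0), (-83, 29), (0, 0), (0, 0), (0, 0), (0, 0), (510, 348), (223, -117), (0, 0), (0, 0), (0, 0), (0, 0), (0, 0), (0, 0), (0, 0), (0, 0), (0, 0), (0, 0), (0, 0), (0, 0), (246, 84), (-349, 45), (0, 0), (0, 0), (0, 0), (-126, -72), (0, 0), (0, 0), (-61, -101), (0, 0), (0, 0), (0, 0), (0, 0), (0, 0)]"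
definition pv38 :: "gi list" where "pv38 = [(0, 0), (0, 0), (0, 0), (0, 0), (0, 0), (0, 0), (0, 0), (0, 0), (0, 0), (0, 0), (0, 0), (0, 0), (0, 0), (0, 0), (0, 0), (0, 0), (0, 0), (-81324, -91372), (-5821, 19992), (0, 0), (0, 0), (0, 0), (-15460, 0), (0, 0), (0, 0), (0, 0), (0, 0), (0, 0), (0, 0), (0, 0), (0, 0), (-15471, -16628), (108916, -1992), (0, 0), (0, 0), (0, 0), (14200, 18000), (0, 0), (0, 0), (-288, 20016), (0, 0), (0, 0), (0, 0), (0, 0), (0, 0)]"
definition pv39 :: "gi list" where "pv39 = [(0, 0), (0, 0), (0, 0), (0, 0), (0, 0), (0, 0), (0, 0), (0, 0), (0, 0), (0, 0), (0, 0), (0, 0), (0, 0), (0, 0), (0, 0), (0, 0), (0, 0), (0, 0), (494124, -2008167), (0, 0), (0, 0), (0, 0), (134708, 416980), (0, 0), (0, 0), (0, 0), (0, 0), (0, 0), (0, 0), (0, 0), (0, 0), (1487016, 1895319), (1948152, -653232), (0, 0), (0, 0), (0, 0), (-49532, -263764), (0, 0), (0, 0), (572796, -103536), (0, 0), (0, 0), (0, 0), (0, 0), (0, 0)]"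
definition pv40 :: "gi list" where "pv40 = [(0, 0), (0, 0), (0, 0), (0, 0), (0, 0), (0, 0), (0, 0), (0, 0), (0, 0), (0, 0), (0, 0), (0, 0), (0, 0), (0, 0), (0, 0), (0, 0), (0, 0), (0, 0), (0, 0), (0, 0), (0, 0), (0, 0), (-13748377, -19087281), (0, 0), (0, 0), (0, 0), (0, 0), (0, 0), (0, 0), (0, 0), (0, 0), (155581839, -70942113), (117265833, -214494921), (0, 0), (0, 0), (0, 0), (-13018370, -8124570), (0, 0), (0, 0), (75189159, -88968483), (0, 0), (0, 0), (0, 0), (0, 0), (0, 0)]"
definition pv41 :: "gi list" where "pv41 = [(0, 0), (0, 0), (0, 0), (0, 0), (0, 0), (0, 0), (0, 0), (0, 0), (0, 0), (0, 0), (0, 0), (0, 0), (0, 0), (0, 0), (0, 0), (0, 0), (0, 0), (0, 0), (0, 0), (0, 0), (0, 0), (0, 0), (0, 0), (0, 0), (0, 0), (0, 0), (0, 0), (0, 0), (0, 0), (0, 0), (0, 0), (15730937, -4575085), (16621528, -5296498), (0, 0), (0, 0), (0, 0), (-4023329, 347719), (0, 0), (0, 0), (9929372, -2760986), (0, 0), (0, 0), (0, 0), (0, 0), (0, 0)]"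
definition pv42 :: "gi list" where "pv42 = [(0, 0), (0, 0), (0, 0), (0, 0), (0, 0), (0, 0), (0, 0), (0, 0), (0, 0), (0, 0), (0, 0), (0, 0), (0, 0), (0, 0), (0, 0), (0, 0), (0, 0), (0, 0), (0, 0), (0, 0), (0, 0), (0, 0), (0, 0), (0, 0), (0, 0), (0, 0), (0, 0), (0, 0), (0, 0), (0, 0), (0, 0), (0, 0), (-487420, -273660), (0, 0), (0, 0), (0, 0), (119341, -38225), (0, 0), (0, 0), (-220696, -18524), (0, 0), (0, 0), (0, 0), (0, 0), (0, 0)]"
definition pv43 :: "gi list" where "pv43 = [(0, 0), (0, 0), (0, 0), (0, 0), (0, 0), (0, 0), (0, 0), (0, 0), (0, 0), (0, 0), (0, 0), (0, 0), (0, 0), (0, 0), (0, 0), (0, 0), (0, 0), (0, 0), (0, 0), (0, 0), (0, 0), (0, 0), (0, 0), (0, 0), (0, 0), (0, 0), (0, 0), (0, 0), (0, 0), (0, 0), (0, 0), (0, 0), (0, 0), (0, 0), (0, 0), (0, 0), (-49, 72), (0, 0), (0, 0), (-498, 54), (0, 0), (0, 0), (0, 0), (0, 0), (0, 0)]"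
definition pv44 :: "gi list" where "pv44 = [(0, 0), (0, 0), (0, 0), (0, 0), (0, 0), (0, 0), (0, 0), (0, 0), (0, 0), (0, 0), (0, 0), (0, 0), (0, 0), (0, 0), (0, 0), (0, 0), (0, 0), (0, 0), (0, 0), (0, 0), (0, 0), (0, 0), (0, 0), (0, 0), (0, 0), (0, 0), (0, 0), (0, 0), (0, 0), (0, 0), (0, 0), (0, 0), (0, 0), (0, 0), (0, 0), (0, 0), (0, 0), (0, 0), (0, 0), (7, 5), (0, 0), (0, 0), (0, 0), (0, 0), (0, 0)]"


lemma no_syz4: assumes he: "e * e = -1" shows "\<not> syzygy (arr_poly (map (toC3 e) L2g)) 4 a b c"
proof
  assume syz: "syzygy (arr_poly (map (toC3 e) L2g)) 4 a b c"
  let ?L = "map (toC3 e) L2g"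
  have len: "length ?L = Suc 8" by (simp add: L2g_def)
  have ha: "hpoly 4 a" "hpoly 4 b" "hpoly 4 c"
    and nz: "a \<noteq> (\<lambda>_. 0) \<or> b \<noteq> (\<lambda>_. 0) \<or> c \<noteq> (\<lambda>_. 0)"
    and idt: "\<And>p. peval 4 a p * pdx (arr_poly ?L) p + peval 4 b p * pdy (arr_poly ?L) p + peval 4 c p * pdz (arr_poly ?L) p = 0"
    using syz unfolding syzygy_def by auto
  have pL: "polyL ?L = (\<lambda>t. toC e (GF t))" by (rule L2_eq[OF he])
  have FX: "pdx (arr_poly ?L) p = peval 8 (\<lambda>u. toC e (GX u)) p" for p
    using pdx_arr[OF len, of p] pL dxc_GX by simp
  have FY: "pdy (arr_poly ?L) p = peval 8 (\<lambda>u. toC e (GY u)) p" for p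
    using pdy_arr[OF len, of p] pL dyc_GY by simp
  have FZ: "pdz (arr_poly ?L) p = peval 8 (\<lambda>u. toC e (GZ u)) p" for p
    using pdz_arr[OF len, of p] pL dzc_GZ by simp
  have hL: "hpoly (Suc 8) (polyL ?L)" using hpoly_polyL[of ?L] len by simp
  have sX: "supp_in 8 (\<lambda>u. toC e (GX u))"
    using hpoly_supp[OF hpoly_dxc[OF hL]] pL dxc_GX by simp
  have sY: "supp_in 8 (\<lambda>u. toC e (GY u))"
    using hpoly_supp[OF hpoly_dyc[OF hL]] pL dyc_GY by simp
  have sZ: "supp_in 8 (\<lambda>u. toC e (GZ u))"
    using hpoly_supp[OF hpoly_dzc[OF hL]] pL dzc_GZ by simp
  have dt: "distinct (tri 4)" by (simp add: tri_def upt_rec)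
  have idt2: "\<And>p. peval 4 a p * peval 8 (\<lambda>u. toC e (GX u)) p + peval 4 b p * peval 8 (\<lambda>u. toC e (GY u)) p
     + peval 4 c p * peval 8 (\<lambda>u. toC e (GZ u)) p = 0"
  proof -
    fix p show "peval 4 a p * peval 8 (\<lambda>u. toC e (GX u)) p + peval 4 b p * peval 8 (\<lambda>u. toC e (GY u)) p
     + peval 4 c p * peval 8 (\<lambda>u. toC e (GZ u)) p = 0"
      using idt[of p] unfolding FX FY FZ .
  qed
  define U where "U = UV 4 a b c"
  have R: "\<And>t. t \<in> tbox 12 \<Longrightarrow> valr e (rowg 4 GX GY GZ t) U 0 = 0"
  proof -
    fix t :: "nat \<times> nat \<times> nat" assume "t \<in> tbox 12"
    then have "Scoef 4 a b c (\<lambda>u. toC e (GX u)) (\<lambda>u. toC e (GY u)) (\<lambda>u. toC e (GZ u)) t = 0"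
      using syz_coef_zero[OF ha sX sY sZ dt idt2, of t] by simp
    then show "valr e (rowg 4 GX GY GZ t) U 0 = 0" unfolding U_def valr_rowg .
  qed
  have P0: "length pv0 = 45 \<and> valr e pv0 U 0 = 0"
  proof (rule conjI)
    show "length pv0 = 45" by (simp add: pv0_def)
    show "valr e pv0 U 0 = 0"
    proof (rule cert_step[OF he, where n=45 and c="(1, 0)" and xs="[((1, 0), rowg 4 GX GY GZ (0,2,10))]"])
      show "\<forall>(g,r)\<in>set [((1, 0), rowg 4 GX GY GZ (0,2,10))]. length r = 45 \<and> valr e r U 0 = 0"
        using R  by (simp add: len_rowg tbox_def)
      show "lc [((1, 0), rowg 4 GX GY GZ (0,2,10))] = vsmul (1, 0) pv0"
        by (simp add: pv0_def  rowg_def tri_def upt_rec gshift_def GX_def GY_def GZ_def gdx_def gdy_def gdz_def GF_def GFl_def vadd_def vsmul_def)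
    qed simp_all
  qed
  have P1: "length pv1 = 45 \<and> valr e pv1 U 0 = 0"
  proof (rule conjI)
    show "length pv1 = 45" by (simp add: pv1_def)
    show "valr e pv1 U 0 = 0"
    proof (rule cert_step[OF he, where n=45 and c="(1, 0)" and xs="[((1, 0), rowg 4 GX GY GZ (0,10,2))]"])
      show "\<forall>(g,r)\<in>set [((1, 0), rowg 4 GX GY GZ (0,10,2))]. length r = 45 \<and> valr e r U 0 = 0"
        using R  by (simp add: len_rowg tbox_def)
      show "lc [((1, 0), rowg 4 GX GY GZ (0,10,2))] = vsmul (1, 0) pv1"
        by (simp add: pv1_def  rowg_def tri_def upt_rec gshift_def GX_def GY_def GZ_def gdx_def gdy_def gdz_def GF_def GFl_def vadd_def vsmul_def)
    qed simp_all
  qed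
  have P2: "length pv2 = 45 \<and> valr e pv2 U 0 = 0"
  proof (rule conjI)
    show "length pv2 = 45" by (simp add: pv2_def)
    show "valr e pv2 U 0 = 0"
    proof (rule cert_step[OF he, where n=45 and c="(1, 0)" and xs="[((1, 0), rowg 4 GX GY GZ (2,0,10))]"])
      show "\<forall>(g,r)\<in>set [((1, 0), rowg 4 GX GY GZ (2,0,10))]. length r = 45 \<and> valr e r U 0 = 0"
        using R  by (simp add: len_rowg tbox_def)
      show "lc [((1, 0), rowg 4 GX GY GZ (2,0,10))] = vsmul (1, 0) pv2"
        by (simp add: pv2_def  rowg_def tri_def upt_rec gshift_def GX_def GY_def GZ_def gdx_def gdy_def gdz_def GF_def GFl_def vadd_def vsmul_def)
    qed simp_all
  qed
  have P3: "length pv3 = 45 \<and> valr e pv3 U 0 = 0"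
  proof (rule conjI)
    show "length pv3 = 45" by (simp add: pv3_def)
    show "valr e pv3 U 0 = 0"
    proof (rule cert_step[OF he, where n=45 and c="(1, 0)" and xs="[((1, 0), rowg 4 GX GY GZ (2,10,0))]"])
      show "\<forall>(g,r)\<in>set [((1, 0), rowg 4 GX GY GZ (2,10,0))]. length r = 45 \<and> valr e r U 0 = 0"
        using R  by (simp add: len_rowg tbox_def)
      show "lc [((1, 0), rowg 4 GX GY GZ (2,10,0))] = vsmul (1, 0) pv3"
        by (simp add: pv3_def  rowg_def tri_def upt_rec gshift_def GX_def GY_def GZ_def gdx_def gdy_def gdz_def GF_def GFl_def vadd_def vsmul_def)
    qed simp_all
  qed
  have P4: "length pv4 = 45 \<and> valr e pv4 U 0 = 0"
  proof (rule conjI)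
    show "length pv4 = 45" by (simp add: pv4_def)
    show "valr e pv4 U 0 = 0"
    proof (rule cert_step[OF he, where n=45 and c="(1, 0)" and xs="[((1, 0), rowg 4 GX GY GZ (10,0,2))]"])
      show "\<forall>(g,r)\<in>set [((1, 0), rowg 4 GX GY GZ (10,0,2))]. length r = 45 \<and> valr e r U 0 = 0"
        using R  by (simp add: len_rowg tbox_def)
      show "lc [((1, 0), rowg 4 GX GY GZ (10,0,2))] = vsmul (1, 0) pv4"
        by (simp add: pv4_def  rowg_def tri_def upt_rec gshift_def GX_def GY_def GZ_def gdx_def gdy_def gdz_def GF_def GFl_def vadd_def vsmul_def)
    qed simp_all
  qed
  have P5: "length pv5 = 45 \<and> valr e pv5 U 0 = 0"
  proof (rule conjI)
    show "length pv5 = 45" by (simp add: pv5_def)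
    show "valr e pv5 U 0 = 0"
    proof (rule cert_step[OF he, where n=45 and c="(1, 0)" and xs="[((1, 0), rowg 4 GX GY GZ (10,2,0))]"])
      show "\<forall>(g,r)\<in>set [((1, 0), rowg 4 GX GY GZ (10,2,0))]. length r = 45 \<and> valr e r U 0 = 0"
        using R  by (simp add: len_rowg tbox_def)
      show "lc [((1, 0), rowg 4 GX GY GZ (10,2,0))] = vsmul (1, 0) pv5"
        by (simp add: pv5_def  rowg_def tri_def upt_rec gshift_def GX_def GY_def GZ_def gdx_def gdy_def gdz_def GF_def GFl_def vadd_def vsmul_def)
    qed simp_all
  qed
  have P6: "length pv6 = 45 \<and> valr e pv6 U 0 = 0"
  proof (rule conjI)
    show "length pv6 = 45" by (simp add: pv6_def)
    show "valr e pv6 U 0 = 0"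
    proof (rule cert_step[OF he, where n=45 and c="(1, 0)" and xs="[((1, 0), rowg 4 GX GY GZ (0,3,9)), ((2, 2), pv0)]"])
      show "\<forall>(g,r)\<in>set [((1, 0), rowg 4 GX GY GZ (0,3,9)), ((2, 2), pv0)]. length r = 45 \<and> valr e r U 0 = 0"
        using R P0 by (simp add: len_rowg tbox_def)
      show "lc [((1, 0), rowg 4 GX GY GZ (0,3,9)), ((2, 2), pv0)] = vsmul (1, 0) pv6"
        by (simp add: pv6_def pv0_def rowg_def tri_def upt_rec gshift_def GX_def GY_def GZ_def gdx_def gdy_def gdz_def GF_def GFl_def vadd_def vsmul_def)
    qed simp_all
  qed
  have P7: "length pv7 = 45 \<and> valr e pv7 U 0 = 0"
  proof (rule conjI)
    show "length pv7 = 45" by (simp add: pv7_def)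
    show "valr e pv7 U 0 = 0"
    proof (rule cert_step[OF he, where n=45 and c="(1, 0)" and xs="[((1, 0), rowg 4 GX GY GZ (0,9,3)), ((2, -2), pv1)]"])
      show "\<forall>(g,r)\<in>set [((1, 0), rowg 4 GX GY GZ (0,9,3)), ((2, -2), pv1)]. length r = 45 \<and> valr e r U 0 = 0"
        using R P1 by (simp add: len_rowg tbox_def)
      show "lc [((1, 0), rowg 4 GX GY GZ (0,9,3)), ((2, -2), pv1)] = vsmul (1, 0) pv7"
        by (simp add: pv7_def pv1_def rowg_def tri_def upt_rec gshift_def GX_def GY_def GZ_def gdx_def gdy_def gdz_def GF_def GFl_def vadd_def vsmul_def)
    qed simp_all
  qed
  have P8: "length pv8 = 45 \<and> valr e pv8 U 0 = 0"
  proof (rule conjI)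
    show "length pv8 = 45" by (simp add: pv8_def)
    show "valr e pv8 U 0 = 0"
    proof (rule cert_step[OF he, where n=45 and c="(1, 0)" and xs="[((1, 0), rowg 4 GX GY GZ (3,0,9)), ((-2, 2), pv2)]"])
      show "\<forall>(g,r)\<in>set [((1, 0), rowg 4 GX GY GZ (3,0,9)), ((-2, 2), pv2)]. length r = 45 \<and> valr e r U 0 = 0"
        using R P2 by (simp add: len_rowg tbox_def)
      show "lc [((1, 0), rowg 4 GX GY GZ (3,0,9)), ((-2, 2), pv2)] = vsmul (1, 0) pv8"
        by (simp add: pv8_def pv2_def rowg_def tri_def upt_rec gshift_def GX_def GY_def GZ_def gdx_def gdy_def gdz_def GF_def GFl_def vadd_def vsmul_def)
    qed simp_all
  qed
  have P9: "length pv9 = 45 \<and> valr e pv9 U 0 = 0"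
  proof (rule conjI)
    show "length pv9 = 45" by (simp add: pv9_def)
    show "valr e pv9 U 0 = 0"
    proof (rule cert_step[OF he, where n=45 and c="(1, 0)" and xs="[((1, 0), rowg 4 GX GY GZ (3,9,0)), ((-2, -2), pv3)]"])
      show "\<forall>(g,r)\<in>set [((1, 0), rowg 4 GX GY GZ (3,9,0)), ((-2, -2), pv3)]. length r = 45 \<and> valr e r U 0 = 0"
        using R P3 by (simp add: len_rowg tbox_def)
      show "lc [((1, 0), rowg 4 GX GY GZ (3,9,0)), ((-2, -2), pv3)] = vsmul (1, 0) pv9"
        by (simp add: pv9_def pv3_def rowg_def tri_def upt_rec gshift_def GX_def GY_def GZ_def gdx_def gdy_def gdz_def GF_def GFl_def vadd_def vsmul_def)
    qed simp_all
  qed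
  have P10: "length pv10 = 45 \<and> valr e pv10 U 0 = 0"
  proof (rule conjI)
    show "length pv10 = 45" by (simp add: pv10_def)
    show "valr e pv10 U 0 = 0"
    proof (rule cert_step[OF he, where n=45 and c="(1, 0)" and xs="[((1, 0), rowg 4 GX GY GZ (9,0,3)), ((-2, -2), pv4)]"])
      show "\<forall>(g,r)\<in>set [((1, 0), rowg 4 GX GY GZ (9,0,3)), ((-2, -2), pv4)]. length r = 45 \<and> valr e r U 0 = 0"
        using R P4 by (simp add: len_rowg tbox_def)
      show "lc [((1, 0), rowg 4 GX GY GZ (9,0,3)), ((-2, -2), pv4)] = vsmul (1, 0) pv10"
        by (simp add: pv10_def pv4_def rowg_def tri_def upt_rec gshift_def GX_def GY_def GZ_def gdx_def gdy_def gdz_def GF_def GFl_def vadd_def vsmul_def)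
    qed simp_all
  qed
  have P11: "length pv11 = 45 \<and> valr e pv11 U 0 = 0"
  proof (rule conjI)
    show "length pv11 = 45" by (simp add: pv11_def)
    show "valr e pv11 U 0 = 0"
    proof (rule cert_step[OF he, where n=45 and c="(1, 0)" and xs="[((1, 0), rowg 4 GX GY GZ (9,3,0)), ((-2, 2), pv5)]"])
      show "\<forall>(g,r)\<in>set [((1, 0), rowg 4 GX GY GZ (9,3,0)), ((-2, 2), pv5)]. length r = 45 \<and> valr e r U 0 = 0"
        using R P5 by (simp add: len_rowg tbox_def)
      show "lc [((1, 0), rowg 4 GX GY GZ (9,3,0)), ((-2, 2), pv5)] = vsmul (1, 0) pv11"
        by (simp add: pv11_def pv5_def rowg_def tri_def upt_rec gshift_def GX_def GY_def GZ_def gdx_def gdy_def gdz_def GF_def GFl_def vadd_def vsmul_def)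
    qed simp_all
  qed
  have P12: "length pv12 = 45 \<and> valr e pv12 U 0 = 0"
  proof (rule conjI)
    show "length pv12 = 45" by (simp add: pv12_def)
    show "valr e pv12 U 0 = 0"
    proof (rule cert_step[OF he, where n=45 and c="(1, 0)" and xs="[((1, 0), rowg 4 GX GY GZ (0,4,8)), ((0, -4), pv0), ((2, 2), pv6)]"])
      show "\<forall>(g,r)\<in>set [((1, 0), rowg 4 GX GY GZ (0,4,8)), ((0, -4), pv0), ((2, 2), pv6)]. length r = 45 \<and> valr e r U 0 = 0"
        using R P0 P6 by (simp add: len_rowg tbox_def)
      show "lc [((1, 0), rowg 4 GX GY GZ (0,4,8)), ((0, -4), pv0), ((2, 2), pv6)] = vsmul (1, 0) pv12"
        by (simp add: pv12_def pv0_def pv6_def rowg_def tri_def upt_rec gshift_def GX_def GY_def GZ_def gdx_def gdy_def gdz_def GF_def GFl_def vadd_def vsmul_def)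
    qed simp_all
  qed
  have P13: "length pv13 = 45 \<and> valr e pv13 U 0 = 0"
  proof (rule conjI)
    show "length pv13 = 45" by (simp add: pv13_def)
    show "valr e pv13 U 0 = 0"
    proof (rule cert_step[OF he, where n=45 and c="(1, 0)" and xs="[((1, 0), rowg 4 GX GY GZ (4,0,8)), ((0, 4), pv2), ((-2, 2), pv8)]"])
      show "\<forall>(g,r)\<in>set [((1, 0), rowg 4 GX GY GZ (4,0,8)), ((0, 4), pv2), ((-2, 2), pv8)]. length r = 45 \<and> valr e r U 0 = 0"
        using R P2 P8 by (simp add: len_rowg tbox_def)
      show "lc [((1, 0), rowg 4 GX GY GZ (4,0,8)), ((0, 4), pv2), ((-2, 2), pv8)] = vsmul (1, 0) pv13"
        by (simp add: pv13_def pv2_def pv8_def rowg_def tri_def upt_rec gshift_def GX_def GY_def GZ_def gdx_def gdy_def gdz_def GF_def GFl_def vadd_def vsmul_def)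
    qed simp_all
  qed
  have P14: "length pv14 = 45 \<and> valr e pv14 U 0 = 0"
  proof (rule conjI)
    show "length pv14 = 45" by (simp add: pv14_def)
    show "valr e pv14 U 0 = 0"
    proof (rule cert_step[OF he, where n=45 and c="(1, 0)" and xs="[((1, 0), rowg 4 GX GY GZ (4,8,0)), ((0, -4), pv3), ((-2, -2), pv9)]"])
      show "\<forall>(g,r)\<in>set [((1, 0), rowg 4 GX GY GZ (4,8,0)), ((0, -4), pv3), ((-2, -2), pv9)]. length r = 45 \<and> valr e r U 0 = 0"
        using R P3 P9 by (simp add: len_rowg tbox_def)
      show "lc [((1, 0), rowg 4 GX GY GZ (4,8,0)), ((0, -4), pv3), ((-2, -2), pv9)] = vsmul (1, 0) pv14"
        by (simp add: pv14_def pv3_def pv9_def rowg_def tri_def upt_rec gshift_def GX_def GY_def GZ_def gdx_def gdy_def gdz_def GF_def GFl_def vadd_def vsmul_def)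
    qed simp_all
  qed
  have P15: "length pv15 = 45 \<and> valr e pv15 U 0 = 0"
  proof (rule conjI)
    show "length pv15 = 45" by (simp add: pv15_def)
    show "valr e pv15 U 0 = 0"
    proof (rule cert_step[OF he, where n=45 and c="(1, 0)" and xs="[((1, 0), rowg 4 GX GY GZ (1,2,9)), ((0, 8), pv0), ((6, 6), pv2), ((-2, 0), pv6)]"])
      show "\<forall>(g,r)\<in>set [((1, 0), rowg 4 GX GY GZ (1,2,9)), ((0, 8), pv0), ((6, 6), pv2), ((-2, 0), pv6)]. length r = 45 \<and> valr e r U 0 = 0"
        using R P0 P2 P6 by (simp add: len_rowg tbox_def)
      show "lc [((1, 0), rowg 4 GX GY GZ (1,2,9)), ((0, 8), pv0), ((6, 6), pv2), ((-2, 0), pv6)] = vsmul (1, 0) pv15"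
        by (simp add: pv15_def pv0_def pv2_def pv6_def rowg_def tri_def upt_rec gshift_def GX_def GY_def GZ_def gdx_def gdy_def gdz_def GF_def GFl_def vadd_def vsmul_def)
    qed simp_all
  qed
  have P16: "length pv16 = 45 \<and> valr e pv16 U 0 = 0"
  proof (rule conjI)
    show "length pv16 = 45" by (simp add: pv16_def)
    show "valr e pv16 U 0 = 0"
    proof (rule cert_step[OF he, where n=45 and c="(3, 0)" and xs="[((1, 0), rowg 4 GX GY GZ (2,1,9)), ((-6, 6), pv0), ((0, 8), pv2), ((-2, 0), pv8), ((-2, 0), pv15)]"])
      show "\<forall>(g,r)\<in>set [((1, 0), rowg 4 GX GY GZ (2,1,9)), ((-6, 6), pv0), ((0, 8), pv2), ((-2, 0), pv8), ((-2, 0), pv15)]. length r = 45 \<and> valr e r U 0 = 0"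
        using R P0 P2 P8 P15 by (simp add: len_rowg tbox_def)
      show "lc [((1, 0), rowg 4 GX GY GZ (2,1,9)), ((-6, 6), pv0), ((0, 8), pv2), ((-2, 0), pv8), ((-2, 0), pv15)] = vsmul (3, 0) pv16"
        by (simp add: pv16_def pv0_def pv2_def pv8_def pv15_def rowg_def tri_def upt_rec gshift_def GX_def GY_def GZ_def gdx_def gdy_def gdz_def GF_def GFl_def vadd_def vsmul_def)
    qed simp_all
  qed
  have P17: "length pv17 = 45 \<and> valr e pv17 U 0 = 0"
  proof (rule conjI)
    show "length pv17 = 45" by (simp add: pv17_def)
    show "valr e pv17 U 0 = 0"
    proof (rule cert_step[OF he, where n=45 and c="(1, 0)" and xs="[((1, 0), rowg 4 GX GY GZ (1,9,2)), ((0, -8), pv1), ((6, -6), pv3), ((-2, 0), pv7)]"])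
      show "\<forall>(g,r)\<in>set [((1, 0), rowg 4 GX GY GZ (1,9,2)), ((0, -8), pv1), ((6, -6), pv3), ((-2, 0), pv7)]. length r = 45 \<and> valr e r U 0 = 0"
        using R P1 P3 P7 by (simp add: len_rowg tbox_def)
      show "lc [((1, 0), rowg 4 GX GY GZ (1,9,2)), ((0, -8), pv1), ((6, -6), pv3), ((-2, 0), pv7)] = vsmul (1, 0) pv17"
        by (simp add: pv17_def pv1_def pv3_def pv7_def rowg_def tri_def upt_rec gshift_def GX_def GY_def GZ_def gdx_def gdy_def gdz_def GF_def GFl_def vadd_def vsmul_def)
    qed simp_all
  qed
  have P18: "length pv18 = 45 \<and> valr e pv18 U 0 = 0"
  proof (rule conjI)
    show "length pv18 = 45" by (simp add: pv18_def)
    show "valr e pv18 U 0 = 0"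
    proof (rule cert_step[OF he, where n=45 and c="(3, 0)" and xs="[((1, 0), rowg 4 GX GY GZ (2,9,1)), ((-6, -6), pv1), ((0, -8), pv3), ((-2, 0), pv9), ((-2, 0), pv17)]"])
      show "\<forall>(g,r)\<in>set [((1, 0), rowg 4 GX GY GZ (2,9,1)), ((-6, -6), pv1), ((0, -8), pv3), ((-2, 0), pv9), ((-2, 0), pv17)]. length r = 45 \<and> valr e r U 0 = 0"
        using R P1 P3 P9 P17 by (simp add: len_rowg tbox_def)
      show "lc [((1, 0), rowg 4 GX GY GZ (2,9,1)), ((-6, -6), pv1), ((0, -8), pv3), ((-2, 0), pv9), ((-2, 0), pv17)] = vsmul (3, 0) pv18"
        by (simp add: pv18_def pv1_def pv3_def pv9_def pv17_def rowg_def tri_def upt_rec gshift_def GX_def GY_def GZ_def gdx_def gdy_def gdz_def GF_def GFl_def vadd_def vsmul_def)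
    qed simp_all
  qed
  have P19: "length pv19 = 45 \<and> valr e pv19 U 0 = 0"
  proof (rule conjI)
    show "length pv19 = 45" by (simp add: pv19_def)
    show "valr e pv19 U 0 = 0"
    proof (rule cert_step[OF he, where n=45 and c="(1, 0)" and xs="[((1, 0), rowg 4 GX GY GZ (9,1,2)), ((0, 8), pv4), ((6, 6), pv5), ((2, 0), pv10)]"])
      show "\<forall>(g,r)\<in>set [((1, 0), rowg 4 GX GY GZ (9,1,2)), ((0, 8), pv4), ((6, 6), pv5), ((2, 0), pv10)]. length r = 45 \<and> valr e r U 0 = 0"
        using R P4 P5 P10 by (simp add: len_rowg tbox_def)
      show "lc [((1, 0), rowg 4 GX GY GZ (9,1,2)), ((0, 8), pv4), ((6, 6), pv5), ((2, 0), pv10)] = vsmul (1, 0) pv19"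
        by (simp add: pv19_def pv4_def pv5_def pv10_def rowg_def tri_def upt_rec gshift_def GX_def GY_def GZ_def gdx_def gdy_def gdz_def GF_def GFl_def vadd_def vsmul_def)
    qed simp_all
  qed
  have P20: "length pv20 = 45 \<and> valr e pv20 U 0 = 0"
  proof (rule conjI)
    show "length pv20 = 45" by (simp add: pv20_def)
    show "valr e pv20 U 0 = 0"
    proof (rule cert_step[OF he, where n=45 and c="(3, 0)" and xs="[((1, 0), rowg 4 GX GY GZ (9,2,1)), ((6, -6), pv4), ((0, -8), pv5), ((2, 0), pv11), ((2, 0), pv19)]"])
      show "\<forall>(g,r)\<in>set [((1, 0), rowg 4 GX GY GZ (9,2,1)), ((6, -6), pv4), ((0, -8), pv5), ((2, 0), pv11), ((2, 0), pv19)]. length r = 45 \<and> valr e r U 0 = 0"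
        using R P4 P5 P11 P19 by (simp add: len_rowg tbox_def)
      show "lc [((1, 0), rowg 4 GX GY GZ (9,2,1)), ((6, -6), pv4), ((0, -8), pv5), ((2, 0), pv11), ((2, 0), pv19)] = vsmul (3, 0) pv20"
        by (simp add: pv20_def pv4_def pv5_def pv11_def pv19_def rowg_def tri_def upt_rec gshift_def GX_def GY_def GZ_def gdx_def gdy_def gdz_def GF_def GFl_def vadd_def vsmul_def)
    qed simp_all
  qed
  have P21: "length pv21 = 45 \<and> valr e pv21 U 0 = 0"
  proof (rule conjI)
    show "length pv21 = 45" by (simp add: pv21_def)
    show "valr e pv21 U 0 = 0"
    proof (rule cert_step[OF he, where n=45 and c="(1, 0)" and xs="[((1, 0), rowg 4 GX GY GZ (1,3,8)), ((14, -8), pv0), ((0, -16), pv2), ((0, 8), pv6), ((-2, 0), pv12), ((2, 2), pv15), ((-2, -2), pv16)]"])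
      show "\<forall>(g,r)\<in>set [((1, 0), rowg 4 GX GY GZ (1,3,8)), ((14, -8), pv0), ((0, -16), pv2), ((0, 8), pv6), ((-2, 0), pv12), ((2, 2), pv15), ((-2, -2), pv16)]. length r = 45 \<and> valr e r U 0 = 0"
        using R P0 P2 P6 P12 P15 P16 by (simp add: len_rowg tbox_def)
      show "lc [((1, 0), rowg 4 GX GY GZ (1,3,8)), ((14, -8), pv0), ((0, -16), pv2), ((0, 8), pv6), ((-2, 0), pv12), ((2, 2), pv15), ((-2, -2), pv16)] = vsmul (1, 0) pv21"
        by (simp add: pv21_def pv0_def pv2_def pv6_def pv12_def pv15_def pv16_def rowg_def tri_def upt_rec gshift_def GX_def GY_def GZ_def gdx_def gdy_def gdz_def GF_def GFl_def vadd_def vsmul_def)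
    qed simp_all
  qed
  have P22: "length pv22 = 45 \<and> valr e pv22 U 0 = 0"
  proof (rule conjI)
    show "length pv22 = 45" by (simp add: pv22_def)
    show "valr e pv22 U 0 = 0"
    proof (rule cert_step[OF he, where n=45 and c="(1, 0)" and xs="[((1, 0), rowg 4 GX GY GZ (1,8,3)), ((14, 8), pv1), ((0, 16), pv3), ((0, -8), pv7), ((2, 0), pv12), ((2, -2), pv17), ((-2, 2), pv18)]"])
      show "\<forall>(g,r)\<in>set [((1, 0), rowg 4 GX GY GZ (1,8,3)), ((14, 8), pv1), ((0, 16), pv3), ((0, -8), pv7), ((2, 0), pv12), ((2, -2), pv17), ((-2, 2), pv18)]. length r = 45 \<and> valr e r U 0 = 0"
        using R P1 P3 P7 P12 P17 P18 by (simp add: len_rowg tbox_def)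
      show "lc [((1, 0), rowg 4 GX GY GZ (1,8,3)), ((14, 8), pv1), ((0, 16), pv3), ((0, -8), pv7), ((2, 0), pv12), ((2, -2), pv17), ((-2, 2), pv18)] = vsmul (1, 0) pv22"
        by (simp add: pv22_def pv1_def pv3_def pv7_def pv12_def pv17_def pv18_def rowg_def tri_def upt_rec gshift_def GX_def GY_def GZ_def gdx_def gdy_def gdz_def GF_def GFl_def vadd_def vsmul_def)
    qed simp_all
  qed
  have P23: "length pv23 = 45 \<and> valr e pv23 U 0 = 0"
  proof (rule conjI)
    show "length pv23 = 45" by (simp add: pv23_def)
    show "valr e pv23 U 0 = 0"
    proof (rule cert_step[OF he, where n=45 and c="(1, 0)" and xs="[((1, 0), rowg 4 GX GY GZ (8,1,3)), ((-14, 8), pv4), ((0, 16), pv5), ((0, 8), pv10), ((-2, 0), pv13), ((-2, -2), pv19), ((-2, -2), pv20)]"])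
      show "\<forall>(g,r)\<in>set [((1, 0), rowg 4 GX GY GZ (8,1,3)), ((-14, 8), pv4), ((0, 16), pv5), ((0, 8), pv10), ((-2, 0), pv13), ((-2, -2), pv19), ((-2, -2), pv20)]. length r = 45 \<and> valr e r U 0 = 0"
        using R P4 P5 P10 P13 P19 P20 by (simp add: len_rowg tbox_def)
      show "lc [((1, 0), rowg 4 GX GY GZ (8,1,3)), ((-14, 8), pv4), ((0, 16), pv5), ((0, 8), pv10), ((-2, 0), pv13), ((-2, -2), pv19), ((-2, -2), pv20)] = vsmul (1, 0) pv23"
        by (simp add: pv23_def pv4_def pv5_def pv10_def pv13_def pv19_def pv20_def rowg_def tri_def upt_rec gshift_def GX_def GY_def GZ_def gdx_def gdy_def gdz_def GF_def GFl_def vadd_def vsmul_def)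
    qed simp_all
  qed
  have P24: "length pv24 = 45 \<and> valr e pv24 U 0 = 0"
  proof (rule conjI)
    show "length pv24 = 45" by (simp add: pv24_def)
    show "valr e pv24 U 0 = 0"
    proof (rule cert_step[OF he, where n=45 and c="(1, 0)" and xs="[((1, 0), rowg 4 GX GY GZ (7,1,4)), ((-14, -8), pv4), ((-10, 10), pv5), ((-2, 0), pv8), ((-14, 8), pv10), ((0, -8), pv13), ((0, -4), pv19), ((0, -8), pv20), ((-2, -2), pv23)]"])
      show "\<forall>(g,r)\<in>set [((1, 0), rowg 4 GX GY GZ (7,1,4)), ((-14, -8), pv4), ((-10, 10), pv5), ((-2, 0), pv8), ((-14, 8), pv10), ((0, -8), pv13), ((0, -4), pv19), ((0, -8), pv20), ((-2, -2), pv23)]. length r = 45 \<and> valr e r U 0 = 0"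
        using R P4 P5 P8 P10 P13 P19 P20 P23 by (simp add: len_rowg tbox_def)
      show "lc [((1, 0), rowg 4 GX GY GZ (7,1,4)), ((-14, -8), pv4), ((-10, 10), pv5), ((-2, 0), pv8), ((-14, 8), pv10), ((0, -8), pv13), ((0, -4), pv19), ((0, -8), pv20), ((-2, -2), pv23)] = vsmul (1, 0) pv24"
        by (simp add: pv24_def pv4_def pv5_def pv8_def pv10_def pv13_def pv19_def pv20_def pv23_def rowg_def tri_def upt_rec gshift_def GX_def GY_def GZ_def gdx_def gdy_def gdz_def GF_def GFl_def vadd_def vsmul_def)
    qed simp_all
  qed
  have P25: "length pv25 = 45 \<and> valr e pv25 U 0 = 0"
  proof (rule conjI)
    show "length pv25 = 45" by (simp add: pv25_def)
    show "valr e pv25 U 0 = 0"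
    proof (rule cert_step[OF he, where n=45 and c="(1, 0)" and xs="[((1, 0), rowg 4 GX GY GZ (1,4,7)), ((-14, -8), pv0), ((-10, 10), pv2), ((14, -8), pv6), ((2, 0), pv7), ((0, 8), pv12), ((0, -4), pv15), ((0, 8), pv16), ((2, 2), pv21)]"])
      show "\<forall>(g,r)\<in>set [((1, 0), rowg 4 GX GY GZ (1,4,7)), ((-14, -8), pv0), ((-10, 10), pv2), ((14, -8), pv6), ((2, 0), pv7), ((0, 8), pv12), ((0, -4), pv15), ((0, 8), pv16), ((2, 2), pv21)]. length r = 45 \<and> valr e r U 0 = 0"
        using R P0 P2 P6 P7 P12 P15 P16 P21 by (simp add: len_rowg tbox_def)
      show "lc [((1, 0), rowg 4 GX GY GZ (1,4,7)), ((-14, -8), pv0), ((-10, 10), pv2), ((14, -8), pv6), ((2, 0), pv7), ((0, 8), pv12), ((0, -4), pv15), ((0, 8), pv16), ((2, 2), pv21)] = vsmul (1, 0) pv25"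
        by (simp add: pv25_def pv0_def pv2_def pv6_def pv7_def pv12_def pv15_def pv16_def pv21_def rowg_def tri_def upt_rec gshift_def GX_def GY_def GZ_def gdx_def gdy_def gdz_def GF_def GFl_def vadd_def vsmul_def)
    qed simp_all
  qed
  have P26: "length pv26 = 45 \<and> valr e pv26 U 0 = 0"
  proof (rule conjI)
    show "length pv26 = 45" by (simp add: pv26_def)
    show "valr e pv26 U 0 = 0"
    proof (rule cert_step[OF he, where n=45 and c="(1, 0)" and xs="[((1, 0), rowg 4 GX GY GZ (1,7,4)), ((-14, 8), pv1), ((-10, -10), pv3), ((2, 0), pv6), ((14, 8), pv7), ((0, 8), pv12), ((0, 4), pv17), ((0, -8), pv18), ((2, -2), pv22)]"])
      show "\<forall>(g,r)\<in>set [((1, 0), rowg 4 GX GY GZ (1,7,4)), ((-14, 8), pv1), ((-10, -10), pv3), ((2, 0), pv6), ((14, 8), pv7), ((0, 8), pv12), ((0, 4), pv17), ((0, -8), pv18), ((2, -2), pv22)]. length r = 45 \<and> valr e r U 0 = 0"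
        using R P1 P3 P6 P7 P12 P17 P18 P22 by (simp add: len_rowg tbox_def)
      show "lc [((1, 0), rowg 4 GX GY GZ (1,7,4)), ((-14, 8), pv1), ((-10, -10), pv3), ((2, 0), pv6), ((14, 8), pv7), ((0, 8), pv12), ((0, 4), pv17), ((0, -8), pv18), ((2, -2), pv22)] = vsmul (1, 0) pv26"
        by (simp add: pv26_def pv1_def pv3_def pv6_def pv7_def pv12_def pv17_def pv18_def pv22_def rowg_def tri_def upt_rec gshift_def GX_def GY_def GZ_def gdx_def gdy_def gdz_def GF_def GFl_def vadd_def vsmul_def)
    qed simp_all
  qed
  have P27: "length pv27 = 45 \<and> valr e pv27 U 0 = 0"
  proof (rule conjI)
    show "length pv27 = 45" by (simp add: pv27_def)
    show "valr e pv27 U 0 = 0"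
    proof (rule cert_step[OF he, where n=45 and c="(1, 0)" and xs="[((1, 0), rowg 4 GX GY GZ (8,2,2)), ((21, 12), pv4), ((21, -12), pv5), ((6, -6), pv10), ((6, 6), pv11), ((0, 8), pv19), ((0, -8), pv20), ((1, 1), pv23)]"])
      show "\<forall>(g,r)\<in>set [((1, 0), rowg 4 GX GY GZ (8,2,2)), ((21, 12), pv4), ((21, -12), pv5), ((6, -6), pv10), ((6, 6), pv11), ((0, 8), pv19), ((0, -8), pv20), ((1, 1), pv23)]. length r = 45 \<and> valr e r U 0 = 0"
        using R P4 P5 P10 P11 P19 P20 P23 by (simp add: len_rowg tbox_def)
      show "lc [((1, 0), rowg 4 GX GY GZ (8,2,2)), ((21, 12), pv4), ((21, -12), pv5), ((6, -6), pv10), ((6, 6), pv11), ((0, 8), pv19), ((0, -8), pv20), ((1, 1), pv23)] = vsmul (1, 0) pv27"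
        by (simp add: pv27_def pv4_def pv5_def pv10_def pv11_def pv19_def pv20_def pv23_def rowg_def tri_def upt_rec gshift_def GX_def GY_def GZ_def gdx_def gdy_def gdz_def GF_def GFl_def vadd_def vsmul_def)
    qed simp_all
  qed
  have P28: "length pv28 = 45 \<and> valr e pv28 U 0 = 0"
  proof (rule conjI)
    show "length pv28 = 45" by (simp add: pv28_def)
    show "valr e pv28 U 0 = 0"
    proof (rule cert_step[OF he, where n=45 and c="(1, 0)" and xs="[((1, 0), rowg 4 GX GY GZ (8,3,1)), ((0, -16), pv4), ((-14, -8), pv5), ((0, -8), pv11), ((-2, 0), pv14), ((6, -6), pv19), ((-10, 10), pv20), ((0, -1), pv23), ((2, 0), pv27)]"])
      show "\<forall>(g,r)\<in>set [((1, 0), rowg 4 GX GY GZ (8,3,1)), ((0, -16), pv4), ((-14, -8), pv5), ((0, -8), pv11), ((-2, 0), pv14), ((6, -6), pv19), ((-10, 10), pv20), ((0, -1), pv23), ((2, 0), pv27)]. length r = 45 \<and> valr e r U 0 = 0"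
        using R P4 P5 P11 P14 P19 P20 P23 P27 by (simp add: len_rowg tbox_def)
      show "lc [((1, 0), rowg 4 GX GY GZ (8,3,1)), ((0, -16), pv4), ((-14, -8), pv5), ((0, -8), pv11), ((-2, 0), pv14), ((6, -6), pv19), ((-10, 10), pv20), ((0, -1), pv23), ((2, 0), pv27)] = vsmul (1, 0) pv28"
        by (simp add: pv28_def pv4_def pv5_def pv11_def pv14_def pv19_def pv20_def pv23_def pv27_def rowg_def tri_def upt_rec gshift_def GX_def GY_def GZ_def gdx_def gdy_def gdz_def GF_def GFl_def vadd_def vsmul_def)
    qed simp_all
  qed
  have P29: "length pv29 = 45 \<and> valr e pv29 U 0 = 0"
  proof (rule conjI)
    show "length pv29 = 45" by (simp add: pv29_def)
    show "valr e pv29 U 0 = 0"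
    proof (rule cert_step[OF he, where n=45 and c="(1, 0)" and xs="[((3, 0), rowg 4 GX GY GZ (7,4,1)), ((-30, -30), pv4), ((-42, 24), pv5), ((-6, 0), pv9), ((-42, -24), pv11), ((0, 24), pv14), ((0, -48), pv19), ((0, 84), pv20), ((-6, -6), pv23), ((18, -18), pv27), ((-10, 10), pv28)]"])
      show "\<forall>(g,r)\<in>set [((3, 0), rowg 4 GX GY GZ (7,4,1)), ((-30, -30), pv4), ((-42, 24), pv5), ((-6, 0), pv9), ((-42, -24), pv11), ((0, 24), pv14), ((0, -48), pv19), ((0, 84), pv20), ((-6, -6), pv23), ((18, -18), pv27), ((-10, 10), pv28)]. length r = 45 \<and> valr e r U 0 = 0"
        using R P4 P5 P9 P11 P14 P19 P20 P23 P27 P28 by (simp add: len_rowg tbox_def)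
      show "lc [((3, 0), rowg 4 GX GY GZ (7,4,1)), ((-30, -30), pv4), ((-42, 24), pv5), ((-6, 0), pv9), ((-42, -24), pv11), ((0, 24), pv14), ((0, -48), pv19), ((0, 84), pv20), ((-6, -6), pv23), ((18, -18), pv27), ((-10, 10), pv28)] = vsmul (1, 0) pv29"
        by (simp add: pv29_def pv4_def pv5_def pv9_def pv11_def pv14_def pv19_def pv20_def pv23_def pv27_def pv28_def rowg_def tri_def upt_rec gshift_def GX_def GY_def GZ_def gdx_def gdy_def gdz_def GF_def GFl_def vadd_def vsmul_def)
    qed simp_all
  qed
  have P30: "length pv30 = 45 \<and> valr e pv30 U 0 = 0"
  proof (rule conjI)
    show "length pv30 = 45" by (simp add: pv30_def)
    show "valr e pv30 U 0 = 0"
    proof (rule cert_step[OF he, where n=45 and c="(1, 0)" and xs="[((1, 0), rowg 4 GX GY GZ (2,2,8)), ((21, 12), pv0), ((21, -12), pv2), ((-6, 6), pv6), ((6, 6), pv8), ((0, 8), pv15), ((0, 8), pv16), ((-1, -1), pv21), ((2, 0), pv24), ((1, -1), pv26)]"])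
      show "\<forall>(g,r)\<in>set [((1, 0), rowg 4 GX GY GZ (2,2,8)), ((21, 12), pv0), ((21, -12), pv2), ((-6, 6), pv6), ((6, 6), pv8), ((0, 8), pv15), ((0, 8), pv16), ((-1, -1), pv21), ((2, 0), pv24), ((1, -1), pv26)]. length r = 45 \<and> valr e r U 0 = 0"
        using R P0 P2 P6 P8 P15 P16 P21 P24 P26 by (simp add: len_rowg tbox_def)
      show "lc [((1, 0), rowg 4 GX GY GZ (2,2,8)), ((21, 12), pv0), ((21, -12), pv2), ((-6, 6), pv6), ((6, 6), pv8), ((0, 8), pv15), ((0, 8), pv16), ((-1, -1), pv21), ((2, 0), pv24), ((1, -1), pv26)] = vsmul (1, 0) pv30"
        by (simp add: pv30_def pv0_def pv2_def pv6_def pv8_def pv15_def pv16_def pv21_def pv24_def pv26_def rowg_def tri_def upt_rec gshift_def GX_def GY_def GZ_def gdx_def gdy_def gdz_def GF_def GFl_def vadd_def vsmul_def)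
    qed simp_all
  qed
  have P31: "length pv31 = 45 \<and> valr e pv31 U 0 = 0"
  proof (rule conjI)
    show "length pv31 = 45" by (simp add: pv31_def)
    show "valr e pv31 U 0 = 0"
    proof (rule cert_step[OF he, where n=45 and c="(2, 0)" and xs="[((1, 0), rowg 4 GX GY GZ (3,1,8)), ((0, 16), pv0), ((14, 8), pv2), ((0, 8), pv8), ((-2, 0), pv13), ((-6, 6), pv15), ((-10, 10), pv16), ((0, -1), pv21), ((1, 0), pv24), ((0, -1), pv26), ((-2, 0), pv30)]"])
      show "\<forall>(g,r)\<in>set [((1, 0), rowg 4 GX GY GZ (3,1,8)), ((0, 16), pv0), ((14, 8), pv2), ((0, 8), pv8), ((-2, 0), pv13), ((-6, 6), pv15), ((-10, 10), pv16), ((0, -1), pv21), ((1, 0), pv24), ((0, -1), pv26), ((-2, 0), pv30)]. length r = 45 \<and> valr e r U 0 = 0"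
        using R P0 P2 P8 P13 P15 P16 P21 P24 P26 P30 by (simp add: len_rowg tbox_def)
      show "lc [((1, 0), rowg 4 GX GY GZ (3,1,8)), ((0, 16), pv0), ((14, 8), pv2), ((0, 8), pv8), ((-2, 0), pv13), ((-6, 6), pv15), ((-10, 10), pv16), ((0, -1), pv21), ((1, 0), pv24), ((0, -1), pv26), ((-2, 0), pv30)] = vsmul (2, 0) pv31"
        by (simp add: pv31_def pv0_def pv2_def pv8_def pv13_def pv15_def pv16_def pv21_def pv24_def pv26_def pv30_def rowg_def tri_def upt_rec gshift_def GX_def GY_def GZ_def gdx_def gdy_def gdz_def GF_def GFl_def vadd_def vsmul_def)
    qed simp_all
  qed
  have P32: "length pv32 = 45 \<and> valr e pv32 U 0 = 0"
  proof (rule conjI)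
    show "length pv32 = 45" by (simp add: pv32_def)
    show "valr e pv32 U 0 = 0"
    proof (rule cert_step[OF he, where n=45 and c="(1, 0)" and xs="[((1, 0), rowg 4 GX GY GZ (4,1,7)), ((10, 10), pv0), ((14, -8), pv2), ((14, 8), pv8), ((2, 0), pv10), ((0, 8), pv13), ((0, 16), pv15), ((0, 28), pv16), ((-2, -2), pv21), ((2, -2), pv24), ((-2, -2), pv26), ((-3, 3), pv30), ((-3, 3), pv31)]"])
      show "\<forall>(g,r)\<in>set [((1, 0), rowg 4 GX GY GZ (4,1,7)), ((10, 10), pv0), ((14, -8), pv2), ((14, 8), pv8), ((2, 0), pv10), ((0, 8), pv13), ((0, 16), pv15), ((0, 28), pv16), ((-2, -2), pv21), ((2, -2), pv24), ((-2, -2), pv26), ((-3, 3), pv30), ((-3, 3), pv31)]. length r = 45 \<and> valr e r U 0 = 0"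
        using R P0 P2 P8 P10 P13 P15 P16 P21 P24 P26 P30 P31 by (simp add: len_rowg tbox_def)
      show "lc [((1, 0), rowg 4 GX GY GZ (4,1,7)), ((10, 10), pv0), ((14, -8), pv2), ((14, 8), pv8), ((2, 0), pv10), ((0, 8), pv13), ((0, 16), pv15), ((0, 28), pv16), ((-2, -2), pv21), ((2, -2), pv24), ((-2, -2), pv26), ((-3, 3), pv30), ((-3, 3), pv31)] = vsmul (1, 0) pv32"
        by (simp add: pv32_def pv0_def pv2_def pv8_def pv10_def pv13_def pv15_def pv16_def pv21_def pv24_def pv26_def pv30_def pv31_def rowg_def tri_def upt_rec gshift_def GX_def GY_def GZ_def gdx_def gdy_def gdz_def GF_def GFl_def vadd_def vsmul_def)
    qed simp_all
  qed
  have P33: "length pv33 = 45 \<and> valr e pv33 U 0 = 0"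
  proof (rule conjI)
    show "length pv33 = 45" by (simp add: pv33_def)
    show "valr e pv33 U 0 = 0"
    proof (rule cert_step[OF he, where n=45 and c="(1, 0)" and xs="[((1, 0), rowg 4 GX GY GZ (2,8,2)), ((21, -12), pv1), ((21, 12), pv3), ((-6, -6), pv7), ((6, -6), pv9), ((0, -8), pv17), ((0, -8), pv18), ((-1, 1), pv22), ((1, 1), pv25)]"])
      show "\<forall>(g,r)\<in>set [((1, 0), rowg 4 GX GY GZ (2,8,2)), ((21, -12), pv1), ((21, 12), pv3), ((-6, -6), pv7), ((6, -6), pv9), ((0, -8), pv17), ((0, -8), pv18), ((-1, 1), pv22), ((1, 1), pv25)]. length r = 45 \<and> valr e r U 0 = 0"
        using R P1 P3 P7 P9 P17 P18 P22 P25 by (simp add: len_rowg tbox_def)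
      show "lc [((1, 0), rowg 4 GX GY GZ (2,8,2)), ((21, -12), pv1), ((21, 12), pv3), ((-6, -6), pv7), ((6, -6), pv9), ((0, -8), pv17), ((0, -8), pv18), ((-1, 1), pv22), ((1, 1), pv25)] = vsmul (1, 0) pv33"
        by (simp add: pv33_def pv1_def pv3_def pv7_def pv9_def pv17_def pv18_def pv22_def pv25_def rowg_def tri_def upt_rec gshift_def GX_def GY_def GZ_def gdx_def gdy_def gdz_def GF_def GFl_def vadd_def vsmul_def)
    qed simp_all
  qed
  have P34: "length pv34 = 45 \<and> valr e pv34 U 0 = 0"
  proof (rule conjI)
    show "length pv34 = 45" by (simp add: pv34_def)
    show "valr e pv34 U 0 = 0"
    proof (rule cert_step[OF he, where n=45 and c="(1, 0)" and xs="[((1, 0), rowg 4 GX GY GZ (3,8,1)), ((0, -16), pv1), ((14, -8), pv3), ((0, -8), pv9), ((-2, 0), pv14), ((-6, -6), pv17), ((-10, -10), pv18), ((0, 1), pv22), ((0, 1), pv25), ((-2, 0), pv33)]"])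
      show "\<forall>(g,r)\<in>set [((1, 0), rowg 4 GX GY GZ (3,8,1)), ((0, -16), pv1), ((14, -8), pv3), ((0, -8), pv9), ((-2, 0), pv14), ((-6, -6), pv17), ((-10, -10), pv18), ((0, 1), pv22), ((0, 1), pv25), ((-2, 0), pv33)]. length r = 45 \<and> valr e r U 0 = 0"
        using R P1 P3 P9 P14 P17 P18 P22 P25 P33 by (simp add: len_rowg tbox_def)
      show "lc [((1, 0), rowg 4 GX GY GZ (3,8,1)), ((0, -16), pv1), ((14, -8), pv3), ((0, -8), pv9), ((-2, 0), pv14), ((-6, -6), pv17), ((-10, -10), pv18), ((0, 1), pv22), ((0, 1), pv25), ((-2, 0), pv33)] = vsmul (1, 0) pv34"
        by (simp add: pv34_def pv1_def pv3_def pv9_def pv14_def pv17_def pv18_def pv22_def pv25_def pv33_def rowg_def tri_def upt_rec gshift_def GX_def GY_def GZ_def gdx_def gdy_def gdz_def GF_def GFl_def vadd_def vsmul_def)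
    qed simp_all
  qed
  have P35: "length pv35 = 45 \<and> valr e pv35 U 0 = 0"
  proof (rule conjI)
    show "length pv35 = 45" by (simp add: pv35_def)
    show "valr e pv35 U 0 = 0"
    proof (rule cert_step[OF he, where n=45 and c="(1, 0)" and xs="[((3, 0), rowg 4 GX GY GZ (4,7,1)), ((30, -30), pv1), ((42, 24), pv3), ((42, -24), pv9), ((6, 0), pv11), ((0, -24), pv14), ((0, -48), pv17), ((0, -84), pv18), ((-6, 6), pv22), ((-6, 6), pv25), ((-18, 0), pv27), ((11, 0), pv28), ((1, 1), pv29), ((0, -3), pv32), ((4, 4), pv34)]"])
      show "\<forall>(g,r)\<in>set [((3, 0), rowg 4 GX GY GZ (4,7,1)), ((30, -30), pv1), ((42, 24), pv3), ((42, -24), pv9), ((6, 0), pv11), ((0, -24), pv14), ((0, -48), pv17), ((0, -84), pv18), ((-6, 6), pv22), ((-6, 6), pv25), ((-18, 0), pv27), ((11, 0), pv28), ((1, 1), pv29), ((0, -3), pv32), ((4, 4), pv34)]. length r = 45 \<and> valr e r U 0 = 0"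
        using R P1 P3 P9 P11 P14 P17 P18 P22 P25 P27 P28 P29 P32 P34 by (simp add: len_rowg tbox_def)
      show "lc [((3, 0), rowg 4 GX GY GZ (4,7,1)), ((30, -30), pv1), ((42, 24), pv3), ((42, -24), pv9), ((6, 0), pv11), ((0, -24), pv14), ((0, -48), pv17), ((0, -84), pv18), ((-6, 6), pv22), ((-6, 6), pv25), ((-18, 0), pv27), ((11, 0), pv28), ((1, 1), pv29), ((0, -3), pv32), ((4, 4), pv34)] = vsmul (1, 0) pv35"
        by (simp add: pv35_def pv1_def pv3_def pv9_def pv11_def pv14_def pv17_def pv18_def pv22_def pv25_def pv27_def pv28_def pv29_def pv32_def pv34_def rowg_def tri_def upt_rec gshift_def GX_def GY_def GZ_def gdx_def gdy_def gdz_def GF_def GFl_def vadd_def vsmul_def)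
    qed simp_all
  qed
  have P36: "length pv36 = 45 \<and> valr e pv36 U 0 = 0"
  proof (rule conjI)
    show "length pv36 = 45" by (simp add: pv36_def)
    show "valr e pv36 U 0 = 0"
    proof (rule cert_step[OF he, where n=45 and c="(2, 0)" and xs="[((2, 0), rowg 4 GX GY GZ (2,3,7)), ((0, -72), pv0), ((-56, -32), pv2), ((42, 24), pv6), ((0, -32), pv8), ((-12, 12), pv12), ((28, -16), pv15), ((14, -8), pv16), ((-3, 11), pv21), ((-12, -12), pv24), ((-4, 0), pv25), ((-3, -5), pv26), ((-2, -2), pv30), ((-10, -10), pv31)]"])
      show "\<forall>(g,r)\<in>set [((2, 0), rowg 4 GX GY GZ (2,3,7)), ((0, -72), pv0), ((-56, -32), pv2), ((42, 24), pv6), ((0, -32), pv8), ((-12, 12), pv12), ((28, -16), pv15), ((14, -8), pv16), ((-3, 11), pv21), ((-12, -12), pv24), ((-4, 0), pv25), ((-3, -5), pv26), ((-2, -2), pv30), ((-10, -10), pv31)]. length r = 45 \<and> valr e r U 0 = 0"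
        using R P0 P2 P6 P8 P12 P15 P16 P21 P24 P25 P26 P30 P31 by (simp add: len_rowg tbox_def)
      show "lc [((2, 0), rowg 4 GX GY GZ (2,3,7)), ((0, -72), pv0), ((-56, -32), pv2), ((42, 24), pv6), ((0, -32), pv8), ((-12, 12), pv12), ((28, -16), pv15), ((14, -8), pv16), ((-3, 11), pv21), ((-12, -12), pv24), ((-4, 0), pv25), ((-3, -5), pv26), ((-2, -2), pv30), ((-10, -10), pv31)] = vsmul (2, 0) pv36"
        by (simp add: pv36_def pv0_def pv2_def pv6_def pv8_def pv12_def pv15_def pv16_def pv21_def pv24_def pv25_def pv26_def pv30_def pv31_def rowg_def tri_def upt_rec gshift_def GX_def GY_def GZ_def gdx_def gdy_def gdz_def GF_def GFl_def vadd_def vsmul_def)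
    qed simp_all
  qed
  have P37: "length pv37 = 45 \<and> valr e pv37 U 0 = 0"
  proof (rule conjI)
    show "length pv37 = 45" by (simp add: pv37_def)
    show "valr e pv37 U 0 = 0"
    proof (rule cert_step[OF he, where n=45 and c="(6, 0)" and xs="[((12, 0), rowg 4 GX GY GZ (3,5,4)), ((0, -192), pv1), ((120, -120), pv3), ((0, 192), pv6), ((-336, 192), pv7), ((72, 0), pv8), ((0, -240), pv9), ((-336, -192), pv12), ((72, 0), pv13), ((-120, -120), pv14), ((72, 72), pv15), ((24, 24), pv16), ((-252, -144), pv17), ((-168, -96), pv18), ((-60, 0), pv21), ((36, 132), pv22), ((0, -240), pv24), ((36, -300), pv25), ((192, -144), pv26), ((0, 192), pv27), ((0, -64), pv28), ((20, -20), pv29), ((0, -192), pv30), ((0, -384), pv31), ((-168, -24), pv32), ((192, -264), pv33), ((214, -268), pv34), ((9, 7), pv35), ((-168, -96), pv36)]"])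
      show "\<forall>(g,r)\<in>set [((12, 0), rowg 4 GX GY GZ (3,5,4)), ((0, -192), pv1), ((120, -120), pv3), ((0, 192), pv6), ((-336, 192), pv7), ((72, 0), pv8), ((0, -240), pv9), ((-336, -192), pv12), ((72, 0), pv13), ((-120, -120), pv14), ((72, 72), pv15), ((24, 24), pv16), ((-252, -144), pv17), ((-168, -96), pv18), ((-60, 0), pv21), ((36, 132), pv22), ((0, -240), pv24), ((36, -300), pv25), ((192, -144), pv26), ((0, 192), pv27), ((0, -64), pv28), ((20, -20), pv29), ((0, -192), pv30), ((0, -384), pv31), ((-168, -24), pv32), ((192, -264), pv33), ((214, -268), pv34), ((9, 7), pv35), ((-168, -96), pv36)]. length r = 45 \<and> valr e r U 0 = 0"
        using R P1 P3 P6 P7 P8 P9 P12 P13 P14 P15 P16 P17 P18 P21 P22 P24 P25 P26 P27 P28 P29 P30 P31 P32 P33 P34 P35 P36 by (simp add: len_rowg tbox_def)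
      show "lc [((12, 0), rowg 4 GX GY GZ (3,5,4)), ((0, -192), pv1), ((120, -120), pv3), ((0, 192), pv6), ((-336, 192), pv7), ((72, 0), pv8), ((0, -240), pv9), ((-336, -192), pv12), ((72, 0), pv13), ((-120, -120), pv14), ((72, 72), pv15), ((24, 24), pv16), ((-252, -144), pv17), ((-168, -96), pv18), ((-60, 0), pv21), ((36, 132), pv22), ((0, -240), pv24), ((36, -300), pv25), ((192, -144), pv26), ((0, 192), pv27), ((0, -64), pv28), ((20, -20), pv29), ((0, -192), pv30), ((0, -384), pv31), ((-168, -24), pv32), ((192, -264), pv33), ((214, -268), pv34), ((9, 7), pv35), ((-168, -96), pv36)] = vsmul (6, 0) pv37"
        by (simp add: pv37_def pv1_def pv3_def pv6_def pv7_def pv8_def pv9_def pv12_def pv13_def pv14_def pv15_def pv16_def pv17_def pv18_def pv21_def pv22_def pv24_def pv25_def pv26_def pv27_def pv28_def pv29_def pv30_def pv31_def pv32_def pv33_def pv34_def pv35_def pv36_def rowg_def tri_def upt_rec gshift_def GX_def GY_def GZ_def gdx_def gdy_def gdz_def GF_def GFl_def vadd_def vsmul_def)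
    qed simp_all
  qed
  have P38: "length pv38 = 45 \<and> valr e pv38 U 0 = 0"
  proof (rule conjI)
    show "length pv38 = 45" by (simp add: pv38_def)
    show "valr e pv38 U 0 = 0"
    proof (rule cert_step[OF he, where n=45 and c="(6, 0)" and xs="[((23190, 0), rowg 4 GX GY GZ (2,7,3)), ((0, 834840), pv1), ((-649320, 371040), pv3), ((486990, -278280), pv7), ((0, 371040), pv9), ((139140, 139140), pv12), ((324660, 185520), pv17), ((162330, 92760), pv18), ((-34785, -127545), pv22), ((-34785, 57975), pv25), ((-46380, 0), pv26), ((46380, -46380), pv33), ((7730, -7730), pv34), ((0, 7730), pv35), ((23190, 0), pv36), ((-324, -672), pv37)]"])
      show "\<forall>(g,r)\<in>set [((23190, 0), rowg 4 GX GY GZ (2,7,3)), ((0, 834840), pv1), ((-649320, 371040), pv3), ((486990, -278280), pv7), ((0, 371040), pv9), ((139140, 139140), pv12), ((324660, 185520), pv17), ((162330, 92760), pv18), ((-34785, -127545), pv22), ((-34785, 57975), pv25), ((-46380, 0), pv26), ((46380, -46380), pv33), ((7730, -7730), pv34), ((0, 7730), pv35), ((23190, 0), pv36), ((-324, -672), pv37)]. length r = 45 \<and> valr e r U 0 = 0"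
        using R P1 P3 P7 P9 P12 P17 P18 P22 P25 P26 P33 P34 P35 P36 P37 by (simp add: len_rowg tbox_def)
      show "lc [((23190, 0), rowg 4 GX GY GZ (2,7,3)), ((0, 834840), pv1), ((-649320, 371040), pv3), ((486990, -278280), pv7), ((0, 371040), pv9), ((139140, 139140), pv12), ((324660, 185520), pv17), ((162330, 92760), pv18), ((-34785, -127545), pv22), ((-34785, 57975), pv25), ((-46380, 0), pv26), ((46380, -46380), pv33), ((7730, -7730), pv34), ((0, 7730), pv35), ((23190, 0), pv36), ((-324, -672), pv37)] = vsmul (6, 0) pv38"
        by (simp add: pv38_def pv1_def pv3_def pv7_def pv9_def pv12_def pv17_def pv18_def pv22_def pv25_def pv26_def pv33_def pv34_def pv35_def pv36_def pv37_def rowg_def tri_def upt_rec gshift_def GX_def GY_def GZ_def gdx_def gdy_def gdz_def GF_def GFl_def vadd_def vsmul_def)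
    qed simp_all
  qed
  have P39: "length pv39 = 45 \<and> valr e pv39 U 0 = 0"
  proof (rule conjI)
    show "length pv39 = 45" by (simp add: pv39_def)
    show "valr e pv39 U 0 = 0"
    proof (rule cert_step[OF he, where n=45 and c="(3865, 0)" and xs="[((1870304420, 0), rowg 4 GX GY GZ (3,2,7)), ((52368523760, -29924870720), pv0), ((0, -67330959120), pv2), ((0, 29924870720), pv6), ((39276392820, -22443653040), pv8), ((11221826520, 11221826520), pv13), ((39276392820, 22443653040), pv15), ((52368523760, 29924870720), pv16), ((-10286674310, 2805456630), pv21), ((0, -14962435360), pv24), ((935152210, -8416369890), pv26), ((0, 3740608840), pv30), ((0, -3740608840), pv31), ((-3740608840, 0), pv32), ((-3740608840, 0), pv36), ((-114444242, 5081034), pv37), ((-396608, -104245), pv38)]"])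
      show "\<forall>(g,r)\<in>set [((1870304420, 0), rowg 4 GX GY GZ (3,2,7)), ((52368523760, -29924870720), pv0), ((0, -67330959120), pv2), ((0, 29924870720), pv6), ((39276392820, -22443653040), pv8), ((11221826520, 11221826520), pv13), ((39276392820, 22443653040), pv15), ((52368523760, 29924870720), pv16), ((-10286674310, 2805456630), pv21), ((0, -14962435360), pv24), ((935152210, -8416369890), pv26), ((0, 3740608840), pv30), ((0, -3740608840), pv31), ((-3740608840, 0), pv32), ((-3740608840, 0), pv36), ((-114444242, 5081034), pv37), ((-396608, -104245), pv38)]. length r = 45 \<and> valr e r U 0 = 0"
        using R P0 P2 P6 P8 P13 P15 P16 P21 P24 P26 P30 P31 P32 P36 P37 P38 by (simp add: len_rowg tbox_def)
      show "lc [((1870304420, 0), rowg 4 GX GY GZ (3,2,7)), ((52368523760, -29924870720), pv0), ((0, -67330959120), pv2), ((0, 29924870720), pv6), ((39276392820, -22443653040), pv8), ((11221826520, 11221826520), pv13), ((39276392820, 22443653040), pv15), ((52368523760, 29924870720), pv16), ((-10286674310, 2805456630), pv21), ((0, -14962435360), pv24), ((935152210, -8416369890), pv26), ((0, 3740608840), pv30), ((0, -3740608840), pv31), ((-3740608840, 0), pv32), ((-3740608840, 0), pv36), ((-114444242, 5081034), pv37), ((-396608, -104245), pv38)] = vsmul (3865, 0) pv39"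
        by (simp add: pv39_def pv0_def pv2_def pv6_def pv8_def pv13_def pv15_def pv16_def pv21_def pv24_def pv26_def pv30_def pv31_def pv32_def pv36_def pv37_def pv38_def rowg_def tri_def upt_rec gshift_def GX_def GY_def GZ_def gdx_def gdy_def gdz_def GF_def GFl_def vadd_def vsmul_def)
    qed simp_all
  qed
  have P40: "length pv40 = 45 \<and> valr e pv40 U 0 = 0"
  proof (rule conjI)
    show "length pv40 = 45" by (simp add: pv40_def)
    show "valr e pv40 U 0 = 0"
    proof (rule cert_step[OF he, where n=45 and c="(374060884, 0)" and xs="[((4408051286234460, 0), rowg 4 GX GY GZ (7,3,2)), ((123425436014564880, -70528820579751360), pv4), ((0, -158689846304440560), pv5), ((0, -70528820579751360), pv10), ((92569077010923660, -52896615434813520), pv11), ((-26448307717406760, -26448307717406760), pv14), ((92569077010923660, 52896615434813520), pv19), ((-123425436014564880, -70528820579751360), pv20), ((24244282074289530, -6612076929351690), pv23), ((0, 35264410289875680), pv27), ((0, -11754803429958560), pv28), ((1469350428744820, -1469350428744820), pv29), ((-19836230788055070, 2204025643117230), pv32), ((0, -26448307717406760), pv33), ((-734675214372410, -24978957288661940), pv34), ((1836688035931025, 1102012821558615), pv35), ((-26448307717406760, 0), pv36), ((-1131951074149470, 427689322726500), pv37), ((-1755648460467, -514345283079), pv38), ((-24497349391, -36201847933), pv39)]"])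
      show "\<forall>(g,r)\<in>set [((4408051286234460, 0), rowg 4 GX GY GZ (7,3,2)), ((123425436014564880, -70528820579751360), pv4), ((0, -158689846304440560), pv5), ((0, -70528820579751360), pv10), ((92569077010923660, -52896615434813520), pv11), ((-26448307717406760, -26448307717406760), pv14), ((92569077010923660, 52896615434813520), pv19), ((-123425436014564880, -70528820579751360), pv20), ((24244282074289530, -6612076929351690), pv23), ((0, 35264410289875680), pv27), ((0, -11754803429958560), pv28), ((1469350428744820, -1469350428744820), pv29), ((-19836230788055070, 2204025643117230), pv32), ((0, -26448307717406760), pv33), ((-734675214372410, -24978957288661940), pv34), ((1836688035931025, 1102012821558615), pv35), ((-26448307717406760, 0), pv36), ((-1131951074149470, 427689322726500), pv37), ((-1755648460467, -514345283079), pv38), ((-24497349391, -36201847933), pv39)]. length r = 45 \<and> valr e r U 0 = 0"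
        using R P4 P5 P10 P11 P14 P19 P20 P23 P27 P28 P29 P32 P33 P34 P35 P36 P37 P38 P39 by (simp add: len_rowg tbox_def)
      show "lc [((4408051286234460, 0), rowg 4 GX GY GZ (7,3,2)), ((123425436014564880, -70528820579751360), pv4), ((0, -158689846304440560), pv5), ((0, -70528820579751360), pv10), ((92569077010923660, -52896615434813520), pv11), ((-26448307717406760, -26448307717406760), pv14), ((92569077010923660, 52896615434813520), pv19), ((-123425436014564880, -70528820579751360), pv20), ((24244282074289530, -6612076929351690), pv23), ((0, 35264410289875680), pv27), ((0, -11754803429958560), pv28), ((1469350428744820, -1469350428744820), pv29), ((-19836230788055070, 2204025643117230), pv32), ((0, -26448307717406760), pv33), ((-734675214372410, -24978957288661940), pv34), ((1836688035931025, 1102012821558615), pv35), ((-26448307717406760, 0), pv36), ((-1131951074149470, 427689322726500), pv37), ((-1755648460467, -514345283079), pv38), ((-24497349391, -36201847933), pv39)] = vsmul (374060884, 0) pv40"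
        by (simp add: pv40_def pv4_def pv5_def pv10_def pv11_def pv14_def pv19_def pv20_def pv23_def pv27_def pv28_def pv29_def pv32_def pv33_def pv34_def pv35_def pv36_def pv37_def pv38_def pv39_def rowg_def tri_def upt_rec gshift_def GX_def GY_def GZ_def gdx_def gdy_def gdz_def GF_def GFl_def vadd_def vsmul_def)
    qed simp_all
  qed
  have P41: "length pv41 = 45 \<and> valr e pv41 U 0 = 0"
  proof (rule conjI)
    show "length pv41 = 45" by (simp add: pv41_def)
    show "valr e pv41 U 0 = 0"
    proof (rule cert_step[OF he, where n=45 and c="(79344923152220280, 0)" and xs="[((620950979425478772202680, 0), rowg 4 GX GY GZ (3,7,2)), ((17386627423913405621675040, 9935215670807660355242880), pv1), ((0, 22354235259317235799296480), pv3), ((0, -9935215670807660355242880), pv7), ((13039970567935054216256280, 7451411753105745266432160), pv9), ((3725705876552872633216080, -3725705876552872633216080), pv14), ((13039970567935054216256280, -7451411753105745266432160), pv17), ((17386627423913405621675040, -9935215670807660355242880), pv18), ((-3415230386840133247114740, -931426469138218158304020), pv22), ((310475489712739386101340, 2794279407414654474912060), pv25), ((-3725705876552872633216080, 0), pv27), ((2069836598084929240675600, 0), pv28), ((258729574760616155084450, 258729574760616155084450), pv29), ((620950979425478772202680, -620950979425478772202680), pv32), ((4657132345691090791520100, -310475489712739386101340), pv33), ((4398402770930474636435650, 1500631533611573699489810), pv34), ((-310475489712739386101340, 206983659808492924067560), pv35), ((1241901958850957544405360, 0), pv36), ((24982633195514087730276, -28677813668162473696812), pv37), ((-98772074658065061381,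 30400895277006578145), pv38), ((1278821286597981849, 762765255543038437), pv39), ((9187594032256724, -681574840492864), pv40)]"])
      show "\<forall>(g,r)\<in>set [((620950979425478772202680, 0), rowg 4 GX GY GZ (3,7,2)), ((17386627423913405621675040, 9935215670807660355242880), pv1), ((0, 22354235259317235799296480), pv3), ((0, -9935215670807660355242880), pv7), ((13039970567935054216256280, 7451411753105745266432160), pv9), ((3725705876552872633216080, -3725705876552872633216080), pv14), ((13039970567935054216256280, -7451411753105745266432160), pv17), ((17386627423913405621675040, -9935215670807660355242880), pv18), ((-3415230386840133247114740, -931426469138218158304020), pv22), ((310475489712739386101340, 2794279407414654474912060), pv25), ((-3725705876552872633216080, 0), pv27), ((2069836598084929240675600, 0), pv28), ((258729574760616155084450, 258729574760616155084450), pv29), ((620950979425478772202680, -620950979425478772202680), pv32), ((4657132345691090791520100, -310475489712739386101340), pv33), ((4398402770930474636435650, 1500631533611573699489810), pv34), ((-310475489712739386101340, 206983659808492924067560), pv35), ((1241901958850957544405360, 0), pv36), ((24982633195514087730276, -28677813668162473696812), pv37), ((-98772074658065061381, 30400895277006578145), pv38), ((1278821286597981849, 762765255543038437), pv39), ((9187594032256724, -681574840492864), pv40)]. length r = 45 \<and> valr e r U 0 = 0"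
        using R P1 P3 P7 P9 P14 P17 P18 P22 P25 P27 P28 P29 P32 P33 P34 P35 P36 P37 P38 P39 P40 by (simp add: len_rowg tbox_def)
      show "lc [((620950979425478772202680, 0), rowg 4 GX GY GZ (3,7,2)), ((17386627423913405621675040, 9935215670807660355242880), pv1), ((0, 22354235259317235799296480), pv3), ((0, -9935215670807660355242880), pv7), ((13039970567935054216256280, 7451411753105745266432160), pv9), ((3725705876552872633216080, -3725705876552872633216080), pv14), ((13039970567935054216256280, -7451411753105745266432160), pv17), ((17386627423913405621675040, -9935215670807660355242880), pv18), ((-3415230386840133247114740, -931426469138218158304020), pv22), ((310475489712739386101340, 2794279407414654474912060), pv25), ((-3725705876552872633216080, 0), pv27), ((2069836598084929240675600, 0), pv28), ((258729574760616155084450, 258729574760616155084450), pv29), ((620950979425478772202680, -620950979425478772202680), pv32), ((4657132345691090791520100, -310475489712739386101340), pv33), ((4398402770930474636435650, 1500631533611573699489810), pv34), ((-310475489712739386101340, 206983659808492924067560), pv35), ((1241901958850957544405360, 0), pv36), ((24982633195514087730276, -28677813668162473696812), pv37), ((-98772074658065061381, 30400895277006578145), pv38), ((1278821286597981849, 762765255543038437), pv39), ((9187594032256724, -681574840492864), pv40)] = vsmul (79344923152220280, 0) pv41"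
        by (simp add: pv41_def pv1_def pv3_def pv7_def pv9_def pv14_def pv17_def pv18_def pv22_def pv25_def pv27_def pv28_def pv29_def pv32_def pv33_def pv34_def pv35_def pv36_def pv37_def pv38_def pv39_def pv40_def rowg_def tri_def upt_rec gshift_def GX_def GY_def GZ_def gdx_def gdy_def gdz_def GF_def GFl_def vadd_def vsmul_def)
    qed simp_all
  qed
  have P42: "length pv42 = 45 \<and> valr e pv42 U 0 = 0"
  proof (rule conjI)
    show "length pv42 = 45" by (simp add: pv42_def)
    show "valr e pv42 U 0 = 0"
    proof (rule cert_step[OF he, where n=45 and c="(5588558814829308949824120, 0)" and xs="[((591546777221254363163180392620, 0), rowg 4 GX GY GZ (2,4,6)), ((-12422482321646341626426788245020, 7098561326655052357958164711440), pv0), ((0, 11830935544425087263263607852400), pv2), ((0, -21295683979965157073874494134320), pv6), ((3549280663327526178979082355720, -3549280663327526178979082355720), pv7), ((-5915467772212543631631803926200, 5915467772212543631631803926200), pv8), ((12422482321646341626426788245020, 7098561326655052357958164711440), pv12), ((-8281654881097561084284525496680, -4732374217770034905305443140960), pv15), ((1183093554442508726326360785240, 0), pv17), ((-1183093554442508726326360785240, 0), pv18), ((4880260912075348496096238239115, -1330980248747822317117155883395), pv21), ((-739433471526567953953975490775, -739433471526567953953975490775), pv22), ((0, 9464748435540069810610886281920), pv24), ((-739433471526567953953975490775, 3992940746243466951351467650185), pv25), ((-3401393969022212588188287257565, 3401393969022212588188287257565), pv26), ((0, 4732374217770034905305443140960), pv30), ((0, 11830935544425087263263607852400), pv31), ((591546777221254363163180392620,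 0), pv33), ((394364518147502908775453595080, 0), pv34), ((-197182259073751454387726797540, 197182259073751454387726797540), pv35), ((1183093554442508726326360785240, 1183093554442508726326360785240), pv36), ((-8264819138408211024789583752, -17141847101883696940304321856), pv37), ((-102403801812370184993771892, -71454177933382279670332698), pv38), ((403069386878383308708638, -1252857643352986378946056), pv39), ((21540339566919068666108, -35659231065737218842708), pv40), ((-221592279721672535816160, 363292870425682841682840), pv41)]"])
      show "\<forall>(g,r)\<in>set [((591546777221254363163180392620, 0), rowg 4 GX GY GZ (2,4,6)), ((-12422482321646341626426788245020, 7098561326655052357958164711440), pv0), ((0, 11830935544425087263263607852400), pv2), ((0, -21295683979965157073874494134320), pv6), ((3549280663327526178979082355720, -3549280663327526178979082355720), pv7), ((-5915467772212543631631803926200, 5915467772212543631631803926200), pv8), ((12422482321646341626426788245020, 7098561326655052357958164711440), pv12), ((-8281654881097561084284525496680, -4732374217770034905305443140960), pv15), ((1183093554442508726326360785240, 0), pv17), ((-1183093554442508726326360785240, 0), pv18), ((4880260912075348496096238239115, -1330980248747822317117155883395), pv21), ((-739433471526567953953975490775, -739433471526567953953975490775), pv22), ((0, 9464748435540069810610886281920), pv24), ((-739433471526567953953975490775, 3992940746243466951351467650185), pv25), ((-3401393969022212588188287257565, 3401393969022212588188287257565), pv26), ((0, 4732374217770034905305443140960), pv30), ((0, 11830935544425087263263607852400), pv31), ((591546777221254363163180392620, 0), pv33), ((394364518147502908775453595080, 0), pv34), ((-197182259073751454387726797540, 197182259073751454387726797540), pv35), ((1183093554442508726326360785240, 1183093554442508726326360785240),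 pv36), ((-8264819138408211024789583752, -17141847101883696940304321856), pv37), ((-102403801812370184993771892, -71454177933382279670332698), pv38), ((403069386878383308708638, -1252857643352986378946056), pv39), ((21540339566919068666108, -35659231065737218842708), pv40), ((-221592279721672535816160, 363292870425682841682840), pv41)]. length r = 45 \<and> valr e r U 0 = 0"
        using R P0 P2 P6 P7 P8 P12 P15 P17 P18 P21 P22 P24 P25 P26 P30 P31 P33 P34 P35 P36 P37 P38 P39 P40 P41 by (simp add: len_rowg tbox_def)
      show "lc [((591546777221254363163180392620, 0), rowg 4 GX GY GZ (2,4,6)), ((-12422482321646341626426788245020, 7098561326655052357958164711440), pv0), ((0, 11830935544425087263263607852400), pv2), ((0, -21295683979965157073874494134320), pv6), ((3549280663327526178979082355720, -3549280663327526178979082355720), pv7), ((-5915467772212543631631803926200, 5915467772212543631631803926200), pv8), ((12422482321646341626426788245020, 7098561326655052357958164711440), pv12), ((-8281654881097561084284525496680, -4732374217770034905305443140960), pv15), ((1183093554442508726326360785240, 0), pv17), ((-1183093554442508726326360785240, 0), pv18), ((4880260912075348496096238239115, -1330980248747822317117155883395), pv21), ((-739433471526567953953975490775, -739433471526567953953975490775), pv22), ((0, 9464748435540069810610886281920), pv24), ((-739433471526567953953975490775, 3992940746243466951351467650185), pv25), ((-3401393969022212588188287257565, 3401393969022212588188287257565), pv26), ((0, 4732374217770034905305443140960), pv30), ((0, 11830935544425087263263607852400), pv31), ((591546777221254363163180392620, 0), pv33), ((394364518147502908775453595080, 0), pv34), ((-197182259073751454387726797540, 197182259073751454387726797540), pv35),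 ((1183093554442508726326360785240, 1183093554442508726326360785240), pv36), ((-8264819138408211024789583752, -17141847101883696940304321856), pv37), ((-102403801812370184993771892, -71454177933382279670332698), pv38), ((403069386878383308708638, -1252857643352986378946056), pv39), ((21540339566919068666108, -35659231065737218842708), pv40), ((-221592279721672535816160, 363292870425682841682840), pv41)] = vsmul (5588558814829308949824120, 0) pv42"
        by (simp add: pv42_def pv0_def pv2_def pv6_def pv7_def pv8_def pv12_def pv15_def pv17_def pv18_def pv21_def pv22_def pv24_def pv25_def pv26_def pv30_def pv31_def pv33_def pv34_def pv35_def pv36_def pv37_def pv38_def pv39_def pv40_def pv41_def rowg_def tri_def upt_rec gshift_def GX_def GY_def GZ_def gdx_def gdy_def gdz_def GF_def GFl_def vadd_def vsmul_def)
    qed simp_all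
  qed
  have P43: "length pv43 = 45 \<and> valr e pv43 U 0 = 0"
  proof (rule conjI)
    show "length pv43 = 45" by (simp add: pv43_def)
    show "valr e pv43 U 0 = 0"
    proof (rule cert_step[OF he, where n=45 and c="(2129568397996515707387449413432, 0)" and xs="[((242534178660714288896903960974200, 0), rowg 4 GX GY GZ (4,6,2)), ((0, 4850683573214285777938079219484000), pv1), ((-5093217751875000066834983180458200, 2910410143928571466762847531690400), pv3), ((2425341786607142888969039609742000, -2425341786607142888969039609742000), pv7), ((0, 8731230431785714400288542595071200), pv9), ((-1455205071964285733381423765845200, 1455205071964285733381423765845200), pv11), ((5093217751875000066834983180458200, 2910410143928571466762847531690400), pv14), ((6790957002500000089113310907277600, 3880546858571428622350463375587200), pv17), ((10186435503750000133669966360916400, 5820820287857142933525695063380800), pv18), ((-1455205071964285733381423765845200, 0), pv19), ((2425341786607142888969039609742000, 0), pv20), ((-545701901986607150018033912191950, -2000906973950892883399457678037150), pv22), ((-303167723325892861121129951217750, 303167723325892861121129951217750), pv23), ((-545701901986607150018033912191950, 1879639884620535738951005697550050), pv25), ((0, -4850683573214285777938079219484000), pv27), ((0, 2587031239047619081566975583724800), pv28), ((-323378904880952385195871947965600, 323378904880952385195871947965600), pv29), ((2122174063281250027847909658524250, 1273304437968750016708745795114550), pv32), ((-727602535982142866690711882922600, 2910410143928571466762847531690400), pv33), ((-1536049798184523829680391752836600, 3233789048809523851958719479656000), pv34), ((-121267089330357144448451980487100, -202111815550595240747419967478500), pv35), ((1455205071964285733381423765845200, 1455205071964285733381423765845200),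 pv36), ((88604983251986694934651589364960, 26575219835139068912765543977380), pv37), ((48984902497122992868232236225, 40447921878871123591812583395), pv38), ((731093762473215851136889995, 390302646584186177067387135), pv39), ((-869520680045790376244940, 17003362405727614102400760), pv40), ((-219293755288932807296605800, -155854675261033099944375600), pv41), ((-1804545641308383859898208348, -119036302755864280631253756), pv42)]"])
      show "\<forall>(g,r)\<in>set [((242534178660714288896903960974200, 0), rowg 4 GX GY GZ (4,6,2)), ((0, 4850683573214285777938079219484000), pv1), ((-5093217751875000066834983180458200, 2910410143928571466762847531690400), pv3), ((2425341786607142888969039609742000, -2425341786607142888969039609742000), pv7), ((0, 8731230431785714400288542595071200), pv9), ((-1455205071964285733381423765845200, 1455205071964285733381423765845200), pv11), ((5093217751875000066834983180458200, 2910410143928571466762847531690400), pv14), ((6790957002500000089113310907277600, 3880546858571428622350463375587200), pv17), ((10186435503750000133669966360916400, 5820820287857142933525695063380800), pv18), ((-1455205071964285733381423765845200, 0), pv19), ((2425341786607142888969039609742000, 0), pv20), ((-545701901986607150018033912191950, -2000906973950892883399457678037150), pv22), ((-303167723325892861121129951217750, 303167723325892861121129951217750), pv23), ((-545701901986607150018033912191950, 1879639884620535738951005697550050), pv25), ((0, -4850683573214285777938079219484000), pv27), ((0, 2587031239047619081566975583724800), pv28), ((-323378904880952385195871947965600, 323378904880952385195871947965600), pv29), ((2122174063281250027847909658524250, 1273304437968750016708745795114550), pv32), ((-727602535982142866690711882922600, 2910410143928571466762847531690400), pv33), ((-1536049798184523829680391752836600, 3233789048809523851958719479656000), pv34), ((-121267089330357144448451980487100,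 -202111815550595240747419967478500), pv35), ((1455205071964285733381423765845200, 1455205071964285733381423765845200), pv36), ((88604983251986694934651589364960, 26575219835139068912765543977380), pv37), ((48984902497122992868232236225, 40447921878871123591812583395), pv38), ((731093762473215851136889995, 390302646584186177067387135), pv39), ((-869520680045790376244940, 17003362405727614102400760), pv40), ((-219293755288932807296605800, -155854675261033099944375600), pv41), ((-1804545641308383859898208348, -119036302755864280631253756), pv42)]. length r = 45 \<and> valr e r U 0 = 0"
        using R P1 P3 P7 P9 P11 P14 P17 P18 P19 P20 P22 P23 P25 P27 P28 P29 P32 P33 P34 P35 P36 P37 P38 P39 P40 P41 P42 by (simp add: len_rowg tbox_def)
      show "lc [((242534178660714288896903960974200, 0), rowg 4 GX GY GZ (4,6,2)), ((0, 4850683573214285777938079219484000), pv1), ((-5093217751875000066834983180458200, 2910410143928571466762847531690400), pv3), ((2425341786607142888969039609742000, -2425341786607142888969039609742000), pv7), ((0, 8731230431785714400288542595071200), pv9), ((-1455205071964285733381423765845200, 1455205071964285733381423765845200), pv11), ((5093217751875000066834983180458200, 2910410143928571466762847531690400), pv14), ((6790957002500000089113310907277600, 3880546858571428622350463375587200), pv17), ((10186435503750000133669966360916400, 5820820287857142933525695063380800), pv18), ((-1455205071964285733381423765845200, 0), pv19), ((2425341786607142888969039609742000, 0), pv20), ((-545701901986607150018033912191950, -2000906973950892883399457678037150), pv22), ((-303167723325892861121129951217750, 303167723325892861121129951217750), pv23), ((-545701901986607150018033912191950, 1879639884620535738951005697550050), pv25), ((0, -4850683573214285777938079219484000), pv27),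 ((0, 2587031239047619081566975583724800), pv28), ((-323378904880952385195871947965600, 323378904880952385195871947965600), pv29), ((2122174063281250027847909658524250, 1273304437968750016708745795114550), pv32), ((-727602535982142866690711882922600, 2910410143928571466762847531690400), pv33), ((-1536049798184523829680391752836600, 3233789048809523851958719479656000), pv34), ((-121267089330357144448451980487100, -202111815550595240747419967478500), pv35), ((1455205071964285733381423765845200, 1455205071964285733381423765845200), pv36), ((88604983251986694934651589364960, 26575219835139068912765543977380), pv37), ((48984902497122992868232236225, 40447921878871123591812583395), pv38), ((731093762473215851136889995, 390302646584186177067387135), pv39), ((-869520680045790376244940, 17003362405727614102400760), pv40), ((-219293755288932807296605800, -155854675261033099944375600), pv41), ((-1804545641308383859898208348, -119036302755864280631253756), pv42)] = vsmul (2129568397996515707387449413432, 0) pv43"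
        by (simp add: pv43_def pv1_def pv3_def pv7_def pv9_def pv11_def pv14_def pv17_def pv18_def pv19_def pv20_def pv22_def pv23_def pv25_def pv27_def pv28_def pv29_def pv32_def pv33_def pv34_def pv35_def pv36_def pv37_def pv38_def pv39_def pv40_def pv41_def pv42_def rowg_def tri_def upt_rec gshift_def GX_def GY_def GZ_def gdx_def gdy_def gdz_def GF_def GFl_def vadd_def vsmul_def)
    qed simp_all
  qed
  have P44: "length pv44 = 45 \<and> valr e pv44 U 0 = 0"
  proof (rule conjI)
    show "length pv44 = 45" by (simp add: pv44_def)
    show "valr e pv44 U 0 = 0"
    proof (rule cert_step[OF he, where n=45 and c="(235979200859073362169960610677600, 0)" and xs="[((242534178660714288896903960974200, 0), rowg 4 GX GY GZ (3,3,6)), ((-6790957002500000089113310907277600, -3880546858571428622350463375587200), pv0), ((-6790957002500000089113310907277600, 3880546858571428622350463375587200), pv2), ((6790957002500000089113310907277600, -3880546858571428622350463375587200), pv6), ((-6790957002500000089113310907277600, -3880546858571428622350463375587200), pv8), ((0, 3880546858571428622350463375587200), pv12), ((0, -3880546858571428622350463375587200), pv13), ((0, -8731230431785714400288542595071200), pv15), ((0, -8731230431785714400288542595071200), pv16), ((2182807607946428600072135648767800, 2182807607946428600072135648767800), pv21), ((-5093217751875000066834983180458200, 2910410143928571466762847531690400), pv24), ((-1455205071964285733381423765845200, 1455205071964285733381423765845200), pv25), ((-2910410143928571466762847531690400, -727602535982142866690711882922600), pv26), ((485068357321428577793807921948400, 0), pv27), ((161689452440476192597935973982800, 0), pv28),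 ((-101055907775297620373709983739250, -101055907775297620373709983739250), pv29), ((-1697739250625000022278327726819400, 970136714642857155587615843896800), pv30), ((-5093217751875000066834983180458200, 2910410143928571466762847531690400), pv31), ((242534178660714288896903960974200, 1697739250625000022278327726819400), pv32), ((-1333937982633928588932971785358100, -1819006339955357166726779707306500), pv33), ((-1273304437968750016708745795114550, -1717950432180059546353069723567250), pv34), ((101055907775297620373709983739250, 101055907775297620373709983739250), pv35), ((0, 1940273429285714311175231687793600), pv36), ((-6024134838661984924735518823680, 54876103295936518923762616784460), pv37), ((-94872162102102356745829464825, 171458213645490087571369671765), pv38), ((1021251825919113882538839485, 1732134953726013859913330505), pv39), ((20145496965780660798953980, -31699690328959506851696920), pv40), ((12050369366504859834003000, 273092409697954657140374400), pv41), ((-3723097882439285622372828744, -563885584416277273037253708), pv42), ((-2043234544023683989520390653428, -4805917871154298961266270973556), pv43)]"])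
      show "\<forall>(g,r)\<in>set [((242534178660714288896903960974200, 0), rowg 4 GX GY GZ (3,3,6)), ((-6790957002500000089113310907277600, -3880546858571428622350463375587200), pv0), ((-6790957002500000089113310907277600, 3880546858571428622350463375587200), pv2), ((6790957002500000089113310907277600, -3880546858571428622350463375587200), pv6), ((-6790957002500000089113310907277600, -3880546858571428622350463375587200), pv8), ((0, 3880546858571428622350463375587200), pv12), ((0, -3880546858571428622350463375587200), pv13), ((0, -8731230431785714400288542595071200), pv15), ((0, -8731230431785714400288542595071200), pv16), ((2182807607946428600072135648767800, 2182807607946428600072135648767800), pv21), ((-5093217751875000066834983180458200, 2910410143928571466762847531690400), pv24), ((-1455205071964285733381423765845200, 1455205071964285733381423765845200), pv25), ((-2910410143928571466762847531690400, -727602535982142866690711882922600), pv26), ((485068357321428577793807921948400, 0), pv27), ((161689452440476192597935973982800, 0), pv28), ((-101055907775297620373709983739250, -101055907775297620373709983739250), pv29), ((-1697739250625000022278327726819400, 970136714642857155587615843896800), pv30), ((-5093217751875000066834983180458200, 2910410143928571466762847531690400), pv31), ((242534178660714288896903960974200, 1697739250625000022278327726819400), pv32), ((-1333937982633928588932971785358100, -1819006339955357166726779707306500), pv33), ((-1273304437968750016708745795114550, -1717950432180059546353069723567250), pv34), ((101055907775297620373709983739250, 101055907775297620373709983739250), pv35), ((0, 1940273429285714311175231687793600), pv36), ((-6024134838661984924735518823680, 54876103295936518923762616784460), pv37), ((-94872162102102356745829464825, 171458213645490087571369671765), pv38), ((1021251825919113882538839485, 1732134953726013859913330505), pv39), ((20145496965780660798953980,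 -31699690328959506851696920), pv40), ((12050369366504859834003000, 273092409697954657140374400), pv41), ((-3723097882439285622372828744, -563885584416277273037253708), pv42), ((-2043234544023683989520390653428, -4805917871154298961266270973556), pv43)]. length r = 45 \<and> valr e r U 0 = 0"
        using R P0 P2 P6 P8 P12 P13 P15 P16 P21 P24 P25 P26 P27 P28 P29 P30 P31 P32 P33 P34 P35 P36 P37 P38 P39 P40 P41 P42 P43 by (simp add: len_rowg tbox_def)
      show "lc [((242534178660714288896903960974200, 0), rowg 4 GX GY GZ (3,3,6)), ((-6790957002500000089113310907277600, -3880546858571428622350463375587200), pv0), ((-6790957002500000089113310907277600, 3880546858571428622350463375587200), pv2), ((6790957002500000089113310907277600, -3880546858571428622350463375587200), pv6), ((-6790957002500000089113310907277600, -3880546858571428622350463375587200), pv8), ((0, 3880546858571428622350463375587200), pv12), ((0, -3880546858571428622350463375587200), pv13), ((0, -8731230431785714400288542595071200), pv15), ((0, -8731230431785714400288542595071200), pv16), ((2182807607946428600072135648767800, 2182807607946428600072135648767800), pv21), ((-5093217751875000066834983180458200, 2910410143928571466762847531690400), pv24), ((-1455205071964285733381423765845200, 1455205071964285733381423765845200), pv25), ((-2910410143928571466762847531690400, -727602535982142866690711882922600), pv26), ((485068357321428577793807921948400, 0), pv27), ((161689452440476192597935973982800, 0), pv28), ((-101055907775297620373709983739250, -101055907775297620373709983739250), pv29), ((-1697739250625000022278327726819400, 970136714642857155587615843896800), pv30), ((-5093217751875000066834983180458200, 2910410143928571466762847531690400), pv31), ((242534178660714288896903960974200, 1697739250625000022278327726819400),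 pv32), ((-1333937982633928588932971785358100, -1819006339955357166726779707306500), pv33), ((-1273304437968750016708745795114550, -1717950432180059546353069723567250), pv34), ((101055907775297620373709983739250, 101055907775297620373709983739250), pv35), ((0, 1940273429285714311175231687793600), pv36), ((-6024134838661984924735518823680, 54876103295936518923762616784460), pv37), ((-94872162102102356745829464825, 171458213645490087571369671765), pv38), ((1021251825919113882538839485, 1732134953726013859913330505), pv39), ((20145496965780660798953980, -31699690328959506851696920), pv40), ((12050369366504859834003000, 273092409697954657140374400), pv41), ((-3723097882439285622372828744, -563885584416277273037253708), pv42), ((-2043234544023683989520390653428, -4805917871154298961266270973556), pv43)] = vsmul (235979200859073362169960610677600, 0) pv44"
        by (simp add: pv44_def pv0_def pv2_def pv6_def pv8_def pv12_def pv13_def pv15_def pv16_def pv21_def pv24_def pv25_def pv26_def pv27_def pv28_def pv29_def pv30_def pv31_def pv32_def pv33_def pv34_def pv35_def pv36_def pv37_def pv38_def pv39_def pv40_def pv41_def pv42_def pv43_def rowg_def tri_def upt_rec gshift_def GX_def GY_def GZ_def gdx_def gdy_def gdz_def GF_def GFl_def vadd_def vsmul_def)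
    qed simp_all
  qed
  have Z39: "U 39 = 0" using P44  by (simp add: pv44_def toC_eq0[OF he] eval_nat_numeral)
  have Z36: "U 36 = 0" using P43 Z39 by (simp add: pv43_def toC_eq0[OF he] eval_nat_numeral)
  have Z32: "U 32 = 0" using P42 Z36 Z39 by (simp add: pv42_def toC_eq0[OF he] eval_nat_numeral)
  have Z31: "U 31 = 0" using P41 Z32 Z36 Z39 by (simp add: pv41_def toC_eq0[OF he] eval_nat_numeral)
  have Z22: "U 22 = 0" using P40 Z31 Z32 Z36 Z39 by (simp add: pv40_def toC_eq0[OF he] eval_nat_numeral)
  have Z18: "U 18 = 0" using P39 Z22 Z31 Z32 Z36 Z39 by (simp add: pv39_def toC_eq0[OF he] eval_nat_numeral)
  have Z17: "U 17 = 0" using P38 Z18 Z22 Z31 Z32 Z36 Z39 by (simp add: pv38_def toC_eq0[OF he] eval_nat_numeral)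
  have Z12: "U 12 = 0" using P37 Z17 Z18 Z31 Z32 Z36 Z39 by (simp add: pv37_def toC_eq0[OF he] eval_nat_numeral)
  have Z10: "U 10 = 0" using P36 Z12 Z17 Z18 Z22 Z31 Z32 Z36 Z39 by (simp add: pv36_def toC_eq0[OF he] eval_nat_numeral)
  have Z37: "U 37 = 0" using P35 Z12 Z17 Z18 Z31 Z32 Z39 by (simp add: pv35_def toC_eq0[OF he] eval_nat_numeral)
  have Z23: "U 23 = 0" using P34 Z37 Z17 Z18 Z31 Z32 by (simp add: pv34_def toC_eq0[OF he] eval_nat_numeral)
  have Z11: "U 11 = 0" using P33 Z23 Z37 Z17 Z18 Z31 Z32 by (simp add: pv33_def toC_eq0[OF he] eval_nat_numeral)
  have Z25: "U 25 = 0" using P32 Z12 Z17 Z18 Z31 Z32 Z39 by (simp add: pv32_def toC_eq0[OF he] eval_nat_numeral)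
  have Z9: "U 9 = 0" using P31 Z12 Z17 Z18 Z31 Z32 Z39 by (simp add: pv31_def toC_eq0[OF he] eval_nat_numeral)
  have Z35: "U 35 = 0" using P30 Z9 Z12 Z17 Z18 Z31 Z32 Z39 by (simp add: pv30_def toC_eq0[OF he] eval_nat_numeral)
  have Z13: "U 13 = 0" using P29 Z25 Z11 Z23 Z37 Z12 Z39 by (simp add: pv29_def toC_eq0[OF he] eval_nat_numeral)
  have Z40: "U 40 = 0" using P28 Z13 Z25 Z12 Z39 by (simp add: pv28_def toC_eq0[OF he] eval_nat_numeral)
  have Z26: "U 26 = 0" using P27 Z40 Z13 Z25 Z12 Z39 by (simp add: pv27_def toC_eq0[OF he] eval_nat_numeral)
  have Z6: "U 6 = 0" using P26 Z17 Z18 Z31 Z32 by (simp add: pv26_def toC_eq0[OF he] eval_nat_numeral)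
  have Z7: "U 7 = 0" using P25 Z17 Z18 Z31 Z32 by (simp add: pv25_def toC_eq0[OF he] eval_nat_numeral)
  have Z21: "U 21 = 0" using P24 Z35 Z9 Z12 Z39 by (simp add: pv24_def toC_eq0[OF he] eval_nat_numeral)
  have Z14: "U 14 = 0" using P23 Z25 Z12 Z39 by (simp add: pv23_def toC_eq0[OF he] eval_nat_numeral)
  have Z19: "U 19 = 0" using P22 Z7 Z18 Z32 by (simp add: pv22_def toC_eq0[OF he] eval_nat_numeral)
  have Z30: "U 30 = 0" using P21 Z6 Z17 Z31 by (simp add: pv21_def toC_eq0[OF he] eval_nat_numeral)
  have Z42: "U 42 = 0" using P20 Z14 by (simp add: pv20_def toC_eq0[OF he] eval_nat_numeral)
  have Z28: "U 28 = 0" using P19 Z42 Z14 by (simp add: pv19_def toC_eq0[OF he] eval_nat_numeral)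
  have Z33: "U 33 = 0" using P18 Z19 by (simp add: pv18_def toC_eq0[OF he] eval_nat_numeral)
  have Z8: "U 8 = 0" using P17 Z33 Z19 by (simp add: pv17_def toC_eq0[OF he] eval_nat_numeral)
  have Z16: "U 16 = 0" using P16 Z30 by (simp add: pv16_def toC_eq0[OF he] eval_nat_numeral)
  have Z5: "U 5 = 0" using P15 Z16 Z30 by (simp add: pv15_def toC_eq0[OF he] eval_nat_numeral)
  have Z41: "U 41 = 0" using P14  by (simp add: pv14_def toC_eq0[OF he] eval_nat_numeral)
  have Z24: "U 24 = 0" using P13  by (simp add: pv13_def toC_eq0[OF he] eval_nat_numeral)
  have Z2: "U 2 = 0" using P12  by (simp add: pv12_def toC_eq0[OF he] eval_nat_numeral)
  have Z43: "U 43 = 0" using P11  by (simp add: pv11_def toC_eq0[OF he] eval_nat_numeral)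
  have Z27: "U 27 = 0" using P10  by (simp add: pv10_def toC_eq0[OF he] eval_nat_numeral)
  have Z38: "U 38 = 0" using P9  by (simp add: pv9_def toC_eq0[OF he] eval_nat_numeral)
  have Z20: "U 20 = 0" using P8  by (simp add: pv8_def toC_eq0[OF he] eval_nat_numeral)
  have Z3: "U 3 = 0" using P7  by (simp add: pv7_def toC_eq0[OF he] eval_nat_numeral)
  have Z1: "U 1 = 0" using P6  by (simp add: pv6_def toC_eq0[OF he] eval_nat_numeral)
  have Z44: "U 44 = 0" using P5  by (simp add: pv5_def toC_eq0[OF he] eval_nat_numeral)
  have Z29: "U 29 = 0" using P4  by (simp add: pv4_def toC_eq0[OF he] eval_nat_numeral)
  have Z34: "U 34 = 0" using P3  by (simp add: pv3_def toC_eq0[OF he] eval_nat_numeral)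
  have Z15: "U 15 = 0" using P2  by (simp add: pv2_def toC_eq0[OF he] eval_nat_numeral)
  have Z4: "U 4 = 0" using P1  by (simp add: pv1_def toC_eq0[OF he] eval_nat_numeral)
  have Z0: "U 0 = 0" using P0  by (simp add: pv0_def toC_eq0[OF he] eval_nat_numeral)
  have allz: "list_all (\<lambda>j. U j = 0) [0..<45]"
    using Z0 Z1 Z2 Z3 Z4 Z5 Z6 Z7 Z8 Z9 Z10 Z11 Z12 Z13 Z14 Z15 Z16 Z17 Z18 Z19 Z20 Z21 Z22 Z23 Z24 Z25 Z26 Z27 Z28 Z29 Z30 Z31 Z32 Z33 Z34 Z35 Z36 Z37 Z38 Z39 Z40 Z41 Z42 Z43 Z44 by (simp add: upt_rec eval_nat_numeral)
  then have allz': "\<And>j. j < 45 \<Longrightarrow> U j = 0" by (simp add: list_all_iff)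
  have l15: "length (tri 4) = 15" by (simp add: tri_def upt_rec)
  have a0: "a = (\<lambda>_. 0)"
  proof
    fix t show "a t = 0"
    proof (rule ccontr)
      assume "a t \<noteq> 0"
      then have "t \<in> set (tri 4)" using ha(1) unfolding hpoly_def set_tri by (cases t) auto
      then obtain j where j: "j < 15" "tri 4 ! j = t" using l15 by (metis in_set_conv_nth)
      have "U j = a t" using j l15 by (simp add: U_def UV_def)
      then show False using allz'[of j] j \<open>a t \<noteq> 0\<close> by simp
    qed
  qed
  have b0: "b = (\<lambda>_. 0)"
  proof
    fix t show "b t = 0"
    proof (rule ccontr)
      assume "b t \<noteq> 0"
      then have "t \<in> set (tri 4)" using ha(2) unfolding hpoly_def set_tri by (cases t) auto
      then obtain j where j: "j < 15" "tri 4 ! j = t" using l15 by (metis in_set_conv_nth)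
      have "U (j + 15) = b t" using j l15 by (simp add: U_def UV_def)
      then show False using allz'[of "j + 15"] j \<open>b t \<noteq> 0\<close> by simp
    qed
  qed
  have c0: "c = (\<lambda>_. 0)"
  proof
    fix t show "c t = 0"
    proof (rule ccontr)
      assume "c t \<noteq> 0"
      then have "t \<in> set (tri 4)" using ha(3) unfolding hpoly_def set_tri by (cases t) auto
      then obtain j where j: "j < 15" "tri 4 ! j = t" using l15 by (metis in_set_conv_nth)
      have "U (j + 30) = c t" using j l15 by (simp add: U_def UV_def)
      then show False using allz'[of "j + 30"] j \<open>c t \<noteq> 0\<close> by simp
    qed
  qed
  show False using nz a0 b0 c0 by simp
qed


lemma arr_Cons: "arr_poly (l # L) p = lin l p * arr_poly L p"
  by (simp add: arr_poly_def)

fun dX :: "pt list \<Rightarrow> pt \<Rightarrow> complex" where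
  "dX [] p = 0"
| "dX (l # L) p = fst l * arr_poly L p + lin l p * dX L p"
fun dY :: "pt list \<Rightarrow> pt \<Rightarrow> complex" where
  "dY [] p = 0"
| "dY (l # L) p = fst (snd l) * arr_poly L p + lin l p * dY L p"
fun dZ :: "pt list \<Rightarrow> pt \<Rightarrow> complex" where
  "dZ [] p = 0"
| "dZ (l # L) p = snd (snd l) * arr_poly L p + lin l p * dZ L p"

lemma hasderiv_x: "((\<lambda>t. arr_poly L (t,y,z)) has_field_derivative dX L (x,y,z)) (at x)"
proof (induction L)
  case Nil then show ?case by (simp add: arr_poly_def)
next
  case (Cons l L)
  obtain l1 l2 l3 where l: "l = (l1,l2,l3)" by (cases l) auto
  have d: "((\<lambda>t. lin l (t,y,z)) has_field_derivative l1) (at x)"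
    unfolding l lin_def by (auto intro!: derivative_eq_intros)
  show ?case unfolding arr_Cons using DERIV_mult[OF d Cons] by (simp add: l mult.commute)
qed
lemma hasderiv_y: "((\<lambda>t. arr_poly L (x,t,z)) has_field_derivative dY L (x,y,z)) (at y)"
proof (induction L)
  case Nil then show ?case by (simp add: arr_poly_def)
next
  case (Cons l L)
  obtain l1 l2 l3 where l: "l = (l1,l2,l3)" by (cases l) auto
  have d: "((\<lambda>t. lin l (x,t,z)) has_field_derivative l2) (at y)"
    unfolding l lin_def by (auto intro!: derivative_eq_intros)
  show ?case unfolding arr_Cons using DERIV_mult[OF d Cons] by (simp add: l mult.commute)
qed
lemma hasderiv_z: "((\<lambda>t. arr_poly L (x,y,t)) has_field_derivative dZ L (x,y,z)) (at z)"
proof (induction L)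
  case Nil then show ?case by (simp add: arr_poly_def)
next
  case (Cons l L)
  obtain l1 l2 l3 where l: "l = (l1,l2,l3)" by (cases l) auto
  have d: "((\<lambda>t. lin l (x,y,t)) has_field_derivative l3) (at z)"
    unfolding l lin_def by (auto intro!: derivative_eq_intros)
  show ?case unfolding arr_Cons using DERIV_mult[OF d Cons] by (simp add: l mult.commute)
qed

lemma pdx_dX: "pdx (arr_poly L) p = dX L p"
  by (cases p) (simp add: pdx_def DERIV_imp_deriv[OF hasderiv_x])
lemma pdy_dY: "pdy (arr_poly L) p = dY L p"
  by (cases p) (simp add: pdy_def DERIV_imp_deriv[OF hasderiv_y])
lemma pdz_dZ: "pdz (arr_poly L) p = dZ L p"
  by (cases p) (simp add: pdz_def DERIV_imp_deriv[OF hasderiv_z])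

lemma DF: "list_all2 (\<lambda>l k. lin l (A,B,C) = k * lin l p) L ks \<Longrightarrow>
   dX L p * A + dY L p * B + dZ L p * C = sum_list ks * arr_poly L p"
proof (induction rule: list_all2_induct)
  case Nil then show ?case by simp
next
  case (Cons l L k ks)
  obtain l1 l2 l3 where l: "l = (l1,l2,l3)" by (cases l) auto
  have "dX (l # L) p * A + dY (l # L) p * B + dZ (l # L) p * C
      = lin l (A,B,C) * arr_poly L p + lin l p * (dX L p * A + dY L p * B + dZ L p * C)"
    by (simp add: l lin_def algebra_simps)
  also have "\<dots> = (k + sum_list ks) * arr_poly (l # L) p"
    using Cons by (simp add: arr_Cons algebra_simps)
  finally show ?case by simp
qed

definition a1 :: "nat \<times> nat \<times> nat \<Rightarrow> complex" where
  "a1 t = (if t = (0,2,2) then -36 else if t = (0,4,0) then 9 else if t = (2,0,2) then 12 else if t = (4,0,0) then -1 else 0)"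
definition b1 :: "nat \<times> nat \<times> nat \<Rightarrow> complex" where
  "b1 t = (if t = (1,1,2) then -24 else if t = (1,3,0) then 6 else if t = (3,1,0) then 2 else 0)"
definition c1 :: "nat \<times> nat \<times> nat \<Rightarrow> complex" where
  "c1 t = (if t = (1,2,1) then -18 else if t = (3,0,1) then 2 else 0)"

definition L1c :: "pt list" where "L1c = [(0, 1, 0), (0, 1, -1), (0, 1, 1), (-1, 1, 0), (1, 1, 0), (-1, 1, -2), (-1, 1, 2), (1, 1, -2), (1, 1, 2)]"

lemma peval_a1: "peval 4 a1 (x,y,z) = (-36) * x^0 * y^2 * z^2 + (9) * x^0 * y^4 * z^0 + (12) * x^2 * y^0 * z^2 + (-1) * x^4 * y^0 * z^0"
  by (simp add: peval_def a1_def eval_nat_numeral atMost_Suc)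
lemma peval_b1: "peval 4 b1 (x,y,z) = (-24) * x^1 * y^1 * z^2 + (6) * x^1 * y^3 * z^0 + (2) * x^3 * y^1 * z^0"
  by (simp add: peval_def b1_def eval_nat_numeral atMost_Suc)
lemma peval_c1: "peval 4 c1 (x,y,z) = (-18) * x^1 * y^2 * z^1 + (2) * x^3 * y^0 * z^1"
  by (simp add: peval_def c1_def eval_nat_numeral atMost_Suc)

lemma L1_la2: "list_all2 (\<lambda>l k. lin l (peval 4 a1 (x,y,z), peval 4 b1 (x,y,z), peval 4 c1 (x,y,z)) = k * lin l (x,y,z)) L1c
   [((-24) * x^1 * y^0 * z^2 + (6) * x^1 * y^2 * z^0 + (2) * x^3 * y^0 * z^0), ((24) * x^1 * y^1 * z^1 + (6) * x^1 * y^2 * z^0 + (2) * x^3 * y^0 * z^0), ((-24) * x^1 * y^1 * z^1 + (6) * x^1 * y^2 * z^0 + (2) * x^3 * y^0 * z^0), ((36) * x^0 * y^1 * z^2 + (-9) * x^0 * y^3 * z^0 + (12) * x^1 * y^0 * z^2 + (-3) * x^1 * y^2 * z^0 + (-3) * x^2 * y^1 * z^0 + (-1) * x^3 * y^0 * z^0), ((-36) * x^0 * y^1 * z^2 + (9) * x^0 * y^3 * z^0 + (12) * x^1 * y^0 * z^2 + (-3) * x^1 * y^2 * z^0 + (3) * x^2 * y^1 * z^0 + (-1) * x^3 * y^0 * z^0), ((-18) * x^0 * y^2 * z^1 + (-9) * x^0 * y^3 * z^0 + (12) * x^1 * y^1 * z^1 + (-3) * x^1 * y^2 * z^0 + (6)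 * x^2 * y^0 * z^1 + (-3) * x^2 * y^1 * z^0 + (-1) * x^3 * y^0 * z^0), ((18) * x^0 * y^2 * z^1 + (-9) * x^0 * y^3 * z^0 + (-12) * x^1 * y^1 * z^1 + (-3) * x^1 * y^2 * z^0 + (-6) * x^2 * y^0 * z^1 + (-3) * x^2 * y^1 * z^0 + (-1) * x^3 * y^0 * z^0), ((18) * x^0 * y^2 * z^1 + (9) * x^0 * y^3 * z^0 + (12) * x^1 * y^1 * z^1 + (-3) * x^1 * y^2 * z^0 + (-6) * x^2 * y^0 * z^1 + (3) * x^2 * y^1 * z^0 + (-1) * x^3 * y^0 * z^0), ((-18) * x^0 * y^2 * z^1 + (9) * x^0 * y^3 * z^0 + (-12) * x^1 * y^1 * z^1 + (-3) * x^1 * y^2 * z^0 + (6) * x^2 * y^0 * z^1 + (3) * x^2 * y^1 * z^0 + (-1) * x^3 * y^0 * z^0)]"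
  unfolding peval_a1 peval_b1 peval_c1 L1c_def
  apply (simp only: list_all2_Cons list_all2_Nil lin_def prod.case)
  apply (intro conjI TrueI refl)
  apply algebra+
  done

lemma L1_ksum: "sum_list [((-24) * x^1 * y^0 * z^2 + (6) * x^1 * y^2 * z^0 + (2) * x^3 * y^0 * z^0), ((24) * x^1 * y^1 * z^1 + (6) * x^1 * y^2 * z^0 + (2) * x^3 * y^0 * z^0), ((-24) * x^1 * y^1 * z^1 + (6) * x^1 * y^2 * z^0 + (2) * x^3 * y^0 * z^0), ((36) * x^0 * y^1 * z^2 + (-9) * x^0 * y^3 * z^0 + (12) * x^1 * y^0 * z^2 + (-3) * x^1 * y^2 * z^0 + (-3) * x^2 * y^1 * z^0 + (-1) * x^3 * y^0 * z^0), ((-36) * x^0 * y^1 * z^2 + (9) * x^0 * y^3 * z^0 + (12) * x^1 * y^0 * z^2 + (-3) * x^1 * y^2 * z^0 + (3) * x^2 * y^1 * z^0 + (-1) * x^3 * y^0 * z^0), ((-18) * x^0 * y^2 * z^1 + (-9) * x^0 * y^3 * z^0 + (12) * x^1 * y^1 * z^1 + (-3) * x^1 * y^2 * z^0 + (6) * x^2 * y^0 * z^1 + (-3) * x^2 * y^1 * z^0 + (-1) * x^3 * y^0 * z^0), ((18) * x^0 * y^2 * z^1 + (-9) * x^0 * y^3 * z^0 + (-12) * x^1 * y^1 * z^1 + (-3) * x^1 * y^2 * z^0 + (-6) * x^2 * y^0 * z^1 + (-3) * x^2 * y^1 * z^0 + (-1) * x^3 * y^0 * z^0), ((18) * x^0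 * y^2 * z^1 + (9) * x^0 * y^3 * z^0 + (12) * x^1 * y^1 * z^1 + (-3) * x^1 * y^2 * z^0 + (-6) * x^2 * y^0 * z^1 + (3) * x^2 * y^1 * z^0 + (-1) * x^3 * y^0 * z^0), ((-18) * x^0 * y^2 * z^1 + (9) * x^0 * y^3 * z^0 + (-12) * x^1 * y^1 * z^1 + (-3) * x^1 * y^2 * z^0 + (6) * x^2 * y^0 * z^1 + (3) * x^2 * y^1 * z^0 + (-1) * x^3 * y^0 * z^0)] = (0::complex)"
  by (simp only: sum_list.Cons sum_list.Nil) algebra

lemma syz_L1: "syzygy (arr_poly L1c) 4 a1 b1 c1"
  unfolding syzygy_def
proof (intro conjI allI)
  show "hpoly 4 a1" "hpoly 4 b1" "hpoly 4 c1" by (auto simp: hpoly_def a1_def b1_def c1_def split: if_splits)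
  show "a1 \<noteq> (\<lambda>_. 0) \<or> b1 \<noteq> (\<lambda>_. 0) \<or> c1 \<noteq> (\<lambda>_. 0)"
  proof -
    have "a1 \<noteq> (\<lambda>_. 0)"
    proof
      assume "a1 = (\<lambda>_. 0)"
      then have "a1 (4,0,0) = 0" by (rule fun_cong)
      then show False by (simp add: a1_def)
    qed
    then show ?thesis by blast
  qed
  fix p :: pt
  obtain x y z where p: "p = (x,y,z)" by (cases p) auto
  have "dX L1c p * peval 4 a1 p + dY L1c p * peval 4 b1 p + dZ L1c p * peval 4 c1 p = 0 * arr_poly L1c p"
    unfolding p using DF[OF L1_la2] L1_ksum by simp
  then show "peval 4 a1 p * pdx (arr_poly L1c) p + peval 4 b1 p * pdy (arr_poly L1c) p + peval 4 c1 p * pdz (arr_poly L1c) p = 0"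
    by (simp add: pdx_dX pdy_dY pdz_dZ mult.commute)
qed


definition L1g :: "(gi \<times> gi \<times> gi) list" where "L1g = [((0, 0), (1, 0), (0, 0)), ((0, 0), (1, 0), (-1, 0)), ((0, 0), (1, 0), (1, 0)), ((-1, 0), (1, 0), (0, 0)), ((1, 0), (1, 0), (0, 0)), ((-1, 0), (1, 0), (-2, 0)), ((-1, 0), (1, 0), (2, 0)), ((1, 0), (1, 0), (-2, 0)), ((1, 0), (1, 0), (2, 0))]"
definition Q1 :: "(gi \<times> gi \<times> gi) list" where "Q1 = [((3, 0), (1, 0), (1, 0)), ((3, 0), (-1, 0), (-1, 0)), ((3, 0), (1, 0), (-1, 0)), ((3, 0), (-1, 0), (1, 0)), ((0, 0), (2, 0), (1, 0)), ((0, 0), (2, 0), (-1, 0)), ((1, 0), (0, 0), (0, 0)), ((0, 0), (0, 0), (1, 0)), ((2, 0), (0, 0), (-1, 0)), ((2, 0), (0, 0), (1, 0)), ((1, 0), (1, 0), (1, 0)), ((1, 0), (-1, 0), (-1, 0)), ((1, 0), (1, 0), (-1, 0)), ((1, 0), (-1, 0), (1, 0)), ((1, 0), (1, 0), (0, 0)), ((1, 0), (-1, 0), (0, 0))]"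
definition Q2 :: "(gi \<times> gi \<times> gi) list" where "Q2 = [((1, 0), (-1, 0), (-1, -1)), ((1, 0), (-1, 0), (-1, 1)), ((1, 0), (-1, 1), (-1, 0)), ((1, 0), (-1, -1), (-1, 0)), ((2, 0), (-1, 1), (-1, 1)), ((2, 0), (-1, -1), (-1, -1)), ((0, 0), (0, 0), (1, 0)), ((0, 0), (1, 0), (0, 0)), ((0, 0), (1, 0), (1, 0)), ((0, 0), (1, 0), (0, 1)), ((1, 0), (0, 0), (0, 0)), ((1, 0), (0, 0), (-1, 0)), ((1, 0), (0, 0), (0, 1)), ((1, 0), (-1, 0), (0, 0)), ((1, 0), (0, -1), (0, 0)), ((1, 0), (-1, 0), (-1, 0))]"

lemma cc1: "comb_check L1g Q1"
  by (simp add: comb_check_def L1g_def Q1_def upt_rec gcross_def glin_def gmult_def zero3_def)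
lemma cc2: "comb_check L2g Q2"
  by (simp add: comb_check_def L2g_def Q2_def upt_rec gcross_def glin_def gmult_def zero3_def)
lemma la1: "la_check L1g"
  by (simp add: la_check_def L1g_def upt_rec gcross_def zero3_def)
lemma la2: "la_check L2g"
  by (simp add: la_check_def L2g_def upt_rec gcross_def zero3_def)
lemma mults: "map (gmult L1g) Q1 = map (gmult L2g) Q2"
  by (simp add: L1g_def L2g_def Q1_def Q2_def glin_def gmult_def)

lemma shift_syz: assumes "syzygy f r a b c"
  shows "syzygy f (Suc r) (shift (1,0,0) a) (shift (1,0,0) b) (shift (1,0,0) c)"
proof -
  have h: "hpoly r a" "hpoly r b" "hpoly r c"
    and nz: "a \<noteq> (\<lambda>_. 0) \<or> b \<noteq> (\<lambda>_. 0) \<or> c \<noteq> (\<lambda>_. 0)"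
    and idt: "\<And>p. peval r a p * pdx f p + peval r b p * pdy f p + peval r c p * pdz f p = 0"
    using assms unfolding syzygy_def by auto
  have hs: "hpoly (Suc r) (shift (1,0,0) g)" if "hpoly r g" for g
    using hpoly_shift[OF that, of "(1,0,0)"] by simp
  have pe: "peval (Suc r) (shift (1,0,0) g) p = mon (1,0,0) p * peval r g p" if "hpoly r g" for g p
    by (rule peval_shift[OF hpoly_supp[OF that]]) auto
  have nzs: "shift (1,0,0) g \<noteq> (\<lambda>_. 0)" if "g \<noteq> (\<lambda>_. 0)" for g
  proof
    assume z: "shift (1,0,0) g = (\<lambda>_. 0)"
    have "\<exists>t. g t \<noteq> 0"
    proof (rule ccontr)
      assume "\<not> (\<exists>t. g t \<noteq> 0)"
      then have "g = (\<lambda>_. 0)" by (intro ext) blast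
      then show False using that by simp
    qed
    then obtain t where "g t \<noteq> 0" by blast
    moreover have "shift (1,0,0) g (tadd (1,0,0) t) = g t" by (rule shift_tadd)
    ultimately show False using z by simp
  qed
  show ?thesis unfolding syzygy_def
  proof (intro conjI allI)
    show "hpoly (Suc r) (shift (1,0,0) a)" "hpoly (Suc r) (shift (1,0,0) b)" "hpoly (Suc r) (shift (1,0,0) c)"
      using hs h by auto
    show "shift (1,0,0) a \<noteq> (\<lambda>_. 0) \<or> shift (1,0,0) b \<noteq> (\<lambda>_. 0) \<or> shift (1,0,0) c \<noteq> (\<lambda>_. 0)"
      using nz nzs by blast
    fix p
    show "peval (Suc r) (shift (1,0,0) a) p * pdx f p + peval (Suc r) (shift (1,0,0) b) p * pdy f p
        + peval (Suc r) (shift (1,0,0) c) p * pdz f p = 0"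
    proof -
      have eq: "mon (1,0,0) p * peval r a p * pdx f p + mon (1,0,0) p * peval r b p * pdy f p
          + mon (1,0,0) p * peval r c p * pdz f p
          = mon (1,0,0) p * (peval r a p * pdx f p + peval r b p * pdy f p + peval r c p * pdz f p)"
        by (simp add: algebra_simps)
      show ?thesis unfolding pe[OF h(1)] pe[OF h(2)] pe[OF h(3)] eq idt[of p] by simp
    qed
  qed
qed

lemma syz_up: "syzygy f r a b c \<Longrightarrow> r \<le> n \<Longrightarrow> \<exists>a b c. syzygy f n a b c"
proof (induction n arbitrary: r a b c)
  case 0 then show ?case by auto
next
  case (Suc n)
  show ?case
  proof (cases "r = Suc n")
    case True then show ?thesis using Suc.prems by auto
  next
    case False
    then have "r \<le> n" using Suc.prems by simp
    then obtain a' b' c' where "syzygy f n a' b' c'" using Suc by blast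
    then show ?thesis using shift_syz by blast
  qed
qed

lemma koszul: assumes he: "e * e = -1"
  shows "syzygy (arr_poly (map (toC3 e) L2g)) 8 (dyc (polyL (map (toC3 e) L2g))) (\<lambda>t. - dxc (polyL (map (toC3 e) L2g)) t) (\<lambda>_. 0)"
proof -
  let ?L = "map (toC3 e) L2g"
  have len: "length ?L = Suc 8" by (simp add: L2g_def)
  have hL: "hpoly (Suc 8) (polyL ?L)" using hpoly_polyL[of ?L] len by simp
  have hx: "hpoly 8 (dxc (polyL ?L))" by (rule hpoly_dxc[OF hL])
  have hy: "hpoly 8 (dyc (polyL ?L))" by (rule hpoly_dyc[OF hL])
  have pL: "polyL ?L = (\<lambda>t. toC e (GF t))" by (rule L2_eq[OF he])
  have nz: "dyc (polyL ?L) \<noteq> (\<lambda>_. 0)"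
  proof
    assume z: "dyc (polyL ?L) = (\<lambda>_. 0)"
    have "dyc (polyL ?L) (6,0,2) = toC e (GF (6,1,2))"
      by (simp add: pL dyc_def)
    also have "\<dots> \<noteq> 0" by (simp add: toC_eq0[OF he] GF_def GFl_def)
    finally show False using z by simp
  qed
  show ?thesis unfolding syzygy_def
  proof (intro conjI allI)
    show "hpoly 8 (dyc (polyL ?L))" by (rule hy)
    show "hpoly 8 (\<lambda>t. - dxc (polyL ?L) t)" using hx by (simp add: hpoly_def)
    show "hpoly 8 (\<lambda>_. 0::complex)" by (simp add: hpoly_def)
    show "dyc (polyL ?L) \<noteq> (\<lambda>_. 0) \<or> (\<lambda>t. - dxc (polyL ?L) t) \<noteq> (\<lambda>_. 0) \<or> (\<lambda>_. 0::complex) \<noteq> (\<lambda>_. 0)"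
      using nz by blast
    fix p
    have m: "peval 8 (\<lambda>t. - dxc (polyL ?L) t) p = - peval 8 (dxc (polyL ?L)) p"
      using peval_smult[of 8 "-1" "dxc (polyL ?L)" p] by simp
    have z: "peval 8 (\<lambda>_. 0::complex) p = 0" by (simp add: peval_def)
    show "peval 8 (dyc (polyL ?L)) p * pdx (arr_poly ?L) p + peval 8 (\<lambda>t. - dxc (polyL ?L) t) p * pdy (arr_poly ?L) p
        + peval 8 (\<lambda>_. 0) p * pdz (arr_poly ?L) p = 0"
      unfolding m z pdx_arr[OF len] pdy_arr[OF len] by simp
  qed
qed

theorem mainTheorem6:
  fixes e :: complex
  assumes "e ^ 2 + 1 = 0"
  shows "weak_ziegler_pair
     [(0, 1, 0), (0, 1, -1), (0, 1, 1), (-1, 1, 0), (1, 1, 0),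
      (-1, 1, -2), (-1, 1, 2), (1, 1, -2), (1, 1, 2)]
     [(1, 0, 0), (0, 1, 0), (0, 0, 1), (1, 1, 0), (1, 0, 1), (0, 1, -1),
      (1, 1, e), (1, -e, 1), (1, -e, e)]"
proof -
  have "e * e + 1 = 0" using assms by (simp add: power2_eq_square)
  then have he: "e * e = -1" by (simp add: eq_neg_iff_add_eq_0)
  have eL1: "[(0, 1, 0), (0, 1, -1), (0, 1, 1), (-1, 1, 0), (1, 1, 0),
      (-1, 1, -2), (-1, 1, 2), (1, 1, -2), (1, 1, 2)] = map (toC3 e) L1g"
    by (simp add: L1g_def toC3_def toC_def)
  have eL2: "[(1, 0, 0), (0, 1, 0), (0, 0, 1), (1, 1, 0), (1, 0, 1), (0, 1, -1),
      (1, 1, e), (1, -e, 1), (1, -e, e)] = map (toC3 e) L2g"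
    by (simp add: L2g_def toC3_def toC_def)
  have eL1c: "[(0, 1, 0), (0, 1, -1), (0, 1, 1), (-1, 1, 0), (1, 1, 0),
      (-1, 1, -2), (-1, 1, 2), (1, 1, -2), (1, 1, 2)] = L1c" by (simp add: L1c_def)
  have la: "line_arrangement (map (toC3 e) L1g)" "line_arrangement (map (toC3 e) L2g)"
    using la_ok[OF he la1] la_ok[OF he la2] .
  have swc: "same_weak_comb (map (toC3 e) L1g) (map (toC3 e) L2g)"
    unfolding same_weak_comb_def
  proof (intro conjI allI impI)
    show "length (map (toC3 e) L1g) = length (map (toC3 e) L2g)" by (simp add: L1g_def L2g_def)
    fix i :: nat assume i: "2 \<le> i"
    have "n_pts (map (toC3 e) L1g) i = length (filter (\<lambda>q. gmult L1g q = i) Q1)" by (rule n_pts_eq[OF he cc1 i])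
    also have "\<dots> = length (filter (\<lambda>m. m = i) (map (gmult L1g) Q1))" by (simp add: filter_map comp_def)
    also have "\<dots> = length (filter (\<lambda>m. m = i) (map (gmult L2g) Q2))" by (simp only: mults)
    also have "\<dots> = length (filter (\<lambda>q. gmult L2g q = i) Q2)" by (simp add: filter_map comp_def)
    also have "\<dots> = n_pts (map (toC3 e) L2g) i" by (rule n_pts_eq[OF he cc2 i, symmetric])
    finally show "n_pts (map (toC3 e) L1g) i = n_pts (map (toC3 e) L2g) i" .
  qed
  have m1: "mdr (arr_poly L1c) \<le> 4"
    unfolding mdr_def by (rule Least_le) (use syz_L1 in blast)
  have m2: "4 < mdr (arr_poly (map (toC3 e) L2g))"
  proof (rule ccontr)
    assume "\<not> 4 < mdr (arr_poly (map (toC3 e) L2g))"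
    then have le: "mdr (arr_poly (map (toC3 e) L2g)) \<le> 4" by simp
    have ex: "\<exists>r a b c. syzygy (arr_poly (map (toC3 e) L2g)) r a b c" using koszul[OF he] by blast
    have "\<exists>a b c. syzygy (arr_poly (map (toC3 e) L2g)) (mdr (arr_poly (map (toC3 e) L2g))) a b c"
      unfolding mdr_def by (rule LeastI_ex) (use ex in blast)
    then obtain a b c where "syzygy (arr_poly (map (toC3 e) L2g)) (mdr (arr_poly (map (toC3 e) L2g))) a b c" by blast
    then obtain a' b' c' where "syzygy (arr_poly (map (toC3 e) L2g)) 4 a' b' c'" using syz_up le by blast
    then show False using no_syz4[OF he] by blast
  qed
  have m1': "mdr (arr_poly (map (toC3 e) L1g)) \<le> 4" using m1 eL1 eL1c by simp
  have ne: "mdr (arr_poly (map (toC3 e) L1g)) \<noteq> mdr (arr_poly (map (toC3 e) L2g))" using m1' m2 by simp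
  have "weak_ziegler_pair (map (toC3 e) L1g) (map (toC3 e) L2g)"
    unfolding weak_ziegler_pair_def using la swc ne by blast
  then show ?thesis by (simp only: eL1 eL2)
qed


end
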